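(* Under the hypotheses (A1) and (A2) of the context, suppose there is only one maximal admissible path, i.e. $\mathcal{P}_{\max}=\{\theta\}$ with $\theta=(\theta_1,\dots,\theta_\kappa)$. If $\ell=\theta_u$ for some $u\in\{1,\dots,\kappa\}$ with $\rho_\ell=\rho_{\max}$, then \[ \lim_{n\to\infty}\mathbb{E}_\pi\Big[\tfrac{1}{n+1}\#\{m\in\{0,\dots,n\}:X_m\in I_\ell\}\,\Big|\,T>n\Big]=\frac{1}{h^+_{\max}}, \] and this limit is $0$ whenever $\rho_\ell<\rho_{\max}$.
   Context: Let $d\ge2$, $P=\begin{pmatrix}1&0\\R&Q\end{pmatrix}$ stochastic with $R\in\mathbb{R}^{d\times1}$, $Q\in\mathbb{R}^{d\times d}$, $R,Q\ne0$, all eigenvalues of $Q$ of modulus $<1$; $(X_i)$ the Markov chain with transition matrix $P$ ($0$ absorbing), initial distribution $\pi$ on $\{1,\dots,d\}$, $T=\min\{i:X_i=0\}$. $Q$ is in Frobenius normal form: block lower triangular, blocks $Q_{ij}\in\mathbb{R}^{d_i\times d_j}$ ($i,j\le k$, $Q_{ij}=0$ for $j>i$), each $Q_{ii}$ eventually positive with Perron--Frobenius eigenvalue $\rho_i$ and fixed normed positive right eigenvector $v_i$; $V_i^-$ the sum of generalised eigenspaces of $Q_{ii}$ for its other eigenvalues. $I_j=\{1+\sum_{i<j}d_i,\dots,\sum_{i\le j}d_i\}$, $\pi=(\pi_1,\dots,\pi_k)$, $\pi_i\in\mathbb{R}^{1\times d_i}$. Admissible path: strictly decreasing $\theta=(\theta_1,\dots,\theta_\kappa)$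 in $\{1,\dots,k\}$ with $Q_{\theta_u\theta_{u+1}}\ne0$; $\mathcal{P}$ the set of them. $\rho(\theta)=\max_u\rho_{\theta_u}$, $h^+(\theta)=\#\{u:\rho_{\theta_u}=\rho(\theta)\}$, $\rho_{\max}=\max_i\rho_i$, $h^+_{\max}=\max\{h^+(\theta):\theta\in\mathcal{P},\rho(\theta)=\rho_{\max}\}$, $\mathcal{P}_{\max}=\{\theta\in\mathcal{P}:h^+(\theta)=h^+_{\max},\rho(\theta)=\rho_{\max}\}$. $\alpha_\theta=\alpha_{\theta_\kappa}\cdots\alpha_{\theta_1}$ with $\mathbf1=\alpha_{\theta_\kappa}v_{\theta_\kappa}+w_{\theta_\kappa}$, $w_{\theta_\kappa}\in V^-_{\theta_\kappa}$, and $Q_{\theta_u\theta_{u+1}}v_{\theta_{u+1}}=\alpha_{\theta_u}v_{\theta_u}+w_{\theta_u}$, $w_{\theta_u}\in V^-_{\theta_u}$ for $u<\kappa$. Hypotheses: (A1) for all $i\in\{1,\dots,k\}$ with $\rho_i<\rho_{\max}$, $Q_{ii}$ is scalar; (A2) there is $\theta\in\mathcal{P}_{\max}$ with $\alpha_\theta\ne0$ and $\pi_{\theta_1}v_{\theta_1}\ne0$. *)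

theory Defs
  imports "HOL-Analysis.Analysis"
begin

text \<open>A (square) matrix is a function nat => nat => 'a; only entries with both
  indices in a given finite index set I are used.  A vector is a function nat => 'a,
  only its values on I matter.\<close>

definition mvec :: "nat set \<Rightarrow> (nat \<Rightarrow> nat \<Rightarrow> 'a::comm_semiring_0) \<Rightarrow> (nat \<Rightarrow> 'a) \<Rightarrow> nat \<Rightarrow> 'a" where
  "mvec I A x = (\<lambda>r. \<Sum>s\<in>I. A r s * x s)"

definition mmul :: "nat set \<Rightarrow> (nat \<Rightarrow> nat \<Rightarrow> 'a::comm_semiring_0) \<Rightarrow> (nat \<Rightarrow> nat \<Rightarrow> 'a) \<Rightarrow> nat \<Rightarrow> nat \<Rightarrow> 'a" where
  "mmul I A B = (\<lambda>r t. \<Sum>s\<in>I. A r s * B s t)"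

primrec mpow :: "nat set \<Rightarrow> (nat \<Rightarrow> nat \<Rightarrow> 'a::comm_semiring_1) \<Rightarrow> nat \<Rightarrow> nat \<Rightarrow> nat \<Rightarrow> 'a" where
  "mpow I A 0 = (\<lambda>r s. if r = s then 1 else 0)"
| "mpow I A (Suc n) = mmul I A (mpow I A n)"

definition cmat :: "(nat \<Rightarrow> nat \<Rightarrow> real) \<Rightarrow> nat \<Rightarrow> nat \<Rightarrow> complex" where
  "cmat A = (\<lambda>r s. complex_of_real (A r s))"

definition eigenvalue_on :: "nat set \<Rightarrow> (nat \<Rightarrow> nat \<Rightarrow> complex) \<Rightarrow> complex \<Rightarrow> bool" where
  "eigenvalue_on I A \<mu> = (\<exists>x. (\<exists>r\<in>I. x r \<noteq> 0) \<and> (\<forall>r\<in>I. mvec I A x r = \<mu> * x r))"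

definition gen_eigvec :: "nat set \<Rightarrow> (nat \<Rightarrow> nat \<Rightarrow> complex) \<Rightarrow> complex \<Rightarrow> (nat \<Rightarrow> complex) \<Rightarrow> bool" where
  "gen_eigvec I A \<mu> w =
     (\<exists>m. \<forall>r\<in>I. mvec I (mpow I (\<lambda>r s. A r s - (if r = s then \<mu> else 0)) m) w r = 0)"

definition Vminus :: "nat set \<Rightarrow> (nat \<Rightarrow> nat \<Rightarrow> complex) \<Rightarrow> complex \<Rightarrow> (nat \<Rightarrow> complex) set" where
  "Vminus I A \<rho> = {w. \<exists>F wf. finite F \<and>
      (\<forall>\<mu>\<in>F. eigenvalue_on I A \<mu> \<and> \<mu> \<noteq> \<rho> \<and> gen_eigvec I A \<mu> (wf \<mu>)) \<and>
      (\<forall>r\<in>I. w r = (\<Sum>\<mu>\<in>F. wf \<mu> r))}"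

definition Vminus_real :: "nat set \<Rightarrow> (nat \<Rightarrow> nat \<Rightarrow> real) \<Rightarrow> real \<Rightarrow> (nat \<Rightarrow> real) set" where
  "Vminus_real I A \<rho> = {w. (\<lambda>r. complex_of_real (w r)) \<in> Vminus I (cmat A) (complex_of_real \<rho>)}"

definition pf_coef :: "nat set \<Rightarrow> (nat \<Rightarrow> nat \<Rightarrow> real) \<Rightarrow> real \<Rightarrow> (nat \<Rightarrow> real) \<Rightarrow> (nat \<Rightarrow> real) \<Rightarrow> real" where
  "pf_coef I A \<rho> v x = (THE a. \<exists>w. w \<in> Vminus_real I A \<rho> \<and> (\<forall>r\<in>I. x r = a * v r + w r))"

definition eventually_positive :: "nat set \<Rightarrow> (nat \<Rightarrow> nat \<Rightarrow> real) \<Rightarrow> bool" where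
  "eventually_positive I A = (\<exists>N. \<forall>n\<ge>N. \<forall>r\<in>I. \<forall>s\<in>I. mpow I A n r s > 0)"

definition is_scalar_on :: "nat set \<Rightarrow> (nat \<Rightarrow> nat \<Rightarrow> real) \<Rightarrow> bool" where
  "is_scalar_on I A = (\<exists>c. \<forall>r\<in>I. \<forall>s\<in>I. A r s = (if r = s then c else 0))"

text \<open>Block j (1 <= j <= k) with block sizes ds: I_j.\<close>
definition blk :: "(nat \<Rightarrow> nat) \<Rightarrow> nat \<Rightarrow> nat set" where
  "blk ds j = {1 + (\<Sum>i\<in>{1..<j}. ds i) .. (\<Sum>i\<in>{1..j}. ds i)}"

definition admissible :: "nat \<Rightarrow> (nat \<Rightarrow> nat) \<Rightarrow> (nat \<Rightarrow> nat \<Rightarrow> real) \<Rightarrow> nat list \<Rightarrow> bool" where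
  "admissible k ds Q \<theta> =
     (\<theta> \<noteq> [] \<and> set \<theta> \<subseteq> {1..k} \<and> sorted_wrt (>) \<theta> \<and>
      (\<forall>u. Suc u < length \<theta> \<longrightarrow>
         (\<exists>r\<in>blk ds (\<theta> ! u). \<exists>s\<in>blk ds (\<theta> ! Suc u). Q r s \<noteq> 0)))"

definition Padm :: "nat \<Rightarrow> (nat \<Rightarrow> nat) \<Rightarrow> (nat \<Rightarrow> nat \<Rightarrow> real) \<Rightarrow> nat list set" where
  "Padm k ds Q = {\<theta>. admissible k ds Q \<theta>}"

definition rho_path :: "(nat \<Rightarrow> real) \<Rightarrow> nat list \<Rightarrow> real" where
  "rho_path \<rho> \<theta> = Max (\<rho> ` set \<theta>)"

definition hplus :: "(nat \<Rightarrow> real) \<Rightarrow> nat list \<Rightarrow> nat" where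
  "hplus \<rho> \<theta> = card {u. u < length \<theta> \<and> \<rho> (\<theta> ! u) = rho_path \<rho> \<theta>}"

definition rho_max :: "nat \<Rightarrow> (nat \<Rightarrow> real) \<Rightarrow> real" where
  "rho_max k \<rho> = Max (\<rho> ` {1..k})"

definition hplus_max :: "nat \<Rightarrow> (nat \<Rightarrow> nat) \<Rightarrow> (nat \<Rightarrow> nat \<Rightarrow> real) \<Rightarrow> (nat \<Rightarrow> real) \<Rightarrow> nat" where
  "hplus_max k ds Q \<rho> = Max {hplus \<rho> \<theta> | \<theta>. \<theta> \<in> Padm k ds Q \<and> rho_path \<rho> \<theta> = rho_max k \<rho>}"

definition Pmax :: "nat \<Rightarrow> (nat \<Rightarrow> nat) \<Rightarrow> (nat \<Rightarrow> nat \<Rightarrow> real) \<Rightarrow> (nat \<Rightarrow> real) \<Rightarrow> nat list set" where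
  "Pmax k ds Q \<rho> = {\<theta>\<in>Padm k ds Q. hplus \<rho> \<theta> = hplus_max k ds Q \<rho> \<and> rho_path \<rho> \<theta> = rho_max k \<rho>}"

text \<open>alpha_{theta_u} (u 0-based here): for the last entry the coefficient of the all-one
  vector, otherwise the coefficient of Q_{theta_u theta_(u+1)} v_{theta_(u+1)}.\<close>
definition alpha_at :: "(nat \<Rightarrow> nat) \<Rightarrow> (nat \<Rightarrow> nat \<Rightarrow> real) \<Rightarrow> (nat \<Rightarrow> real) \<Rightarrow> (nat \<Rightarrow> nat \<Rightarrow> real)
    \<Rightarrow> nat list \<Rightarrow> nat \<Rightarrow> real" where
  "alpha_at ds Q \<rho> v \<theta> u =
     pf_coef (blk ds (\<theta> ! u)) Q (\<rho> (\<theta> ! u)) (v (\<theta> ! u))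
       (if Suc u = length \<theta> then (\<lambda>_. 1)
        else mvec (blk ds (\<theta> ! Suc u)) Q (v (\<theta> ! Suc u)))"

definition alpha_path :: "(nat \<Rightarrow> nat) \<Rightarrow> (nat \<Rightarrow> nat \<Rightarrow> real) \<Rightarrow> (nat \<Rightarrow> real) \<Rightarrow> (nat \<Rightarrow> nat \<Rightarrow> real)
    \<Rightarrow> nat list \<Rightarrow> real" where
  "alpha_path ds Q \<rho> v \<theta> = (\<Prod>u<length \<theta>. alpha_at ds Q \<rho> v \<theta> u)"

definition Pmat :: "(nat \<Rightarrow> real) \<Rightarrow> (nat \<Rightarrow> nat \<Rightarrow> real) \<Rightarrow> nat \<Rightarrow> nat \<Rightarrow> real" where
  "Pmat R Q i j = (if i = 0 then (if j = 0 then 1 else 0) else if j = 0 then R i else Q i j)"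

definition path_prob :: "(nat \<Rightarrow> real) \<Rightarrow> (nat \<Rightarrow> nat \<Rightarrow> real) \<Rightarrow> nat list \<Rightarrow> real" where
  "path_prob \<pi> P xs = \<pi> (hd xs) * (\<Prod>i<length xs - 1. P (xs ! i) (xs ! Suc i))"

text \<open>Trajectories (X_0,...,X_n) in {0..d} with T > n, i.e. X_m <> 0 for all m <= n.\<close>
definition surv_paths :: "nat \<Rightarrow> nat \<Rightarrow> nat list set" where
  "surv_paths d n = {xs. length xs = Suc n \<and> set xs \<subseteq> {0..d} \<and> (\<forall>m\<le>n. xs ! m \<noteq> 0)}"

text \<open>E_pi[ (1/(n+1)) #{m in {0..n}. X_m in L} | T > n ].\<close>
definition cond_occupation :: "nat \<Rightarrow> (nat \<Rightarrow> real) \<Rightarrow> (nat \<Rightarrow> real) \<Rightarrow> (nat \<Rightarrow> nat \<Rightarrow> real)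
    \<Rightarrow> nat set \<Rightarrow> nat \<Rightarrow> real" where
  "cond_occupation d \<pi> R Q L n =
     (\<Sum>xs\<in>surv_paths d n. path_prob \<pi> (Pmat R Q) xs *
          (real (card {m. m \<le> n \<and> xs ! m \<in> L}) / real (Suc n)))
     / (\<Sum>xs\<in>surv_paths d n. path_prob \<pi> (Pmat R Q) xs)"

end

theory Submission
  imports Defs "HOL-Real_Asymp.Real_Asymp"
begin

lemma tri_step:
  fixes f g :: "nat \<Rightarrow> real"
  shows "(\<Sum>t\<le>Suc M. (\<Sum>j\<le>Suc M - t. f j) * g t) = (\<Sum>t\<le>M. (\<Sum>j\<le>M - t. f j) * g t) + (\<Sum>t\<le>Suc M. f (Suc M - t) * g t)"
proof -
  have "(\<Sum>t\<le>M. (\<Sum>j\<le>Suc M - t. f j) * g t) = (\<Sum>t\<le>M. (\<Sum>j\<le>M - t. f j) * g t + f (Suc M - t) * g t)"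
  proof (rule sum.cong)
    fix t assume "t \<in> {..M}"
    then have "Suc M - t = Suc (M - t)" by simp
    then show "(\<Sum>j\<le>Suc M - t. f j) * g t = (\<Sum>j\<le>M - t. f j) * g t + f (Suc M - t) * g t"
      by (simp add: algebra_simps)
  qed simp
  then show ?thesis by (simp add: sum.distrib)
qed

lemma tri_swap:
  fixes f g :: "nat \<Rightarrow> real"
  shows "(\<Sum>t\<le>M. (\<Sum>j\<le>M - t. f j) * g t) = (\<Sum>j\<le>M. f j * (\<Sum>t\<le>M - j. g t))"
proof (induction M)
  case 0
  then show ?case by simp
next
  case (Suc M)
  have R: "(\<Sum>j\<le>Suc M. f j * (\<Sum>t\<le>Suc M - j. g t)) = (\<Sum>j\<le>M. f j * (\<Sum>t\<le>M - j. g t)) + (\<Sum>j\<le>Suc M. f j * g (Suc M - j))"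
    using tri_step[of g M f] by (simp add: mult.commute)
  have "(\<Sum>t\<le>Suc M. f (Suc M - t) * g t) = (\<Sum>j\<le>Suc M. f j * g (Suc M - j))"
    by (subst sum.atLeastAtMost_rev[of _ 0 "Suc M", simplified atLeast0AtMost]) (simp add: mult.commute)
  then show ?case using tri_step[of f M g] R Suc.IH by simp
qed

definition NB :: "nat \<Rightarrow> nat \<Rightarrow> real" where "NB e n = real ((n + e) choose e)"

lemma choose_swap: "(a + b) choose a = (a + b) choose (b::nat)"
  using binomial_symmetric[of a "a+b"] by simp

lemma NB_partial: "NB (Suc p) m = (\<Sum>j\<le>m. NB p j)"
proof -
  have "(\<Sum>j\<le>m. NB p j) = real (\<Sum>j\<le>m. (p + j) choose j)"
    unfolding NB_def of_nat_sum
  proof (intro sum.cong refl)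
    fix j show "real ((j + p) choose p) = real ((p + j) choose j)"
      using choose_swap[of p j] by (simp add: add.commute)
  qed
  also have "\<dots> = real (Suc (p + m) choose m)" by (simp add: sum_choose_lower)
  also have "\<dots> = NB (Suc p) m"
    unfolding NB_def using choose_swap[of m "Suc p"] by (simp add: add.commute)
  finally show ?thesis by simp
qed

lemma NB_sum:
  "(\<Sum>m\<le>M. NB p m * NB q (M - m)) = NB (p + q + 1) M"
proof (induction p arbitrary: q)
  case 0
  have "(\<Sum>m\<le>M. NB q (M - m)) = (\<Sum>m\<le>M. NB q m)"
    by (subst sum.atLeastAtMost_rev[of _ 0 M, simplified atLeast0AtMost]) simp
  also have "\<dots> = NB (Suc q) M" by (simp add: NB_partial)
  finally show ?case by (simp add: NB_def)
next
  case (Suc p)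
  have "(\<Sum>m\<le>M. NB (Suc p) m * NB q (M - m)) = (\<Sum>m\<le>M. (\<Sum>j\<le>m. NB p j) * NB q (M - m))"
    by (simp add: NB_partial)
  also have "\<dots> = (\<Sum>t\<le>M. (\<Sum>j\<le>M - t. NB p j) * NB q t)"
    by (subst sum.atLeastAtMost_rev[of _ 0 M, simplified atLeast0AtMost]) simp
  also have "\<dots> = (\<Sum>j\<le>M. NB p j * (\<Sum>t\<le>M - j. NB q t))" by (rule tri_swap)
  also have "\<dots> = (\<Sum>j\<le>M. NB p j * NB (Suc q) (M - j))" by (simp add: NB_partial)
  also have "\<dots> = NB (p + Suc q + 1) M" by (rule Suc.IH)
  finally show ?case by simp
qed


lemma cancel_aux: "(c::real) \<noteq> 0 \<Longrightarrow> b \<noteq> 0 \<Longrightarrow> d \<noteq> 0 \<Longrightarrow> (x * a) / (b * (c * d)) * c = a / (b * d) * x"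
  by (simp add: field_simps)

lemma cancel_aux2: "(c::real) \<noteq> 0 \<Longrightarrow> b \<noteq> 0 \<Longrightarrow> (x * a) / (c * b) * c = a / b * x"
  by (simp add: field_simps)

lemma NB_fact: "NB e n = fact (n + e) / (fact e * fact n)"
  unfolding NB_def by (subst binomial_fact) auto

lemma NB_pos: "NB e n > 0"
  unfolding NB_def by simp

lemma NB_nonzero [simp]: "NB e n \<noteq> 0"
  using NB_pos[of e n] by simp

lemma NB_ge1: "NB e n \<ge> 1"
  unfolding NB_def by (simp add: Suc_leI)

lemma NB_0 [simp]: "NB 0 n = 1"
  unfolding NB_def by simp

lemma NB_1: "NB 1 n = real n + 1"
  unfolding NB_def by simp

lemma NB_Suc_n: "NB e (Suc n) * (real n + 1) = NB e n * (real n + 1 + real e)"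
proof -
  have "NB e (Suc n) * (real n + 1) = fact (Suc (n + e)) / (fact e * fact (Suc n)) * (real n + 1)"
    by (simp add: NB_fact)
  also have "\<dots> = ((real n + 1 + real e) * fact (n + e)) / (fact e * ((real n + 1) * fact n)) * (real n + 1)"
    by (simp add: fact_Suc algebra_simps)
  also have "\<dots> = fact (n + e) / (fact e * fact n) * (real n + 1 + real e)"
    by (rule cancel_aux) auto
  finally show ?thesis by (simp add: NB_fact)
qed

lemma NB_Suc_e: "NB (Suc e) n * (real e + 1) = NB e n * (real n + 1 + real e)"
proof -
  have "NB (Suc e) n * (real e + 1) = fact (Suc (n + e)) / (fact (Suc e) * fact n) * (real e + 1)"
    by (simp add: NB_fact)
  also have "\<dots> = ((real n + 1 + real e) * fact (n + e)) / (((real e + 1) * fact e) * fact n) * (real e + 1)"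
    by (simp add: fact_Suc algebra_simps)
  also have "\<dots> = fact (n + e) / (fact e * fact n) * (real n + 1 + real e)"
    by (subst mult.assoc, rule cancel_aux2) auto
  finally show ?thesis by (simp add: NB_fact)
qed

lemma NB_mono_n: "m \<le> n \<Longrightarrow> NB e m \<le> NB e n"
proof (induction n)
  case 0 then show ?case by simp
next
  case (Suc n)
  show ?case
  proof (cases "m = Suc n")
    case True then show ?thesis by simp
  next
    case False
    then have "NB e m \<le> NB e n" using Suc by simp
    also have "NB e n \<le> NB e (Suc n)"
    proof -
      have "NB e n * (real n + 1) \<le> NB e (Suc n) * (real n + 1)"
        unfolding NB_Suc_n using NB_pos[of e n] by (intro mult_left_mono) auto
      then show ?thesis by simp
    qed
    finally show ?thesis .
  qed
qed

lemma NB_mono_e: "NB e n \<le> NB (Suc e) n"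
proof -
  have "NB e n * (real e + 1) \<le> NB (Suc e) n * (real e + 1)"
    unfolding NB_Suc_e using NB_pos[of e n] by (intro mult_left_mono) auto
  then show ?thesis by simp
qed

lemma NB_mono_e': "e \<le> e' \<Longrightarrow> NB e n \<le> NB e' n"
proof (induction e')
  case 0 then show ?case by simp
next
  case (Suc e')
  then show ?case using NB_mono_e[of e' n] by (cases "e = Suc e'") auto
qed

lemma NB_ratio_Suc: "(\<lambda>n. NB e n / NB e (Suc n)) \<longlonglongrightarrow> 1"
proof -
  have eq: "NB e n / NB e (Suc n) = (real n + 1) / (real n + 1 + real e)" for n
    using NB_Suc_n[of e n] NB_pos[of e n] NB_pos[of e "Suc n"]
    by (simp add: field_simps)
  have "(\<lambda>n. (real n + 1) / (real n + 1 + real e)) \<longlonglongrightarrow> 1"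
    by real_asymp
  then show ?thesis unfolding eq .
qed

lemma NB_ratio_e: "(\<lambda>n. NB e n / NB (Suc e) n) \<longlonglongrightarrow> 0"
proof -
  have eq: "NB e n / NB (Suc e) n = (real e + 1) / (real n + 1 + real e)" for n
    using NB_Suc_e[of e n] NB_pos[of e n] NB_pos[of "Suc e" n]
    by (simp add: field_simps)
  have "(\<lambda>n. (real e + 1) / (real n + 1 + real e)) \<longlonglongrightarrow> 0"
    by real_asymp
  then show ?thesis unfolding eq .
qed

lemma summable_NB_geom:
  assumes "0 \<le> r" "r < 1"
  shows "summable (\<lambda>k. NB q k * r ^ k)"
proof -
  define c where "c = (1 + r) / 2"
  have "c < 1" using assms by (simp add: c_def)
  obtain N :: nat where N: "real q \<le> (1 - r) / 2 * real N"
  proof -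
    obtain N :: nat where "real q / ((1 - r) / 2) \<le> real N" using real_arch_simple by blast
    then have "real q \<le> (1 - r) / 2 * real N" using assms by (simp add: field_simps)
    then show ?thesis using that by blast
  qed
  show ?thesis
  proof (rule summable_ratio_test[OF \<open>c < 1\<close>, of N])
    fix n assume "N \<le> n"
    have key: "(real n + 1 + real q) * r \<le> c * (real n + 1)"
    proof -
      have "real q * r \<le> real q" using assms by (simp add: mult_left_le)
      also have "\<dots> \<le> (1 - r) / 2 * real N" by (rule N)
      also have "\<dots> \<le> (1 - r) / 2 * (real n + 1)" using \<open>N \<le> n\<close> assms by (intro mult_left_mono) auto
      finally show ?thesis unfolding c_def by (simp add: field_simps)
    qed
    have "NB q (Suc n) * r ^ Suc n * (real n + 1) = NB q n * r ^ n * ((real n + 1 + real q) * r)"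
      using NB_Suc_n[of q n] by (simp add: algebra_simps)
    also have "\<dots> \<le> NB q n * r ^ n * (c * (real n + 1))"
      using key NB_pos[of q n] assms by (intro mult_left_mono) auto
    finally have "(NB q (Suc n) * r ^ Suc n) * (real n + 1) \<le> (c * (NB q n * r ^ n)) * (real n + 1)"
      by (simp add: algebra_simps)
    then have "NB q (Suc n) * r ^ Suc n \<le> c * (NB q n * r ^ n)"
      by (rule mult_right_le_imp_le) auto
    then show "norm (NB q (Suc n) * r ^ Suc n) \<le> c * norm (NB q n * r ^ n)"
      using NB_pos[of q n] NB_pos[of q "Suc n"] assms by simp
  qed
qed


lemma sum_if_less_bound:
  fixes X :: real
  assumes "X \<ge> 0"
  shows "(\<Sum>m\<le>M. if m < Nb then X else 0) \<le> real Nb * X"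
proof -
  have "(\<Sum>m\<le>M. if m < Nb then X else 0) = (\<Sum>m\<in>{..M} \<inter> {..<Nb}. X)"
    by (simp add: sum.If_cases Int_def)
  also have "\<dots> = real (card ({..M} \<inter> {..<Nb})) * X" by simp
  also have "\<dots> \<le> real Nb * X"
  proof -
    have "card ({..M} \<inter> {..<Nb}) \<le> card {..<Nb}" by (intro card_mono) auto
    then show ?thesis using assms by (intro mult_right_mono) auto
  qed
  finally show ?thesis .
qed

lemma wcesaro:
  fixes g :: "nat \<Rightarrow> real"
  assumes g: "g \<longlonglongrightarrow> 0"
  shows "(\<lambda>M. (\<Sum>m\<le>M. NB p m * NB q (M - m) * \<bar>g m\<bar>) / NB (p + q + 1) M) \<longlonglongrightarrow> 0"
proof (rule LIMSEQ_I)
  fix r :: real assume r: "0 < r"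
  obtain C where C: "C > 0" "\<And>m. norm (g m) \<le> C"
    using convergent_imp_Bseq[OF convergentI[OF g]] by (auto elim: BseqE)
  obtain N0 where N0: "\<And>m. m \<ge> N0 \<Longrightarrow> norm (g m - 0) < r / 2"
    using LIMSEQ_D[OF g, of "r/2"] r by auto
  define K where "K = real N0 * (NB p N0 * C) * (real q + 1)"
  have K0: "K \<ge> 0" unfolding K_def using C NB_pos[of p N0] by auto
  obtain M0 :: nat where M0: "2 * K / r \<le> real M0" using real_arch_simple by blast
  show "\<exists>no. \<forall>M\<ge>no. norm ((\<Sum>m\<le>M. NB p m * NB q (M - m) * \<bar>g m\<bar>) / NB (p + q + 1) M - 0) < r"
  proof (intro exI allI impI)
    fix M assume "M0 \<le> M"
    define P where "P = p + q + 1"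
    have pt: "NB p m * NB q (M - m) * \<bar>g m\<bar> \<le> NB p m * NB q (M - m) * (r / 2) + (if m < N0 then NB p N0 * NB q M * C else 0)"
      if "m \<le> M" for m
    proof (cases "m < N0")
      case True
      have "NB p m * NB q (M - m) * \<bar>g m\<bar> \<le> NB p N0 * NB q M * C"
        using True NB_mono_n[of m N0 p] NB_mono_n[of "M - m" M q] C(2)[of m] NB_pos[of p m] NB_pos[of q "M-m"]
        by (intro mult_mono) auto
      moreover have "NB p m * NB q (M - m) * (r / 2) \<ge> 0" using r NB_pos[of p m] NB_pos[of q "M-m"] by simp
      ultimately show ?thesis using True by simp
    next
      case False
      then have "\<bar>g m\<bar> \<le> r / 2" using N0[of m] by simp
      then show ?thesis using False NB_pos[of p m] NB_pos[of q "M-m"] by (simp add: mult_left_mono)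
    qed
    have "(\<Sum>m\<le>M. NB p m * NB q (M - m) * \<bar>g m\<bar>) \<le> (\<Sum>m\<le>M. NB p m * NB q (M - m) * (r / 2) + (if m < N0 then NB p N0 * NB q M * C else 0))"
      by (intro sum_mono pt) auto
    also have "\<dots> = (\<Sum>m\<le>M. NB p m * NB q (M - m)) * (r / 2) + (\<Sum>m\<le>M. if m < N0 then NB p N0 * NB q M * C else 0)"
      by (simp only: sum.distrib sum_distrib_right)
    also have "\<dots> = (r / 2) * NB P M + (\<Sum>m\<le>M. if m < N0 then NB p N0 * NB q M * C else 0)"
      by (simp only: NB_sum P_def mult.commute)
    also have "\<dots> \<le> (r / 2) * NB P M + real N0 * (NB p N0 * NB q M * C)"
      using sum_if_less_bound[where X="NB p N0 * NB q M * C" and M=M and Nb=N0] NB_pos[of p N0] NB_pos[of q M] C by simp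
    finally have S: "(\<Sum>m\<le>M. NB p m * NB q (M - m) * \<bar>g m\<bar>) \<le> (r / 2) * NB P M + real N0 * (NB p N0 * NB q M * C)" .
    have q1: "NB q M * (real M + 1 + real q) = NB (Suc q) M * (real q + 1)" using NB_Suc_e[of q M] by simp
    have NBP: "NB (Suc q) M \<le> NB P M" unfolding P_def by (intro NB_mono_e') auto
    have "real N0 * (NB p N0 * NB q M * C) * (real M + 1 + real q) = K * NB (Suc q) M"
      unfolding K_def using q1 by (simp add: algebra_simps)
    also have "\<dots> \<le> K * NB P M" using K0 NBP by (intro mult_left_mono) auto
    finally have T: "real N0 * (NB p N0 * NB q M * C) * (real M + 1 + real q) \<le> K * NB P M" .
    have Mpos: "real M + 1 + real q > 0" by simp
    have "K < r / 2 * (real M + 1 + real q)"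
    proof -
      have "2 * K / r < real M + 1 + real q" using M0 \<open>M0 \<le> M\<close> by linarith
      then show ?thesis using r by (simp add: field_simps)
    qed
    then have "K * NB P M < r / 2 * (real M + 1 + real q) * NB P M"
      using NB_pos[of P M] by (intro mult_strict_right_mono) auto
    moreover have "(r / 2 * (real M + 1 + real q)) * NB P M = (r / 2 * NB P M) * (real M + 1 + real q)"
      by (simp add: ac_simps)
    ultimately have "real N0 * (NB p N0 * NB q M * C) * (real M + 1 + real q) < (r / 2 * NB P M) * (real M + 1 + real q)"
      using T by linarith
    then have U: "real N0 * (NB p N0 * NB q M * C) < r / 2 * NB P M"
      using Mpos by (meson mult_less_cancel_right_pos)
    have "(\<Sum>m\<le>M. NB p m * NB q (M - m) * \<bar>g m\<bar>) < r * NB P M" using S U by linarith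
    moreover have "(\<Sum>m\<le>M. NB p m * NB q (M - m) * \<bar>g m\<bar>) \<ge> 0"
      using NB_pos by (intro sum_nonneg) (simp add: less_imp_le)
    ultimately show "norm ((\<Sum>m\<le>M. NB p m * NB q (M - m) * \<bar>g m\<bar>) / NB (p + q + 1) M - 0) < r"
      using NB_pos[of P M] unfolding P_def[symmetric] by (simp add: divide_less_eq)
  qed
qed


definition cls :: "real \<Rightarrow> nat \<Rightarrow> (nat \<Rightarrow> real) \<Rightarrow> real \<Rightarrow> bool" where
  "cls R e s L \<longleftrightarrow> (\<lambda>n. s n / (NB e n * R ^ n)) \<longlonglongrightarrow> L"

definition conv0 :: "(nat \<Rightarrow> real) \<Rightarrow> (nat \<Rightarrow> real) \<Rightarrow> nat \<Rightarrow> real" where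
  "conv0 a b n = (\<Sum>m\<le>n. a m * b (n - m))"

lemma conv0_swap: "conv0 a b n = conv0 b a n"
  unfolding conv0_def
  by (subst sum.atLeastAtMost_rev[of _ 0 n, simplified atLeast0AtMost]) (simp add: mult.commute)

lemma conv0_swap_fun: "conv0 a b = conv0 b a"
  by (rule ext) (rule conv0_swap)

lemma cls_decomp:
  assumes "R > 0" "cls R e s L"
  obtains \<epsilon> where "\<epsilon> \<longlonglongrightarrow> 0" "\<And>n. s n = NB e n * R ^ n * (L + \<epsilon> n)"
proof -
  define \<epsilon> where "\<epsilon> n = s n / (NB e n * R ^ n) - L" for n
  have "\<epsilon> \<longlonglongrightarrow> 0" unfolding \<epsilon>_def using assms(2) unfolding cls_def by (rule LIM_zero)
  moreover have "s n = NB e n * R ^ n * (L + \<epsilon> n)" for n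
    unfolding \<epsilon>_def using NB_pos[of e n] assms(1) by simp
  ultimately show ?thesis using that by blast
qed

lemma conv_eq:
  assumes \<alpha>: "\<alpha> > 0" and a: "cls \<alpha> p a A" and b: "cls \<alpha> q b B"
  shows "cls \<alpha> (p + q + 1) (conv0 a b) (A * B)"
proof -
  obtain \<epsilon> where e: "\<epsilon> \<longlonglongrightarrow> 0" "\<And>n. a n = NB p n * \<alpha> ^ n * (A + \<epsilon> n)"
    using cls_decomp[OF \<alpha> a] by blast
  obtain \<delta> where d: "\<delta> \<longlonglongrightarrow> 0" "\<And>n. b n = NB q n * \<alpha> ^ n * (B + \<delta> n)"
    using cls_decomp[OF \<alpha> b] by blast
  obtain Cd where Cd: "Cd > 0" "\<And>m. norm (\<delta> m) \<le> Cd"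
    using convergent_imp_Bseq[OF convergentI[OF d(1)]] by (auto elim: BseqE)
  define P where "P = p + q + 1"
  define w where "w M m = NB p m * NB q (M - m) / NB P M" for M m
  have wsum: "(\<Sum>m\<le>M. w M m) = 1" for M
    unfolding w_def P_def using NB_sum[of p q M] NB_pos[of "p+q+1" M]
    by (simp add: sum_divide_distrib[symmetric])
  have w0: "w M m \<ge> 0" for M m unfolding w_def using NB_pos by (simp add: less_imp_le)
  have ratio: "conv0 a b M / (NB P M * \<alpha> ^ M) = (\<Sum>m\<le>M. w M m * ((A + \<epsilon> m) * (B + \<delta> (M - m))))" for M
  proof -
    have "conv0 a b M = (\<Sum>m\<le>M. \<alpha> ^ M * (NB p m * NB q (M - m) * ((A + \<epsilon> m) * (B + \<delta> (M - m)))))"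
      unfolding conv0_def
    proof (intro sum.cong refl)
      fix m assume "m \<in> {..M}"
      then have pw: "\<alpha> ^ m * \<alpha> ^ (M - m) = \<alpha> ^ M" by (simp add: power_add[symmetric])
      have "a m * b (M - m) = (\<alpha> ^ m * \<alpha> ^ (M - m)) * (NB p m * NB q (M - m) * ((A + \<epsilon> m) * (B + \<delta> (M - m))))"
        unfolding e(2) d(2) by (simp add: algebra_simps)
      then show "a m * b (M - m) = \<alpha> ^ M * (NB p m * NB q (M - m) * ((A + \<epsilon> m) * (B + \<delta> (M - m))))"
        unfolding pw .
    qed
    also have "\<dots> = \<alpha> ^ M * (\<Sum>m\<le>M. NB p m * NB q (M - m) * ((A + \<epsilon> m) * (B + \<delta> (M - m))))"
      by (simp only: sum_distrib_left)
    finally have c1: "conv0 a b M / (NB P M * \<alpha> ^ M) = (\<Sum>m\<le>M. NB p m * NB q (M - m) * ((A + \<epsilon> m) * (B + \<delta> (M - m)))) / NB P M"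
      using \<alpha> by simp
    show ?thesis unfolding c1 w_def sum_divide_distrib by (intro sum.cong refl) simp
  qed
  have diff: "conv0 a b M / (NB P M * \<alpha> ^ M) - A * B = (\<Sum>m\<le>M. w M m * (A * \<delta> (M - m) + B * \<epsilon> m + \<epsilon> m * \<delta> (M - m)))" for M
  proof -
    have AB: "A * B = (\<Sum>m\<le>M. w M m * (A * B))" using wsum[of M] by (simp add: sum_distrib_right[symmetric])
    have "conv0 a b M / (NB P M * \<alpha> ^ M) - A * B = (\<Sum>m\<le>M. w M m * ((A + \<epsilon> m) * (B + \<delta> (M - m))) - w M m * (A * B))"
      unfolding ratio by (subst AB) (simp only: sum_subtractf)
    also have "\<dots> = (\<Sum>m\<le>M. w M m * (A * \<delta> (M - m) + B * \<epsilon> m + \<epsilon> m * \<delta> (M - m)))"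
      by (intro sum.cong refl) (simp add: algebra_simps)
    finally show ?thesis .
  qed
  have bnd: "norm (conv0 a b M / (NB P M * \<alpha> ^ M) - A * B) \<le>
      \<bar>A\<bar> * ((\<Sum>m\<le>M. NB q m * NB p (M - m) * \<bar>\<delta> m\<bar>) / NB (q + p + 1) M)
      + (\<bar>B\<bar> + Cd) * ((\<Sum>m\<le>M. NB p m * NB q (M - m) * \<bar>\<epsilon> m\<bar>) / NB (p + q + 1) M)" for M
  proof -
    have "norm (conv0 a b M / (NB P M * \<alpha> ^ M) - A * B) \<le> (\<Sum>m\<le>M. w M m * (\<bar>A\<bar> * \<bar>\<delta> (M - m)\<bar> + (\<bar>B\<bar> + Cd) * \<bar>\<epsilon> m\<bar>))"
      unfolding diff real_norm_def
    proof (rule order_trans[OF sum_abs], intro sum_mono)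
      fix m assume "m \<in> {..M}"
      have "\<bar>\<epsilon> m * \<delta> (M - m)\<bar> \<le> Cd * \<bar>\<epsilon> m\<bar>"
        using Cd(2)[of "M - m"] by (simp add: abs_mult mult.commute[of Cd] mult_left_mono)
      then have "\<bar>A * \<delta> (M - m) + B * \<epsilon> m + \<epsilon> m * \<delta> (M - m)\<bar> \<le> \<bar>A\<bar> * \<bar>\<delta> (M - m)\<bar> + (\<bar>B\<bar> + Cd) * \<bar>\<epsilon> m\<bar>"
      proof -
        have t: "\<bar>x + y + z\<bar> \<le> \<bar>x\<bar> + \<bar>y\<bar> + \<bar>z\<bar>" for x y z :: real by arith
        show ?thesis using t[of "A * \<delta> (M - m)" "B * \<epsilon> m" "\<epsilon> m * \<delta> (M - m)"] \<open>\<bar>\<epsilon> m * \<delta> (M - m)\<bar> \<le> Cd * \<bar>\<epsilon> m\<bar>\<close>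
          by (simp add: abs_mult algebra_simps)
      qed
      then show "\<bar>w M m * (A * \<delta> (M - m) + B * \<epsilon> m + \<epsilon> m * \<delta> (M - m))\<bar> \<le> w M m * (\<bar>A\<bar> * \<bar>\<delta> (M - m)\<bar> + (\<bar>B\<bar> + Cd) * \<bar>\<epsilon> m\<bar>)"
        using w0[of M m] by (simp add: abs_mult mult_left_mono)
    qed
    also have "\<dots> = \<bar>A\<bar> * (\<Sum>m\<le>M. w M m * \<bar>\<delta> (M - m)\<bar>) + (\<bar>B\<bar> + Cd) * (\<Sum>m\<le>M. w M m * \<bar>\<epsilon> m\<bar>)"
      by (simp add: sum.distrib sum_distrib_left algebra_simps)
    also have "(\<Sum>m\<le>M. w M m * \<bar>\<delta> (M - m)\<bar>) = (\<Sum>m\<le>M. NB q m * NB p (M - m) * \<bar>\<delta> m\<bar>) / NB (q + p + 1) M"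
    proof -
      have "(\<Sum>m\<le>M. w M m * \<bar>\<delta> (M - m)\<bar>) = (\<Sum>m\<le>M. w M (M - m) * \<bar>\<delta> (M - (M - m))\<bar>)"
        by (subst sum.atLeastAtMost_rev[of _ 0 M, simplified atLeast0AtMost]) simp
      also have "\<dots> = (\<Sum>m\<le>M. NB q m * NB p (M - m) * \<bar>\<delta> m\<bar> / NB (q + p + 1) M)"
        unfolding w_def P_def by (intro sum.cong refl) (auto simp: add.commute mult.commute)
      finally show ?thesis by (simp add: sum_divide_distrib)
    qed
    also have "(\<Sum>m\<le>M. w M m * \<bar>\<epsilon> m\<bar>) = (\<Sum>m\<le>M. NB p m * NB q (M - m) * \<bar>\<epsilon> m\<bar>) / NB (p + q + 1) M"
      unfolding w_def P_def by (simp add: sum_divide_distrib)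
    finally show ?thesis .
  qed
  have lim0: "(\<lambda>M. \<bar>A\<bar> * ((\<Sum>m\<le>M. NB q m * NB p (M - m) * \<bar>\<delta> m\<bar>) / NB (q + p + 1) M)
      + (\<bar>B\<bar> + Cd) * ((\<Sum>m\<le>M. NB p m * NB q (M - m) * \<bar>\<epsilon> m\<bar>) / NB (p + q + 1) M)) \<longlonglongrightarrow> 0"
    using tendsto_add[OF tendsto_mult_right_zero[OF wcesaro[OF d(1), of q p]] tendsto_mult_right_zero[OF wcesaro[OF e(1), of p q]]]
    by simp
  have "(\<lambda>M. conv0 a b M / (NB P M * \<alpha> ^ M) - A * B) \<longlonglongrightarrow> 0"
    by (rule Lim_null_comparison[OF _ lim0]) (use bnd in auto)
  then show ?thesis unfolding cls_def P_def by (rule LIM_zero_cancel)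
qed


lemma NB_ratio_k: "(\<lambda>n. NB e n / NB e (n + k)) \<longlonglongrightarrow> 1"
proof (induction k)
  case 0
  have "NB e n / NB e (n + 0) = 1" for n using NB_pos[of e n] by simp
  then show ?case by simp
next
  case (Suc k)
  have "(\<lambda>n. NB e n / NB e (n + k) * (NB e (n + k) / NB e (Suc (n + k)))) \<longlonglongrightarrow> 1 * 1"
    using tendsto_mult[OF Suc.IH LIMSEQ_ignore_initial_segment[OF NB_ratio_Suc[of e], of k]]
    by (simp add: add.commute)
  moreover have "NB e n / NB e (n + k) * (NB e (n + k) / NB e (Suc (n + k))) = NB e n / NB e (n + Suc k)" for n
    using NB_pos[of e "n+k"] by simp
  ultimately show ?case by simp
qed

lemma cls_bound:
  assumes "cls R e s L" "R > 0"
  obtains C where "C > 0" "\<And>n. \<bar>s n\<bar> \<le> C * (NB e n * \<bar>R\<bar> ^ n)"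
proof -
  obtain C where C: "C > 0" "\<And>n. norm (s n / (NB e n * R ^ n)) \<le> C"
    using convergent_imp_Bseq[OF convergentI[OF assms(1)[unfolded cls_def]]] by (auto elim: BseqE)
  have "\<bar>s n\<bar> \<le> C * (NB e n * \<bar>R\<bar> ^ n)" for n
  proof -
    have "R ^ n \<noteq> 0" using assms(2) by auto
    then have "\<bar>s n\<bar> / (NB e n * \<bar>R\<bar> ^ n) \<le> C" using C(2)[of n] NB_pos[of e n]
      by (simp add: abs_mult power_abs)
    then show ?thesis using NB_pos[of e n] \<open>R ^ n \<noteq> 0\<close> by (simp add: divide_le_eq power_abs)
  qed
  then show ?thesis using that C(1) by blast
qed

lemma conv_gt:
  assumes \<beta>: "\<beta> > 0" and \<alpha>\<beta>: "\<beta> < \<alpha>" and a: "cls \<alpha> p a A" and b: "cls \<beta> q b B"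
  shows "summable (\<lambda>k. b k / \<alpha> ^ k)" "cls \<alpha> p (conv0 a b) (A * (\<Sum>k. b k / \<alpha> ^ k))"
proof -
  have \<alpha>: "\<alpha> > 0" using \<beta> \<alpha>\<beta> by simp
  obtain Cb where Cb: "Cb > 0" "\<And>n. \<bar>b n\<bar> \<le> Cb * (NB q n * \<bar>\<beta>\<bar> ^ n)" using cls_bound[OF b \<beta>] by blast
  obtain Ca where Ca: "Ca > 0" "\<And>n. \<bar>a n\<bar> \<le> Ca * (NB p n * \<bar>\<alpha>\<bar> ^ n)" using cls_bound[OF a \<alpha>] by blast
  define Mb where "Mb k = Cb * (NB q k * (\<beta> / \<alpha>) ^ k)" for k
  have sMb: "summable Mb" unfolding Mb_def
    by (intro summable_mult summable_NB_geom) (use \<alpha> \<beta> \<alpha>\<beta> in auto)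
  have bM: "\<bar>b k / \<alpha> ^ k\<bar> \<le> Mb k" for k
  proof -
    have "\<bar>b k / \<alpha> ^ k\<bar> = \<bar>b k\<bar> / \<alpha> ^ k" using \<alpha> by (simp add: abs_divide)
    also have "\<dots> \<le> Cb * (NB q k * \<beta> ^ k) / \<alpha> ^ k" using Cb(2)[of k] \<alpha> \<beta> by (intro divide_right_mono) auto
    also have "\<dots> = Mb k" unfolding Mb_def by (simp add: power_divide)
    finally show ?thesis .
  qed
  show sb: "summable (\<lambda>k. b k / \<alpha> ^ k)"
    by (rule summable_comparison_test[OF _ sMb]) (use bM in auto)
  define f where "f k M = (if k \<le> M then b k / \<alpha> ^ k * (a (M - k) / (NB p M * \<alpha> ^ (M - k))) else 0)" for k M
  have eqf: "conv0 a b M / (NB p M * \<alpha> ^ M) = (\<Sum>k. f k M)" for M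
  proof -
    have "(\<Sum>k. f k M) = (\<Sum>k\<le>M. f k M)" by (rule suminf_finite) (auto simp: f_def)
    also have "\<dots> = (\<Sum>k\<le>M. b k * a (M - k) / (NB p M * \<alpha> ^ M))"
    proof (intro sum.cong refl)
      fix k assume "k \<in> {..M}"
      then have "\<alpha> ^ M = \<alpha> ^ k * \<alpha> ^ (M - k)" by (simp add: power_add[symmetric])
      then show "f k M = b k * a (M - k) / (NB p M * \<alpha> ^ M)" using \<open>k \<in> {..M}\<close> \<alpha> NB_pos[of p M]
        by (simp add: f_def field_simps)
    qed
    also have "\<dots> = conv0 b a M / (NB p M * \<alpha> ^ M)"
      by (simp add: conv0_def sum_divide_distrib)
    also have "\<dots> = conv0 a b M / (NB p M * \<alpha> ^ M)"
      by (simp add: conv0_swap[of b a])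
    finally show ?thesis by simp
  qed
  have lim: "(\<lambda>M. f k M) \<longlonglongrightarrow> b k / \<alpha> ^ k * A" for k
  proof (rule LIMSEQ_offset[where k=k])
    have "f k (n + k) = b k / \<alpha> ^ k * ((a n / (NB p n * \<alpha> ^ n)) * (NB p n / NB p (n + k)))" for n
      using NB_pos[of p n] NB_pos[of p "n+k"] \<alpha> by (simp add: f_def field_simps)
    moreover have "(\<lambda>n. b k / \<alpha> ^ k * ((a n / (NB p n * \<alpha> ^ n)) * (NB p n / NB p (n + k)))) \<longlonglongrightarrow> b k / \<alpha> ^ k * (A * 1)"
      using a[unfolded cls_def] NB_ratio_k[of p k] by (intro tendsto_intros)
    ultimately show "(\<lambda>n. f k (n + k)) \<longlonglongrightarrow> b k / \<alpha> ^ k * A" by simp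
  qed
  have bnd: "norm (f k M) \<le> Ca * Mb k" for k M
  proof (cases "k \<le> M")
    case True
    have "\<bar>a (M - k)\<bar> \<le> Ca * (NB p M * \<alpha> ^ (M - k))"
      using Ca(2)[of "M - k"] NB_mono_n[of "M - k" M p] \<alpha> Ca(1)
      by (smt (verit, ccfv_SIG) diff_le_self mult_left_mono mult_right_mono zero_le_power abs_of_pos)
    then have "\<bar>a (M - k) / (NB p M * \<alpha> ^ (M - k))\<bar> \<le> Ca"
      using NB_pos[of p M] \<alpha> by (simp add: abs_divide abs_mult divide_le_eq)
    then have "\<bar>b k / \<alpha> ^ k\<bar> * \<bar>a (M - k) / (NB p M * \<alpha> ^ (M - k))\<bar> \<le> Mb k * Ca"
      using bM[of k] order_trans[OF abs_ge_zero bM[of k]] by (intro mult_mono) auto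
    then show ?thesis using True by (simp add: f_def abs_mult mult.commute)
  next
    case False
    then show ?thesis using Ca(1) sMb by (simp add: f_def Mb_def Cb NB_pos less_imp_le \<alpha> \<beta>)
  qed
  have "(\<lambda>M. \<Sum>k. f k M) \<longlonglongrightarrow> (\<Sum>k. b k / \<alpha> ^ k * A)"
    using tannerys_theorem[where a=f and F=sequentially and M="\<lambda>k. Ca * Mb k", OF lim]
      summable_mult[OF sMb, of Ca] bnd by (auto intro: always_eventually)
  moreover have "(\<Sum>k. b k / \<alpha> ^ k * A) = A * (\<Sum>k. b k / \<alpha> ^ k)"
    using suminf_mult2[OF sb, of A] by (simp add: mult.commute)
  ultimately show "cls \<alpha> p (conv0 a b) (A * (\<Sum>k. b k / \<alpha> ^ k))"
    unfolding cls_def eqf by simp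
qed

lemma conv_lt:
  assumes \<alpha>: "\<alpha> > 0" and \<alpha>\<beta>: "\<alpha> < \<beta>" and a: "cls \<alpha> p a A" and b: "cls \<beta> q b B"
  shows "summable (\<lambda>k. a k / \<beta> ^ k)" "cls \<beta> q (conv0 a b) (B * (\<Sum>k. a k / \<beta> ^ k))"
  using conv_gt[OF \<alpha> \<alpha>\<beta> b a] conv0_swap_fun[of a b] by simp_all

lemma cls_add: "cls R e s L \<Longrightarrow> cls R e t M \<Longrightarrow> cls R e (\<lambda>n. s n + t n) (L + M)"
  unfolding cls_def by (simp add: add_divide_distrib tendsto_add)

lemma cls_cmult: "cls R e s L \<Longrightarrow> cls R e (\<lambda>n. c * s n) (c * L)"
  unfolding cls_def by (simp add: tendsto_mult_left mult.assoc[symmetric] times_divide_eq_right[symmetric] del: times_divide_eq_right)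

lemma cls_zero: "cls R e (\<lambda>n. 0) 0"
  unfolding cls_def by simp

lemma cls_sum: "finite I \<Longrightarrow> (\<And>i. i \<in> I \<Longrightarrow> cls R e (s i) (L i)) \<Longrightarrow> cls R e (\<lambda>n. \<Sum>i\<in>I. s i n) (\<Sum>i\<in>I. L i)"
proof (induction I rule: finite_induct)
  case empty then show ?case by (simp add: cls_zero)
next
  case (insert x F)
  then show ?case by (simp add: cls_add)
qed

lemma cls_cong: "cls R e s L \<Longrightarrow> (\<And>n. s n = t n) \<Longrightarrow> L = M \<Longrightarrow> cls R e t M"
  by (metis ext)

lemma cls_unique: "cls R e s L \<Longrightarrow> cls R e s M \<Longrightarrow> L = M"
  unfolding cls_def using LIMSEQ_unique by blast

definition shift :: "(nat \<Rightarrow> real) \<Rightarrow> nat \<Rightarrow> real" where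
  "shift s n = (if n = 0 then 0 else s (n - 1))"

lemma cls_shift:
  assumes "R > 0" "cls R e s L"
  shows "cls R e (shift s) (L / R)"
  unfolding cls_def
proof (rule LIMSEQ_offset[where k=1])
  have "shift s (n + 1) / (NB e (n + 1) * R ^ (n + 1)) = (s n / (NB e n * R ^ n)) * (NB e n / NB e (Suc n)) / R" for n
    using assms(1) by (simp add: shift_def field_simps)
  moreover have "(\<lambda>n. (s n / (NB e n * R ^ n)) * (NB e n / NB e (Suc n)) / R) \<longlonglongrightarrow> L * 1 / R"
    using assms(2)[unfolded cls_def] NB_ratio_Suc[of e] assms(1) by (intro tendsto_intros) auto
  ultimately show "(\<lambda>n. shift s (n + 1) / (NB e (n + 1) * R ^ (n + 1))) \<longlonglongrightarrow> L / R" by simp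
qed

lemma cls_weight1:
  assumes "cls R 0 s L"
  shows "cls R 1 (\<lambda>n. (real n + 1) * s n) L"
proof -
  have "NB (Suc 0) n = real n + 1" for n using NB_1[of n] by simp
  then show ?thesis using assms unfolding cls_def by simp
qed

lemma cls_to_zero:
  assumes R: "R > 0" and c: "cls R e s L" and lt: "R < R' \<or> (R = R' \<and> e < e')"
  shows "cls R' e' s 0"
proof -
  have R': "R' > 0" using R lt by auto
  have fac: "(\<lambda>n. NB e n * R ^ n / (NB e' n * R' ^ n)) \<longlonglongrightarrow> 0"
  proof (cases "R < R'")
    case True
    have L1: "(\<lambda>n. NB e n * (R / R') ^ n) \<longlonglongrightarrow> 0"
      by (rule summable_LIMSEQ_zero, rule summable_NB_geom) (use R True in auto)
    have B1: "\<forall>n. norm (NB e n * R ^ n / (NB e' n * R' ^ n)) \<le> NB e n * (R / R') ^ n"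
    proof
      fix n
      have "NB e n * R ^ n / (NB e' n * R' ^ n) = (NB e n * (R / R') ^ n) / NB e' n"
        using R' by (simp add: power_divide field_simps)
      also have "\<dots> \<le> NB e n * (R / R') ^ n / 1"
        using NB_ge1[of e' n] NB_pos[of e n] R R' by (intro divide_left_mono) (auto)
      finally show "norm (NB e n * R ^ n / (NB e' n * R' ^ n)) \<le> NB e n * (R / R') ^ n"
        using NB_pos[of e n] NB_pos[of e' n] R R' by simp
    qed
    show ?thesis
      by (rule Lim_null_comparison[OF always_eventually[OF B1] L1])
  next
    case False
    then have eq: "R = R'" "e < e'" using lt by auto
    have L1: "(\<lambda>n. NB e n / NB (Suc e) n) \<longlonglongrightarrow> 0" by (rule NB_ratio_e)
    have B1: "\<forall>n. norm (NB e n * R ^ n / (NB e' n * R' ^ n)) \<le> NB e n / NB (Suc e) n"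
    proof
      fix n
      have "NB (Suc e) n \<le> NB e' n" using eq by (intro NB_mono_e') auto
      then have "NB e n / NB e' n \<le> NB e n / NB (Suc e) n"
        using NB_pos[of e n] NB_pos[of "Suc e" n] by (intro divide_left_mono) auto
      then show "norm (NB e n * R ^ n / (NB e' n * R' ^ n)) \<le> NB e n / NB (Suc e) n"
        using eq R NB_pos[of e n] NB_pos[of e' n] by simp
    qed
    show ?thesis
      by (rule Lim_null_comparison[OF always_eventually[OF B1] L1])
  qed
  have T: "(\<lambda>n. (s n / (NB e n * R ^ n)) * (NB e n * R ^ n / (NB e' n * R' ^ n))) \<longlonglongrightarrow> L * 0"
    using c[unfolded cls_def] fac by (rule tendsto_mult)
  have E: "(\<lambda>n. (s n / (NB e n * R ^ n)) * (NB e n * R ^ n / (NB e' n * R' ^ n))) = (\<lambda>n. s n / (NB e' n * R' ^ n))"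
  proof
    fix n
    have "R ^ n \<noteq> 0" using R by simp
    then show "(s n / (NB e n * R ^ n)) * (NB e n * R ^ n / (NB e' n * R' ^ n)) = s n / (NB e' n * R' ^ n)"
      by (simp add: field_simps)
  qed
  show ?thesis using T unfolding cls_def E by simp
qed

lemma stoch_upper:
  fixes T x :: "nat \<Rightarrow> real"
  assumes B: "finite B" "B \<noteq> {}" and T0: "\<forall>t\<in>B. T t \<ge> \<epsilon>" "\<epsilon> \<ge> 0" and T1: "(\<Sum>t\<in>B. T t) = 1"
  shows "(\<Sum>t\<in>B. T t * x t) \<le> Max (x ` B) - \<epsilon> * (Max (x ` B) - Min (x ` B))"
proof -
  define mx where "mx = Max (x ` B)"
  define mn where "mn = Min (x ` B)"
  have "mn \<in> x ` B" unfolding mn_def using B by (intro Min_in) auto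
  then obtain t0 where t0: "t0 \<in> B" "x t0 = mn" by auto
  have xle: "x t \<le> mx" if "t \<in> B" for t unfolding mx_def using B that by auto
  have "(\<Sum>t\<in>B. T t * x t) = (\<Sum>t\<in>B. T t * (x t - mx)) + mx"
    using T1 by (simp add: algebra_simps sum.distrib sum_distrib_left[symmetric] sum_subtractf)
  also have "(\<Sum>t\<in>B. T t * (x t - mx)) \<le> T t0 * (x t0 - mx)"
  proof -
    have "(\<Sum>t\<in>B. T t * (x t - mx)) = T t0 * (x t0 - mx) + (\<Sum>t\<in>B - {t0}. T t * (x t - mx))"
      using t0(1) B(1) by (simp add: sum.remove)
    also have "(\<Sum>t\<in>B - {t0}. T t * (x t - mx)) \<le> 0"
      using T0 xle by (intro sum_nonpos) (auto simp: mult_nonneg_nonpos)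
    finally show ?thesis by simp
  qed
  also have "T t0 * (x t0 - mx) \<le> \<epsilon> * (mn - mx)"
  proof -
    have "mn - mx \<le> 0" using xle t0 by auto
    then show ?thesis using T0 t0 by (simp add: mult_right_mono_neg)
  qed
  finally show ?thesis unfolding mx_def mn_def by (simp add: algebra_simps)
qed

lemma stoch_lower:
  fixes T x :: "nat \<Rightarrow> real"
  assumes B: "finite B" "B \<noteq> {}" and T0: "\<forall>t\<in>B. T t \<ge> \<epsilon>" "\<epsilon> \<ge> 0" and T1: "(\<Sum>t\<in>B. T t) = 1"
  shows "(\<Sum>t\<in>B. T t * x t) \<ge> Min (x ` B) + \<epsilon> * (Max (x ` B) - Min (x ` B))"
proof -
  define mx where "mx = Max (x ` B)"
  define mn where "mn = Min (x ` B)"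
  have "mx \<in> x ` B" unfolding mx_def using B by (intro Max_in) auto
  then obtain t0 where t0: "t0 \<in> B" "x t0 = mx" by auto
  have xge: "x t \<ge> mn" if "t \<in> B" for t unfolding mn_def using B that by auto
  have "(\<Sum>t\<in>B. T t * x t) = (\<Sum>t\<in>B. T t * (x t - mn)) + mn"
    using T1 by (simp add: algebra_simps sum.distrib sum_distrib_left[symmetric] sum_subtractf)
  moreover have "(\<Sum>t\<in>B. T t * (x t - mn)) \<ge> T t0 * (x t0 - mn)"
  proof -
    have "(\<Sum>t\<in>B. T t * (x t - mn)) = T t0 * (x t0 - mn) + (\<Sum>t\<in>B - {t0}. T t * (x t - mn))"
      using t0(1) B(1) by (simp add: sum.remove)
    moreover have "(\<Sum>t\<in>B - {t0}. T t * (x t - mn)) \<ge> 0"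
      using T0 xge by (intro sum_nonneg) auto
    ultimately show ?thesis by simp
  qed
  moreover have "T t0 * (x t0 - mn) \<ge> \<epsilon> * (mx - mn)"
  proof -
    have "mx - mn \<ge> 0" using xge t0 by force
    then show ?thesis using T0 t0 by (simp add: mult_right_mono)
  qed
  ultimately show ?thesis unfolding mx_def mn_def by (simp add: algebra_simps)
qed


lemma mpow_nonneg:
  assumes "\<forall>r\<in>B. \<forall>s\<in>B. A r s \<ge> (0::real)" "r \<in> B"
  shows "mpow B A m r s \<ge> 0"
  using assms(2)
proof (induction m arbitrary: r)
  case 0 then show ?case by simp
next
  case (Suc m)
  then show ?case using assms(1) by (simp add: mmul_def sum_nonneg)
qed

lemma mpow_add:
  fixes A :: "nat \<Rightarrow> nat \<Rightarrow> real"
  assumes "finite B" "r \<in> B"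
  shows "mpow B A (k + m) r s = (\<Sum>t\<in>B. mpow B A k r t * mpow B A m t s)"
  using assms(2)
proof (induction k arbitrary: r)
  case 0
  have "(\<Sum>t\<in>B. mpow B A 0 r t * mpow B A m t s) = (\<Sum>t\<in>B. if t = r then mpow B A m t s else 0)"
    by (intro sum.cong refl) auto
  also have "\<dots> = mpow B A m r s" using assms(1) 0 by (simp add: sum.delta')
  finally show ?case by simp
next
  case (Suc k)
  have "mpow B A (Suc k + m) r s = (\<Sum>u\<in>B. A r u * mpow B A (k + m) u s)"
    by (simp add: mmul_def)
  also have "\<dots> = (\<Sum>u\<in>B. A r u * (\<Sum>t\<in>B. mpow B A k u t * mpow B A m t s))"
    using Suc.IH by (intro sum.cong refl) auto
  also have "\<dots> = (\<Sum>t\<in>B. (\<Sum>u\<in>B. A r u * mpow B A k u t) * mpow B A m t s)"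
    by (simp add: sum_distrib_left sum_distrib_right mult.assoc) (rule sum.swap)
  also have "\<dots> = (\<Sum>t\<in>B. mpow B A (Suc k) r t * mpow B A m t s)"
    by (simp add: mmul_def)
  finally show ?case .
qed

lemma mpow_eig:
  fixes A :: "nat \<Rightarrow> nat \<Rightarrow> real"
  assumes fin: "finite B" and eig: "\<forall>r\<in>B. mvec B A v r = \<rho> * v r" and r: "r \<in> B"
  shows "(\<Sum>s\<in>B. mpow B A m r s * v s) = \<rho> ^ m * v r"
  using r
proof (induction m arbitrary: r)
  case 0
  have "(\<Sum>s\<in>B. mpow B A 0 r s * v s) = (\<Sum>s\<in>B. if s = r then v s else 0)"
    by (intro sum.cong refl) auto
  also have "\<dots> = v r" using 0 fin by (simp add: sum.delta')
  finally show ?case by simp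
next
  case (Suc m)
  have "(\<Sum>s\<in>B. mpow B A (Suc m) r s * v s) = (\<Sum>s\<in>B. (\<Sum>t\<in>B. A r t * mpow B A m t s) * v s)"
    by (simp add: mmul_def)
  also have "\<dots> = (\<Sum>t\<in>B. A r t * (\<Sum>s\<in>B. mpow B A m t s * v s))"
    by (simp add: sum_distrib_left sum_distrib_right mult.assoc) (rule sum.swap)
  also have "\<dots> = (\<Sum>t\<in>B. A r t * (\<rho> ^ m * v t))"
    using Suc.IH by (intro sum.cong refl) auto
  also have "\<dots> = \<rho> ^ m * mvec B A v r"
    by (simp add: mvec_def sum_distrib_left algebra_simps)
  also have "\<dots> = \<rho> ^ Suc m * v r" using eig Suc.prems by simp
  finally show ?case .
qed


lemma pf_rho_pos:
  fixes A :: "nat \<Rightarrow> nat \<Rightarrow> real"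
  assumes fin: "finite B" and ne: "B \<noteq> {}" and nn: "\<forall>r\<in>B. \<forall>s\<in>B. A r s \<ge> 0"
    and ep: "eventually_positive B A" and vpos: "\<forall>r\<in>B. v r > 0" and eig: "\<forall>r\<in>B. mvec B A v r = \<rho> * v r"
  shows "\<rho> > 0"
proof -
  obtain N where N: "\<forall>n\<ge>N. \<forall>r\<in>B. \<forall>s\<in>B. mpow B A n r s > 0" using ep unfolding eventually_positive_def by blast
  obtain r where r: "r \<in> B" using ne by auto
  have "(\<Sum>s\<in>B. mpow B A (Suc N) r s * v s) > 0"
  proof (rule sum_pos[OF fin ne])
    fix s assume s: "s \<in> B"
    have "Suc N \<ge> N" by simp
    then have "mpow B A (Suc N) r s > 0" using N r s by blast
    then show "mpow B A (Suc N) r s * v s > 0" using vpos s by simp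
  qed
  then have pos: "\<rho> ^ Suc N * v r > 0" using mpow_eig[OF fin eig r, of "Suc N"] by metis
  have "\<rho> * v r \<ge> 0" using eig r nn vpos unfolding mvec_def
    by (metis (no_types, lifting) less_imp_le mult_nonneg_nonneg sum_nonneg)
  moreover have "v r > 0" using vpos r by blast
  ultimately have "\<rho> \<ge> 0" by (auto simp: zero_le_mult_iff)
  moreover have "\<rho> \<noteq> 0" using pos by auto
  ultimately show ?thesis by simp
qed

lemma pf_limit:
  fixes A :: "nat \<Rightarrow> nat \<Rightarrow> real"
  assumes fin: "finite B" and ne: "B \<noteq> {}" and nn: "\<forall>r\<in>B. \<forall>s\<in>B. A r s \<ge> 0"
    and ep: "eventually_positive B A" and vpos: "\<forall>r\<in>B. v r > 0" and eig: "\<forall>r\<in>B. mvec B A v r = \<rho> * v r"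
    and s: "s \<in> B"
  shows "\<exists>L>0. \<forall>r\<in>B. (\<lambda>m. mpow B A m r s / \<rho> ^ m) \<longlonglongrightarrow> L * v r / v s"
proof -
  have \<rho>: "\<rho> > 0" by (rule pf_rho_pos[OF fin ne nn ep vpos eig])
  obtain N where N: "\<forall>n\<ge>N. \<forall>r\<in>B. \<forall>s\<in>B. mpow B A n r s > 0" using ep unfolding eventually_positive_def by blast
  define K where "K k r t = mpow B A k r t * v t / (\<rho> ^ k * v r)" for k r t
  define c where "c m r = mpow B A m r s * v s / (\<rho> ^ m * v r)" for m r
  have K0: "K k r t \<ge> 0" if "r \<in> B" "t \<in> B" for k r t
    unfolding K_def
    by (intro divide_nonneg_pos mult_nonneg_nonneg mpow_nonneg[OF nn that(1)] mult_pos_pos zero_less_power)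
      (use vpos that \<rho> in auto)
  have K1: "(\<Sum>t\<in>B. K k r t) = 1" if "r \<in> B" for k r
  proof -
    have "(\<Sum>t\<in>B. K k r t) = (\<Sum>t\<in>B. mpow B A k r t * v t) / (\<rho> ^ k * v r)"
      unfolding K_def by (simp add: sum_divide_distrib)
    also have "\<dots> = 1" using mpow_eig[OF fin eig that] vpos that \<rho> by (simp add: less_imp_neq[symmetric])
    finally show ?thesis .
  qed
  have cK: "c (k + m) r = (\<Sum>t\<in>B. K k r t * c m t)" if "r \<in> B" for k m r
  proof -
    have "c (k + m) r = (\<Sum>t\<in>B. mpow B A k r t * mpow B A m t s) * v s / (\<rho> ^ (k + m) * v r)"
      unfolding c_def using mpow_add[OF fin that] by simp
    also have "\<dots> = (\<Sum>t\<in>B. K k r t * c m t)"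
      unfolding K_def c_def sum_distrib_right sum_divide_distrib
    proof (intro sum.cong refl)
      fix t assume t: "t \<in> B"
      have "v t \<noteq> 0" "v r \<noteq> 0" "\<rho> \<noteq> 0" using vpos t that \<rho> by (auto simp: less_imp_neq[symmetric])
      then show "mpow B A k r t * mpow B A m t s * v s / (\<rho> ^ (k + m) * v r) =
          mpow B A k r t * v t / (\<rho> ^ k * v r) * (mpow B A m t s * v s / (\<rho> ^ m * v t))"
        by (simp add: power_add field_simps)
    qed
    finally show ?thesis .
  qed
  define mx where "mx m = Max (c m ` B)" for m
  define mn where "mn m = Min (c m ` B)" for m
  have fB: "finite (c m ` B)" "c m ` B \<noteq> {}" for m using fin ne by auto
  have c_le: "c m r \<le> mx m" if "r \<in> B" for m r unfolding mx_def using fB that by auto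
  have c_ge: "mn m \<le> c m r" if "r \<in> B" for m r unfolding mn_def using fB that by auto
  have step_le: "c (k + m) r \<le> mx m" if "r \<in> B" for k m r
    using stoch_upper[OF fin ne _ order_refl K1[OF that], where x="c m"] K0 that cK[OF that, of k m]
    by (simp add: mx_def)
  have step_ge: "c (k + m) r \<ge> mn m" if "r \<in> B" for k m r
    using stoch_lower[OF fin ne _ order_refl K1[OF that], where x="c m"] K0 that cK[OF that, of k m]
    by (simp add: mn_def)
  have mx_mono: "mx (k + m) \<le> mx m" for k m
    unfolding mx_def[of "k + m"] using fB step_le by (subst Max_le_iff) auto
  have mn_mono: "mn (k + m) \<ge> mn m" for k m
    unfolding mn_def[of "k + m"] using fB step_ge by (subst Min_ge_iff) auto
  define \<epsilon> where "\<epsilon> = Min ((\<lambda>(r, t). K N r t) ` (B \<times> B))"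
  have fBB: "finite ((\<lambda>(r, t). K N r t) ` (B \<times> B))" "(\<lambda>(r, t). K N r t) ` (B \<times> B) \<noteq> {}"
    using fin ne by auto
  have eps_le: "\<epsilon> \<le> K N r t" if "r \<in> B" "t \<in> B" for r t
    unfolding \<epsilon>_def using fBB that by (intro Min_le) auto
  have eps_pos: "\<epsilon> > 0"
  proof -
    have "\<epsilon> \<in> (\<lambda>(r, t). K N r t) ` (B \<times> B)" unfolding \<epsilon>_def using fBB by (rule Min_in)
    then obtain r t where "r \<in> B" "t \<in> B" "\<epsilon> = K N r t" by auto
    then show ?thesis unfolding K_def using N vpos \<rho> by simp
  qed
  have eps_le1: "\<epsilon> \<le> 1"
  proof -
    obtain r where r: "r \<in> B" using ne by auto
    have "\<epsilon> \<le> K N r r" using eps_le r by simp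
    also have "\<dots> \<le> (\<Sum>t\<in>B. K N r t)" using K0 r fin by (intro member_le_sum) auto
    finally show ?thesis using K1 r by simp
  qed
  define osc where "osc m = mx m - mn m" for m
  have osc0: "osc m \<ge> 0" for m
  proof -
    obtain r where r: "r \<in> B" using ne by auto
    show ?thesis unfolding osc_def using c_le[OF r, of m] c_ge[OF r, of m] by simp
  qed
  have osc_mono: "osc (k + m) \<le> osc m" for k m
    unfolding osc_def using mx_mono[of k m] mn_mono[of m k] by simp
  have osc_contract: "osc (N + m) \<le> (1 - \<epsilon>) * osc m" for m
  proof -
    have up: "c (N + m) r \<le> mx m - \<epsilon> * (mx m - mn m)" if "r \<in> B" for r
      using stoch_upper[OF fin ne _ _ K1[OF that], where x="c m" and \<epsilon>=\<epsilon>] eps_le[OF that] eps_pos cK[OF that, of N m]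
      by (simp add: mx_def mn_def)
    have lo: "c (N + m) r \<ge> mn m + \<epsilon> * (mx m - mn m)" if "r \<in> B" for r
      using stoch_lower[OF fin ne _ _ K1[OF that], where x="c m" and \<epsilon>=\<epsilon>] eps_le[OF that] eps_pos cK[OF that, of N m]
      by (simp add: mx_def mn_def)
    have "mx (N + m) \<le> mx m - \<epsilon> * (mx m - mn m)"
      unfolding mx_def[of "N + m"] using fB up by (subst Max_le_iff) auto
    moreover have "mn (N + m) \<ge> mn m + \<epsilon> * (mx m - mn m)"
      unfolding mn_def[of "N + m"] using fB lo by (subst Min_ge_iff) auto
    ultimately have "osc (N + m) \<le> (1 - 2 * \<epsilon>) * osc m" unfolding osc_def by (simp add: algebra_simps)
    also have "\<dots> \<le> (1 - \<epsilon>) * osc m" using osc0[of m] eps_pos by (intro mult_right_mono) auto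
    finally show ?thesis .
  qed
  have osc_pow: "osc (j * N) \<le> (1 - \<epsilon>) ^ j * osc 0" for j
  proof (induction j)
    case 0 then show ?case by simp
  next
    case (Suc j)
    have "osc (Suc j * N) = osc (N + j * N)" by (simp add: add.commute)
    also have "\<dots> \<le> (1 - \<epsilon>) * osc (j * N)" by (rule osc_contract)
    also have "\<dots> \<le> (1 - \<epsilon>) * ((1 - \<epsilon>) ^ j * osc 0)" using Suc eps_le1 by (intro mult_left_mono) auto
    finally show ?case by simp
  qed
  have osc_lim: "osc \<longlonglongrightarrow> 0"
  proof (rule LIMSEQ_I)
    fix r :: real assume r: "r > 0"
    have "(\<lambda>j. (1 - \<epsilon>) ^ j * osc 0) \<longlonglongrightarrow> 0 * osc 0"
      using eps_pos eps_le1 by (intro tendsto_intros LIMSEQ_power_zero) auto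
    then obtain j where j: "norm ((1 - \<epsilon>) ^ j * osc 0 - 0) < r" using LIMSEQ_D[of _ 0 r] r by force
    show "\<exists>no. \<forall>n\<ge>no. norm (osc n - 0) < r"
    proof (intro exI allI impI)
      fix n assume "j * N \<le> n"
      then have "osc n \<le> osc (j * N)" using osc_mono[of "n - j * N" "j * N"] by simp
      also have "\<dots> \<le> (1 - \<epsilon>) ^ j * osc 0" by (rule osc_pow)
      finally show "norm (osc n - 0) < r" using j osc0[of n] osc0[of 0] eps_le1 by auto
    qed
  qed
  have dec: "decseq mx" unfolding decseq_def using mx_mono
    by (metis le_add_diff_inverse2)
  have lb: "\<forall>i. mn 0 \<le> mx i"
  proof
    fix i obtain r where r: "r \<in> B" using ne by auto
    have "mn 0 \<le> mn i" using mn_mono[where k=i and m=0] by simp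
    then show "mn 0 \<le> mx i" using c_ge[OF r, of i] c_le[OF r, of i] by linarith
  qed
  obtain L where L: "mx \<longlonglongrightarrow> L" using decseq_convergent[OF dec lb] by blast
  have mnL: "mn \<longlonglongrightarrow> L"
  proof -
    have "(\<lambda>m. mx m - osc m) \<longlonglongrightarrow> L - 0" using L osc_lim by (intro tendsto_intros)
    then show ?thesis unfolding osc_def by simp
  qed
  have cL: "(\<lambda>m. c m r) \<longlonglongrightarrow> L" if "r \<in> B" for r
    by (rule tendsto_sandwich[OF _ _ mnL L]) (use c_ge[OF that] c_le[OF that] in auto)
  have mnN: "mn N \<ge> \<epsilon>"
  proof -
    have "\<epsilon> \<le> c N r" if "r \<in> B" for r using eps_le[OF that s] unfolding K_def c_def .
    then show ?thesis unfolding mn_def using fB by (subst Min_ge_iff) auto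
  qed
  have "L \<ge> \<epsilon>"
  proof (rule LIMSEQ_le_const[OF cL[OF s]])
    show "\<exists>N'. \<forall>m\<ge>N'. \<epsilon> \<le> c m s"
    proof (intro exI allI impI)
      fix m assume "N \<le> m"
      then have "mn N \<le> mn m" using mn_mono[where k="m - N" and m=N] by simp
      then show "\<epsilon> \<le> c m s" using mnN c_ge[OF s, of m] by simp
    qed
  qed
  then have Lpos: "L > 0" using eps_pos by simp
  have "(\<lambda>m. mpow B A m r s / \<rho> ^ m) \<longlonglongrightarrow> L * v r / v s" if "r \<in> B" for r
  proof -
    have "v s \<noteq> 0" using vpos s by (auto simp: less_imp_neq[symmetric])
    then have "(\<lambda>m. c m r * v r / v s) \<longlonglongrightarrow> L * v r / v s" using cL[OF that] by (intro tendsto_intros)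
    moreover have "c m r * v r / v s = mpow B A m r s / \<rho> ^ m" for m
    proof -
      have "v s \<noteq> 0" "v r \<noteq> 0" using vpos s that by (auto simp: less_imp_neq[symmetric])
      then show ?thesis unfolding c_def using \<rho> by (simp add: field_simps)
    qed
    ultimately show ?thesis by simp
  qed
  then show ?thesis using Lpos by blast
qed

context
  fixes d :: nat and R :: "nat \<Rightarrow> real" and Q :: "nat \<Rightarrow> nat \<Rightarrow> real" and L :: "nat set"
begin

fun Fv :: "nat \<Rightarrow> nat \<Rightarrow> real" where
  "Fv 0 r = 1"
| "Fv (Suc n) r = (\<Sum>s\<in>{1..d}. Q r s * Fv n s)"

fun Gv :: "nat \<Rightarrow> nat \<Rightarrow> real" where
  "Gv 0 r = (if r \<in> L then 1 else 0)"
| "Gv (Suc n) r = (\<Sum>s\<in>{1..d}. Q r s * Gv n s) + (if r \<in> L then Fv (Suc n) r else 0)"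

definition Wp :: "nat list \<Rightarrow> real" where
  "Wp xs = (\<Prod>i<length xs - 1. Pmat R Q (xs ! i) (xs ! Suc i))"

definition cnt :: "nat \<Rightarrow> nat list \<Rightarrow> nat" where
  "cnt n xs = card {m. m \<le> n \<and> xs ! m \<in> L}"

lemma surv_0: "surv_paths d 0 = (\<lambda>r. [r]) ` {1..d}"
proof (rule set_eqI)
  fix xs
  show "xs \<in> surv_paths d 0 \<longleftrightarrow> xs \<in> (\<lambda>r. [r]) ` {1..d}"
  proof
    assume "xs \<in> surv_paths d 0"
    then obtain r where "xs = [r]" "r \<le> d" "r \<noteq> 0"
      unfolding surv_paths_def by (cases xs) auto
    then show "xs \<in> (\<lambda>r. [r]) ` {1..d}" by auto
  next
    assume "xs \<in> (\<lambda>r. [r]) ` {1..d}"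
    then show "xs \<in> surv_paths d 0" unfolding surv_paths_def by auto
  qed
qed

lemma surv_Suc: "surv_paths d (Suc n) = (\<lambda>(r, ys). r # ys) ` ({1..d} \<times> surv_paths d n)"
proof (rule set_eqI)
  fix xs
  show "xs \<in> surv_paths d (Suc n) \<longleftrightarrow> xs \<in> (\<lambda>(r, ys). r # ys) ` ({1..d} \<times> surv_paths d n)"
  proof
    assume A: "xs \<in> surv_paths d (Suc n)"
    then obtain r ys where xs: "xs = r # ys" unfolding surv_paths_def by (cases xs) auto
    have "r \<in> {1..d}" using A xs unfolding surv_paths_def by (auto dest: spec[of _ 0])
    moreover have "ys \<in> surv_paths d n"
      using A xs unfolding surv_paths_def by (auto dest: spec[of _ "Suc _"])
    ultimately show "xs \<in> (\<lambda>(r, ys). r # ys) ` ({1..d} \<times> surv_paths d n)" using xs by auto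
  next
    assume "xs \<in> (\<lambda>(r, ys). r # ys) ` ({1..d} \<times> surv_paths d n)"
    then obtain r ys where xs: "xs = r # ys" "r \<in> {1..d}" "ys \<in> surv_paths d n" by auto
    show "xs \<in> surv_paths d (Suc n)"
      unfolding surv_paths_def
    proof (intro CollectI conjI allI impI)
      show "length xs = Suc (Suc n)" using xs unfolding surv_paths_def by simp
      show "set xs \<subseteq> {0..d}" using xs unfolding surv_paths_def by auto
      fix m assume "m \<le> Suc n"
      then show "xs ! m \<noteq> 0" using xs unfolding surv_paths_def by (cases m) auto
    qed
  qed
qed

lemma surv_ne: "xs \<in> surv_paths d n \<Longrightarrow> xs \<noteq> [] \<and> hd xs \<in> {1..d}"
  unfolding surv_paths_def by (cases xs) (auto dest: spec[of _ 0])

lemma finite_surv: "finite (surv_paths d n)"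
  by (induction n) (simp_all add: surv_0 surv_Suc)

lemma Wp_Cons: "ys \<noteq> [] \<Longrightarrow> r \<noteq> 0 \<Longrightarrow> hd ys \<noteq> 0 \<Longrightarrow> Wp (r # ys) = Q r (hd ys) * Wp ys"
proof -
  assume ys: "ys \<noteq> []" and r: "r \<noteq> 0" and h: "hd ys \<noteq> 0"
  have "Wp (r # ys) = (\<Prod>i<Suc (length ys - 1). Pmat R Q ((r # ys) ! i) ((r # ys) ! Suc i))"
    unfolding Wp_def using ys by simp
  also have "\<dots> = Pmat R Q r (ys ! 0) * (\<Prod>i<length ys - 1. Pmat R Q (ys ! i) (ys ! Suc i))"
    by (subst prod.lessThan_Suc_shift) simp
  also have "\<dots> = Q r (hd ys) * Wp ys"
    unfolding Wp_def using ys r h by (simp add: Pmat_def hd_conv_nth)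
  finally show ?thesis .
qed

lemma cnt_Cons: "cnt (Suc n) (r # ys) = (if r \<in> L then 1 else 0) + cnt n ys"
proof -
  have "{m. m \<le> Suc n \<and> (r # ys) ! m \<in> L} = (if r \<in> L then {0} else {}) \<union> Suc ` {m. m \<le> n \<and> ys ! m \<in> L}"
  proof (rule set_eqI)
    fix m show "m \<in> {m. m \<le> Suc n \<and> (r # ys) ! m \<in> L} \<longleftrightarrow> m \<in> (if r \<in> L then {0} else {}) \<union> Suc ` {m. m \<le> n \<and> ys ! m \<in> L}"
      by (cases m) auto
  qed
  then show ?thesis unfolding cnt_def by (simp add: card_image)
qed

lemma surv_sum_F:
  "(\<Sum>xs\<in>surv_paths d n. c (hd xs) * Wp xs) = (\<Sum>r\<in>{1..d}. c r * Fv n r)"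
proof (induction n arbitrary: c)
  case 0
  show ?case by (simp add: surv_0 sum.reindex inj_on_def Wp_def)
next
  case (Suc n)
  have inj: "inj_on (\<lambda>(r, ys). r # ys) ({1..d} \<times> surv_paths d n)" by (auto simp: inj_on_def)
  have "(\<Sum>xs\<in>surv_paths d (Suc n). c (hd xs) * Wp xs) = (\<Sum>(r, ys)\<in>{1..d} \<times> surv_paths d n. c r * Wp (r # ys))"
    unfolding surv_Suc sum.reindex[OF inj] by (simp add: case_prod_beta)
  also have "\<dots> = (\<Sum>r\<in>{1..d}. \<Sum>ys\<in>surv_paths d n. c r * (Q r (hd ys) * Wp ys))"
    unfolding sum.cartesian_product[symmetric]
    by (intro sum.cong refl, subst Wp_Cons) (auto dest: surv_ne)
  also have "\<dots> = (\<Sum>ys\<in>surv_paths d n. (\<Sum>r\<in>{1..d}. c r * Q r (hd ys)) * Wp ys)"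
    by (subst sum.swap) (simp add: sum_distrib_right mult.assoc)
  also have "\<dots> = (\<Sum>s\<in>{1..d}. (\<Sum>r\<in>{1..d}. c r * Q r s) * Fv n s)" by (rule Suc.IH)
  also have "\<dots> = (\<Sum>r\<in>{1..d}. c r * Fv (Suc n) r)"
    by (simp add: sum_distrib_right sum_distrib_left mult.assoc) (rule sum.swap)
  finally show ?case .
qed

lemma surv_sum_G:
  "(\<Sum>xs\<in>surv_paths d n. c (hd xs) * Wp xs * real (cnt n xs)) = (\<Sum>r\<in>{1..d}. c r * Gv n r)"
proof (induction n arbitrary: c)
  case 0
  have "cnt 0 [r] = (if r \<in> L then 1 else 0)" for r
  proof -
    have "{m. m \<le> 0 \<and> [r] ! m \<in> L} = (if r \<in> L then {0} else {})" by auto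
    then show ?thesis unfolding cnt_def by simp
  qed
  then show ?case by (simp add: surv_0 sum.reindex inj_on_def Wp_def of_bool_def[symmetric])
next
  case (Suc n)
  have inj: "inj_on (\<lambda>(r, ys). r # ys) ({1..d} \<times> surv_paths d n)" by (auto simp: inj_on_def)
  have "(\<Sum>xs\<in>surv_paths d (Suc n). c (hd xs) * Wp xs * real (cnt (Suc n) xs))
      = (\<Sum>(r, ys)\<in>{1..d} \<times> surv_paths d n. c r * Wp (r # ys) * real (cnt (Suc n) (r # ys)))"
    unfolding surv_Suc sum.reindex[OF inj] by (simp add: case_prod_beta)
  also have "\<dots> = (\<Sum>r\<in>{1..d}. \<Sum>ys\<in>surv_paths d n.
        (if r \<in> L then c r else 0) * Q r (hd ys) * Wp ys + c r * Q r (hd ys) * Wp ys * real (cnt n ys))"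
    unfolding sum.cartesian_product[symmetric]
    by (intro sum.cong refl, subst Wp_Cons) (auto dest: surv_ne simp: cnt_Cons algebra_simps)
  also have "\<dots> = (\<Sum>r\<in>{1..d}. (if r \<in> L then c r else 0) * (\<Sum>ys\<in>surv_paths d n. Q r (hd ys) * Wp ys))
       + (\<Sum>ys\<in>surv_paths d n. (\<Sum>r\<in>{1..d}. c r * Q r (hd ys)) * Wp ys * real (cnt n ys))"
    by (simp add: sum.distrib sum_distrib_left sum_distrib_right mult.assoc) (subst sum.swap, simp add: mult.assoc)
  also have "\<dots> = (\<Sum>r\<in>{1..d}. (if r \<in> L then c r else 0) * Fv (Suc n) r)
       + (\<Sum>s\<in>{1..d}. (\<Sum>r\<in>{1..d}. c r * Q r s) * Gv n s)"
    using surv_sum_F Suc.IH by simp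
  also have "\<dots> = (\<Sum>r\<in>{1..d}. c r * Gv (Suc n) r)"
  proof -
    have sw: "(\<Sum>s\<in>{1..d}. (\<Sum>r\<in>{1..d}. c r * Q r s) * Gv n s) = (\<Sum>r\<in>{1..d}. c r * (\<Sum>s\<in>{1..d}. Q r s * Gv n s))"
      by (simp add: sum_distrib_left sum_distrib_right mult.assoc) (rule sum.swap)
    have fs: "(\<Sum>r\<in>{1..d}. (if r \<in> L then c r else 0) * Fv (Suc n) r) = (\<Sum>r\<in>{1..d}. c r * (if r \<in> L then Fv (Suc n) r else 0))"
      by (intro sum.cong) auto
    show ?thesis unfolding sw fs by (simp only: Gv.simps(2) distrib_left sum.distrib add.commute)
  qed
  finally show ?case .
qed

lemma cond_occ_eq:
  "cond_occupation d \<pi> R Q L n = ((\<Sum>r\<in>{1..d}. \<pi> r * Gv n r) / (real n + 1)) / (\<Sum>r\<in>{1..d}. \<pi> r * Fv n r)"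
proof -
  have pp: "path_prob \<pi> (Pmat R Q) xs = \<pi> (hd xs) * Wp xs" for xs
    unfolding path_prob_def Wp_def by simp
  have "(\<Sum>xs\<in>surv_paths d n. path_prob \<pi> (Pmat R Q) xs * (real (card {m. m \<le> n \<and> xs ! m \<in> L}) / real (Suc n)))
      = (\<Sum>xs\<in>surv_paths d n. \<pi> (hd xs) * Wp xs * real (cnt n xs)) / (real n + 1)"
    unfolding pp cnt_def by (simp add: sum_divide_distrib add.commute)
  then show ?thesis unfolding cond_occupation_def pp surv_sum_F surv_sum_G by simp
qed

end

definition Ssum :: "(nat \<Rightarrow> nat) \<Rightarrow> nat \<Rightarrow> nat" where
  "Ssum ds j = (\<Sum>i\<in>{1..j}. ds i)"

lemma Ssum_Suc: "Ssum ds (Suc j) = Ssum ds j + ds (Suc j)"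
  unfolding Ssum_def by simp

lemma Ssum_mono: "i \<le> j \<Longrightarrow> Ssum ds i \<le> Ssum ds j"
  unfolding Ssum_def by (intro sum_mono2) auto

lemma blk_eq: "j \<ge> 1 \<Longrightarrow> blk ds j = {Ssum ds (j - 1) + 1 .. Ssum ds j}"
proof -
  assume "j \<ge> 1"
  then have "{1..<j} = {1..j - 1}" by auto
  then show ?thesis unfolding blk_def Ssum_def by simp
qed

locale blk_setting =
  fixes d k :: nat and ds :: "nat \<Rightarrow> nat" and Q :: "nat \<Rightarrow> nat \<Rightarrow> real"
    and \<rho> :: "nat \<Rightarrow> real" and v :: "nat \<Rightarrow> nat \<Rightarrow> real" and l :: nat
  assumes blocks_d: "d = (\<Sum>i\<in>{1..k}. ds i)" and blocks_pos: "\<forall>i\<in>{1..k}. ds i > 0"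
    and Q_nonneg: "\<forall>i\<in>{1..d}. \<forall>j\<in>{1..d}. Q i j \<ge> 0"
    and lower: "\<forall>i\<in>{1..k}. \<forall>j\<in>{1..k}. j > i \<longrightarrow> (\<forall>r\<in>blk ds i. \<forall>s\<in>blk ds j. Q r s = 0)"
    and evpos: "\<forall>i\<in>{1..k}. eventually_positive (blk ds i) Q"
    and v_pos: "\<forall>i\<in>{1..k}. \<forall>r\<in>blk ds i. v i r > 0"
    and v_eig: "\<forall>i\<in>{1..k}. \<forall>r\<in>blk ds i. mvec (blk ds i) Q (v i) r = \<rho> i * v i r"
begin

abbreviation B :: "nat \<Rightarrow> nat set" where "B i \<equiv> blk ds i"

lemma d_eq: "d = Ssum ds k" using blocks_d unfolding Ssum_def by simp

lemma B_finite: "finite (B i)" unfolding blk_def by simp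

lemma B_sub: "i \<in> {1..k} \<Longrightarrow> B i \<subseteq> {1..d}"
  using blk_eq[of i ds] Ssum_mono[of i k ds] d_eq by auto

lemma B_ne: "i \<in> {1..k} \<Longrightarrow> B i \<noteq> {}"
proof -
  assume i: "i \<in> {1..k}"
  then obtain j where j: "i = Suc j" by (cases i) auto
  have "ds i > 0" using blocks_pos i by blast
  then have "Ssum ds (i - 1) + 1 \<le> Ssum ds i" using j Ssum_Suc[of ds j] by simp
  then show ?thesis using blk_eq[of i ds] i by auto
qed

lemma B_disj: "i \<in> {1..k} \<Longrightarrow> j \<in> {1..k} \<Longrightarrow> i \<noteq> j \<Longrightarrow> B i \<inter> B j = {}"
proof -
  have aux: "B i \<inter> B j = {}" if "i \<in> {1..k}" "j \<in> {1..k}" "i < j" for i j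
  proof -
    have "Ssum ds i \<le> Ssum ds (j - 1)" using that by (intro Ssum_mono) auto
    then show ?thesis using blk_eq[of i ds] blk_eq[of j ds] that by auto
  qed
  assume "i \<in> {1..k}" "j \<in> {1..k}" "i \<noteq> j"
  then show ?thesis using aux[of i j] aux[of j i] by (cases "i < j") auto
qed

lemma B_cover: "r \<in> {1..d} \<Longrightarrow> \<exists>i\<in>{1..k}. r \<in> B i"
proof -
  assume r: "r \<in> {1..d}"
  define i where "i = (LEAST i. r \<le> Ssum ds i)"
  have ex: "r \<le> Ssum ds k" using r d_eq by simp
  then have ri: "r \<le> Ssum ds i" unfolding i_def by (rule LeastI)
  have ik: "i \<le> k" unfolding i_def using ex by (rule Least_le)
  have i0: "i \<noteq> 0"
  proof
    assume "i = 0"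
    then show False using ri r by (simp add: Ssum_def)
  qed
  have "\<not> r \<le> Ssum ds (i - 1)" unfolding i_def
    using i0 not_less_Least[of "i - 1" "\<lambda>i. r \<le> Ssum ds i"] unfolding i_def[symmetric] by simp
  then have "r \<in> B i" using blk_eq[of i ds] i0 ri by auto
  then show ?thesis using i0 ik by auto
qed

lemma UN_B: "{1..d} = (\<Union>i\<in>{1..k}. B i)"
  using B_cover B_sub by blast

lemma Q_nonneg_B: "i \<in> {1..k} \<Longrightarrow> j \<in> {1..k} \<Longrightarrow> r \<in> B i \<Longrightarrow> s \<in> B j \<Longrightarrow> Q r s \<ge> 0"
  using Q_nonneg B_sub by blast

lemma row_split:
  assumes i: "i \<in> {1..k}" and r: "r \<in> B i"
  shows "(\<Sum>s\<in>{1..d}. Q r s * x s) = (\<Sum>s\<in>B i. Q r s * x s) + (\<Sum>j\<in>{1..<i}. \<Sum>s\<in>B j. Q r s * x s)"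
proof -
  have "(\<Sum>s\<in>{1..d}. Q r s * x s) = (\<Sum>j\<in>{1..k}. \<Sum>s\<in>B j. Q r s * x s)"
    unfolding UN_B
  proof (rule sum.UNION_disjoint)
    show "\<forall>i\<in>{1..k}. \<forall>j\<in>{1..k}. i \<noteq> j \<longrightarrow> B i \<inter> B j = {}" using B_disj by blast
  qed (auto simp: B_finite)
  also have "\<dots> = (\<Sum>j\<in>{1..i}. \<Sum>s\<in>B j. Q r s * x s)"
  proof (rule sum.mono_neutral_right)
    show "\<forall>j\<in>{1..k} - {1..i}. (\<Sum>s\<in>B j. Q r s * x s) = 0"
    proof
      fix j assume j: "j \<in> {1..k} - {1..i}"
      then have "j \<in> {1..k}" "i < j" by auto
      then have "\<forall>s\<in>B j. Q r s = 0" using lower i r by blast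
      then show "(\<Sum>s\<in>B j. Q r s * x s) = 0" by simp
    qed
  qed (use i in auto)
  also have "\<dots> = (\<Sum>s\<in>B i. Q r s * x s) + (\<Sum>j\<in>{1..<i}. \<Sum>s\<in>B j. Q r s * x s)"
  proof -
    have "{1..i} = insert i {1..<i}" using i by auto
    then show ?thesis by simp
  qed
  finally show ?thesis .
qed

definition copw :: "(nat \<Rightarrow> real) \<Rightarrow> nat \<Rightarrow> nat \<Rightarrow> (nat \<Rightarrow> nat \<Rightarrow> real) \<Rightarrow> nat \<Rightarrow> nat \<Rightarrow> real" where
  "copw h b c g n r = (\<Sum>m<n. \<Sum>s\<in>B b. \<Sum>t\<in>B c. h m * mpow (B b) Q m r s * Q s t * g (n - 1 - m) t)"

fun Yv :: "nat list \<Rightarrow> nat \<Rightarrow> nat \<Rightarrow> real" where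
  "Yv [] n r = 0"
| "Yv [b] n r = (\<Sum>s\<in>B b. mpow (B b) Q n r s)"
| "Yv (b # c # \<sigma>) n r = copw (\<lambda>_. 1) b c (Yv (c # \<sigma>)) n r"

fun Zv :: "nat list \<Rightarrow> nat \<Rightarrow> nat \<Rightarrow> real" where
  "Zv [] n r = 0"
| "Zv [b] n r = (if b = l then (real n + 1) * Yv [b] n r else 0)"
| "Zv (b # c # \<sigma>) n r = copw (\<lambda>_. 1) b c (Zv (c # \<sigma>)) n r
      + (if b = l then copw (\<lambda>m. real m + 1) b c (Yv (c # \<sigma>)) n r else 0)"

lemma copw_0 [simp]: "copw h b c g 0 r = 0"
  unfolding copw_def by simp

lemma copw_step:
  assumes r: "r \<in> B b"
  shows "copw h b c g (Suc n) r = h 0 * (\<Sum>t\<in>B c. Q r t * g n t) + (\<Sum>x\<in>B b. Q r x * copw (\<lambda>m. h (Suc m)) b c g n x)"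
proof -
  define T where "T m = (\<Sum>s\<in>B b. \<Sum>t\<in>B c. h m * mpow (B b) Q m r s * Q s t * g (Suc n - 1 - m) t)" for m
  have "copw h b c g (Suc n) r = T 0 + (\<Sum>m<n. T (Suc m))"
    unfolding copw_def T_def by (rule sum.lessThan_Suc_shift)
  also have "T 0 = h 0 * (\<Sum>t\<in>B c. Q r t * g n t)"
  proof -
    have "T 0 = (\<Sum>s\<in>B b. if s = r then (\<Sum>t\<in>B c. h 0 * Q r t * g n t) else 0)"
      unfolding T_def by (intro sum.cong refl) auto
    also have "\<dots> = (\<Sum>t\<in>B c. h 0 * Q r t * g n t)" using r B_finite by (simp add: sum.delta')
    finally show ?thesis by (simp add: sum_distrib_left mult.assoc)
  qed
  also have "(\<Sum>m<n. T (Suc m)) = (\<Sum>x\<in>B b. Q r x * copw (\<lambda>m. h (Suc m)) b c g n x)"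
  proof -
    have "T (Suc m) = (\<Sum>x\<in>B b. Q r x * (\<Sum>s\<in>B b. \<Sum>t\<in>B c. h (Suc m) * mpow (B b) Q m x s * Q s t * g (n - 1 - m) t))" for m
    proof -
      have "T (Suc m) = (\<Sum>s\<in>B b. \<Sum>t\<in>B c. \<Sum>x\<in>B b. Q r x * (h (Suc m) * mpow (B b) Q m x s * Q s t * g (n - 1 - m) t))"
        unfolding T_def by (simp add: mmul_def sum_distrib_left sum_distrib_right algebra_simps)
      also have "\<dots> = (\<Sum>x\<in>B b. \<Sum>s\<in>B b. \<Sum>t\<in>B c. Q r x * (h (Suc m) * mpow (B b) Q m x s * Q s t * g (n - 1 - m) t))"
        by (subst sum.swap, subst (2) sum.swap) (rule refl)
      finally show ?thesis by (simp add: sum_distrib_left)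
    qed
    then have "(\<Sum>m<n. T (Suc m)) = (\<Sum>m<n. \<Sum>x\<in>B b. Q r x * (\<Sum>s\<in>B b. \<Sum>t\<in>B c. h (Suc m) * mpow (B b) Q m x s * Q s t * g (n - 1 - m) t))"
      by simp
    also have "\<dots> = (\<Sum>x\<in>B b. Q r x * copw (\<lambda>m. h (Suc m)) b c g n x)"
      unfolding copw_def by (subst sum.swap) (simp add: sum_distrib_left)
    finally show ?thesis .
  qed
  finally show ?thesis .
qed

lemma copw_add: "copw (\<lambda>m. h1 m + h2 m) b c g n r = copw h1 b c g n r + copw h2 b c g n r"
  unfolding copw_def by (simp add: algebra_simps sum.distrib)


lemma Yv_single_step:
  assumes "r \<in> B b"
  shows "Yv [b] (Suc n) r = (\<Sum>x\<in>B b. Q r x * Yv [b] n x)"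
proof -
  have "Yv [b] (Suc n) r = (\<Sum>s\<in>B b. \<Sum>x\<in>B b. Q r x * mpow (B b) Q n x s)"
    by (simp add: mmul_def)
  also have "\<dots> = (\<Sum>x\<in>B b. Q r x * Yv [b] n x)"
    by (subst sum.swap) (simp add: sum_distrib_left)
  finally show ?thesis .
qed

lemma Yv_cons_step:
  assumes "r \<in> B b"
  shows "Yv (b # c # \<sigma>) (Suc n) r = (\<Sum>t\<in>B c. Q r t * Yv (c # \<sigma>) n t) + (\<Sum>x\<in>B b. Q r x * Yv (b # c # \<sigma>) n x)"
  using copw_step[OF assms, of "\<lambda>_. 1" c "Yv (c # \<sigma>)" n] by simp

lemma Zv_single_step:
  assumes "r \<in> B b"
  shows "Zv [b] (Suc n) r = (\<Sum>x\<in>B b. Q r x * Zv [b] n x) + (if b = l then Yv [b] (Suc n) r else 0)"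
proof (cases "b = l")
  case True
  have "Zv [b] (Suc n) r = (real n + 1) * Yv [b] (Suc n) r + Yv [b] (Suc n) r" using True by (simp add: algebra_simps)
  also have "(real n + 1) * Yv [b] (Suc n) r = (\<Sum>x\<in>B b. Q r x * Zv [b] n x)"
    using True Yv_single_step[OF assms, of n] by (simp add: sum_distrib_left algebra_simps del: Yv.simps)
  finally show ?thesis using True by simp
next
  case False then show ?thesis by simp
qed

lemma Zv_cons_step:
  assumes "r \<in> B b"
  shows "Zv (b # c # \<sigma>) (Suc n) r = (\<Sum>t\<in>B c. Q r t * Zv (c # \<sigma>) n t) + (\<Sum>x\<in>B b. Q r x * Zv (b # c # \<sigma>) n x)
     + (if b = l then Yv (b # c # \<sigma>) (Suc n) r else 0)"
proof -
  have z: "copw (\<lambda>_. 1) b c (Zv (c # \<sigma>)) (Suc n) r = (\<Sum>t\<in>B c. Q r t * Zv (c # \<sigma>) n t) + (\<Sum>x\<in>B b. Q r x * copw (\<lambda>_. 1) b c (Zv (c # \<sigma>)) n x)"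
    using copw_step[OF assms, of "\<lambda>_. 1" c "Zv (c # \<sigma>)" n] by simp
  have y1: "copw (\<lambda>m. real m + 1) b c (Yv (c # \<sigma>)) (Suc n) r = (\<Sum>t\<in>B c. Q r t * Yv (c # \<sigma>) n t)
      + (\<Sum>x\<in>B b. Q r x * (copw (\<lambda>m. real m + 1) b c (Yv (c # \<sigma>)) n x + copw (\<lambda>_. 1) b c (Yv (c # \<sigma>)) n x))"
  proof -
    have e: "(\<lambda>m. real (Suc m) + 1) = (\<lambda>m. (real m + 1) + 1)" by auto
    show ?thesis using copw_step[OF assms, of "\<lambda>m. real m + 1" c "Yv (c # \<sigma>)" n]
      unfolding e copw_add by simp
  qed
  show ?thesis
  proof (cases "b = l")
    case True
    have "Zv (b # c # \<sigma>) (Suc n) r = copw (\<lambda>_. 1) b c (Zv (c # \<sigma>)) (Suc n) r + copw (\<lambda>m. real m + 1) b c (Yv (c # \<sigma>)) (Suc n) r"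
      using True by simp
    also have "\<dots> = (\<Sum>t\<in>B c. Q r t * Zv (c # \<sigma>) n t) + (\<Sum>x\<in>B b. Q r x * Zv (b # c # \<sigma>) n x)
       + ((\<Sum>t\<in>B c. Q r t * Yv (c # \<sigma>) n t) + (\<Sum>x\<in>B b. Q r x * Yv (b # c # \<sigma>) n x))"
      unfolding z y1 using True by (simp add: sum.distrib distrib_left algebra_simps)
    also have "(\<Sum>t\<in>B c. Q r t * Yv (c # \<sigma>) n t) + (\<Sum>x\<in>B b. Q r x * Yv (b # c # \<sigma>) n x) = Yv (b # c # \<sigma>) (Suc n) r"
      using Yv_cons_step[OF assms] by simp
    finally show ?thesis using True by simp
  next
    case False
    then show ?thesis using z by simp
  qed
qed

definition DL :: "nat \<Rightarrow> nat list set" where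
  "DL i = {\<sigma>. \<sigma> \<noteq> [] \<and> hd \<sigma> = i \<and> sorted_wrt (>) \<sigma> \<and> set \<sigma> \<subseteq> {1..k}}"

lemma DL_finite: "finite (DL i)"
proof -
  have "DL i \<subseteq> {xs. set xs \<subseteq> {1..k} \<and> length xs \<le> k}"
  proof
    fix \<sigma> assume "\<sigma> \<in> DL i"
    then have s: "sorted_wrt (>) \<sigma>" "set \<sigma> \<subseteq> {1..k}" unfolding DL_def by auto
    have "distinct \<sigma>" using s(1) by (induction \<sigma>) auto
    then have "length \<sigma> = card (set \<sigma>)" by (simp add: distinct_card)
    also have "\<dots> \<le> card {1..k}" using s(2) by (intro card_mono) auto
    finally show "\<sigma> \<in> {xs. set xs \<subseteq> {1..k} \<and> length xs \<le> k}" using s(2) by simp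
  qed
  moreover have "finite {xs. set xs \<subseteq> {1..k} \<and> length xs \<le> k}"
    by (rule finite_lists_length_le) simp
  ultimately show ?thesis by (rule finite_subset)
qed

lemma DL_split:
  assumes i: "i \<in> {1..k}"
  shows "DL i = insert [i] (\<Union>j\<in>{1..<i}. (\<lambda>\<sigma>. i # \<sigma>) ` DL j)"
proof (rule set_eqI)
  fix \<sigma>
  show "\<sigma> \<in> DL i \<longleftrightarrow> \<sigma> \<in> insert [i] (\<Union>j\<in>{1..<i}. (\<lambda>\<sigma>. i # \<sigma>) ` DL j)"
  proof
    assume A: "\<sigma> \<in> DL i"
    then obtain \<tau> where \<sigma>: "\<sigma> = i # \<tau>" unfolding DL_def by (cases \<sigma>) auto
    show "\<sigma> \<in> insert [i] (\<Union>j\<in>{1..<i}. (\<lambda>\<sigma>. i # \<sigma>) ` DL j)"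
    proof (cases \<tau>)
      case Nil then show ?thesis using \<sigma> by simp
    next
      case (Cons j \<tau>')
      have "j \<in> {1..<i}" using A \<sigma> Cons unfolding DL_def by auto
      moreover have "\<tau> \<in> DL j" using A \<sigma> Cons unfolding DL_def by auto
      ultimately show ?thesis using \<sigma> by auto
    qed
  next
    assume "\<sigma> \<in> insert [i] (\<Union>j\<in>{1..<i}. (\<lambda>\<sigma>. i # \<sigma>) ` DL j)"
    then show "\<sigma> \<in> DL i"
    proof
      assume "\<sigma> = [i]" then show ?thesis using i unfolding DL_def by auto
    next
      assume "\<sigma> \<in> (\<Union>j\<in>{1..<i}. (\<lambda>\<sigma>. i # \<sigma>) ` DL j)"
      then obtain j \<tau> where j: "j \<in> {1..<i}" "\<tau> \<in> DL j" "\<sigma> = i # \<tau>" by auto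
      then obtain \<tau>' where \<tau>: "\<tau> = j # \<tau>'" unfolding DL_def by (cases \<tau>) auto
      have "\<forall>x\<in>set \<tau>. x < i"
      proof
        fix x assume "x \<in> set \<tau>"
        then have "x = j \<or> x \<in> set \<tau>'" using \<tau> by auto
        moreover have "\<forall>y\<in>set \<tau>'. y < j" using j(2) \<tau> unfolding DL_def by auto
        ultimately show "x < i" using j(1) by auto
      qed
      then show ?thesis using j i unfolding DL_def by auto
    qed
  qed
qed

lemma sum_DL:
  assumes i: "i \<in> {1..k}"
  shows "(\<Sum>\<sigma>\<in>DL i. f \<sigma>) = f [i] + (\<Sum>j\<in>{1..<i}. \<Sum>\<sigma>\<in>DL j. f (i # \<sigma>))"
proof -
  have nin: "[i] \<notin> (\<Union>j\<in>{1..<i}. (\<lambda>\<sigma>. i # \<sigma>) ` DL j)" unfolding DL_def by auto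
  have fin: "finite (\<Union>j\<in>{1..<i}. (\<lambda>\<sigma>. i # \<sigma>) ` DL j)" using DL_finite by auto
  have "(\<Sum>\<sigma>\<in>DL i. f \<sigma>) = f [i] + (\<Sum>\<sigma>\<in>(\<Union>j\<in>{1..<i}. (\<lambda>\<sigma>. i # \<sigma>) ` DL j). f \<sigma>)"
    unfolding DL_split[OF i] using nin fin by simp
  also have "(\<Sum>\<sigma>\<in>(\<Union>j\<in>{1..<i}. (\<lambda>\<sigma>. i # \<sigma>) ` DL j). f \<sigma>) = (\<Sum>j\<in>{1..<i}. \<Sum>\<sigma>\<in>(\<lambda>\<sigma>. i # \<sigma>) ` DL j. f \<sigma>)"
  proof (rule sum.UNION_disjoint)
    show "\<forall>a\<in>{1..<i}. \<forall>b\<in>{1..<i}. a \<noteq> b \<longrightarrow> (\<lambda>\<sigma>. i # \<sigma>) ` DL a \<inter> (\<lambda>\<sigma>. i # \<sigma>) ` DL b = {}"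
      unfolding DL_def by auto
  qed (auto simp: DL_finite)
  also have "\<dots> = (\<Sum>j\<in>{1..<i}. \<Sum>\<sigma>\<in>DL j. f (i # \<sigma>))"
    by (rule sum.cong[OF refl]) (subst sum.reindex, auto simp: inj_on_def)
  finally show ?thesis .
qed

lemma DL_cons: "\<sigma> \<in> DL j \<Longrightarrow> \<exists>\<tau>. \<sigma> = j # \<tau>"
  unfolding DL_def by (cases \<sigma>) auto


lemma decomp_step:
  fixes X :: "nat list \<Rightarrow> nat \<Rightarrow> nat \<Rightarrow> real" and E :: "nat list \<Rightarrow> real"
  assumes i: "i \<in> {1..k}" and r: "r \<in> B i"
    and X1: "X [i] (Suc n) r = (\<Sum>x\<in>B i. Q r x * X [i] n x) + E [i]"
    and X2: "\<And>j \<tau>. j \<in> {1..<i} \<Longrightarrow> X (i # j # \<tau>) (Suc n) r =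
        (\<Sum>t\<in>B j. Q r t * X (j # \<tau>) n t) + (\<Sum>x\<in>B i. Q r x * X (i # j # \<tau>) n x) + E (i # j # \<tau>)"
  shows "(\<Sum>\<sigma>\<in>DL i. X \<sigma> (Suc n) r) = (\<Sum>x\<in>B i. Q r x * (\<Sum>\<sigma>\<in>DL i. X \<sigma> n x))
      + (\<Sum>j\<in>{1..<i}. \<Sum>t\<in>B j. Q r t * (\<Sum>\<sigma>\<in>DL j. X \<sigma> n t)) + (\<Sum>\<sigma>\<in>DL i. E \<sigma>)"
proof -
  have X2': "X (i # \<sigma>) (Suc n) r = (\<Sum>t\<in>B j. Q r t * X \<sigma> n t) + (\<Sum>x\<in>B i. Q r x * X (i # \<sigma>) n x) + E (i # \<sigma>)"
    if "j \<in> {1..<i}" "\<sigma> \<in> DL j" for j \<sigma>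
    using DL_cons[OF that(2)] X2[OF that(1)] by auto
  have "(\<Sum>\<sigma>\<in>DL i. X \<sigma> (Suc n) r) = X [i] (Suc n) r + (\<Sum>j\<in>{1..<i}. \<Sum>\<sigma>\<in>DL j. X (i # \<sigma>) (Suc n) r)"
    by (rule sum_DL[OF i])
  also have "\<dots> = ((\<Sum>x\<in>B i. Q r x * X [i] n x) + (\<Sum>j\<in>{1..<i}. \<Sum>\<sigma>\<in>DL j. \<Sum>x\<in>B i. Q r x * X (i # \<sigma>) n x))
      + (\<Sum>j\<in>{1..<i}. \<Sum>\<sigma>\<in>DL j. \<Sum>t\<in>B j. Q r t * X \<sigma> n t)
      + (E [i] + (\<Sum>j\<in>{1..<i}. \<Sum>\<sigma>\<in>DL j. E (i # \<sigma>)))"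
    unfolding X1 by (simp add: X2' sum.distrib)
  also have "(\<Sum>x\<in>B i. Q r x * X [i] n x) + (\<Sum>j\<in>{1..<i}. \<Sum>\<sigma>\<in>DL j. \<Sum>x\<in>B i. Q r x * X (i # \<sigma>) n x)
      = (\<Sum>x\<in>B i. Q r x * (\<Sum>\<sigma>\<in>DL i. X \<sigma> n x))"
  proof -
    have "(\<Sum>j\<in>{1..<i}. \<Sum>\<sigma>\<in>DL j. \<Sum>x\<in>B i. Q r x * X (i # \<sigma>) n x) = (\<Sum>x\<in>B i. Q r x * (\<Sum>j\<in>{1..<i}. \<Sum>\<sigma>\<in>DL j. X (i # \<sigma>) n x))"
      by (simp add: sum_distrib_left) (subst sum.swap, rule sum.cong[OF refl], subst sum.swap, rule refl)
    then show ?thesis by (simp add: sum_DL[OF i] distrib_left sum.distrib)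
  qed
  also have "(\<Sum>j\<in>{1..<i}. \<Sum>\<sigma>\<in>DL j. \<Sum>t\<in>B j. Q r t * X \<sigma> n t) = (\<Sum>j\<in>{1..<i}. \<Sum>t\<in>B j. Q r t * (\<Sum>\<sigma>\<in>DL j. X \<sigma> n t))"
    by (rule sum.cong[OF refl]) (simp add: sum_distrib_left, rule sum.swap)
  also have "E [i] + (\<Sum>j\<in>{1..<i}. \<Sum>\<sigma>\<in>DL j. E (i # \<sigma>)) = (\<Sum>\<sigma>\<in>DL i. E \<sigma>)"
    by (rule sum_DL[OF i, symmetric])
  finally show ?thesis .
qed

lemma Yv_zero: "Yv [b] 0 r = (if r \<in> B b then 1 else 0)"
  using B_finite by (simp add: sum.delta)

lemma F_decomp:
  assumes "i \<in> {1..k}" "r \<in> B i"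
  shows "Fv d Q n r = (\<Sum>\<sigma>\<in>DL i. Yv \<sigma> n r)"
  using assms
proof (induction n arbitrary: i r)
  case 0
  have "(\<Sum>\<sigma>\<in>DL i. Yv \<sigma> 0 r) = Yv [i] 0 r + (\<Sum>j\<in>{1..<i}. \<Sum>\<sigma>\<in>DL j. Yv (i # \<sigma>) 0 r)"
    by (rule sum_DL[OF 0(1)])
  also have "(\<Sum>j\<in>{1..<i}. \<Sum>\<sigma>\<in>DL j. Yv (i # \<sigma>) 0 r) = 0"
  proof (intro sum.neutral ballI)
    fix j \<sigma> assume "\<sigma> \<in> DL j"
    then obtain \<tau> where "\<sigma> = j # \<tau>" using DL_cons by blast
    then show "Yv (i # \<sigma>) 0 r = 0" by simp
  qed
  finally show ?case using 0 Yv_zero by simp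
next
  case (Suc n)
  have "Fv d Q (Suc n) r = (\<Sum>s\<in>B i. Q r s * Fv d Q n s) + (\<Sum>j\<in>{1..<i}. \<Sum>s\<in>B j. Q r s * Fv d Q n s)"
    using row_split[OF Suc.prems] by simp
  also have "\<dots> = (\<Sum>s\<in>B i. Q r s * (\<Sum>\<sigma>\<in>DL i. Yv \<sigma> n s)) + (\<Sum>j\<in>{1..<i}. \<Sum>s\<in>B j. Q r s * (\<Sum>\<sigma>\<in>DL j. Yv \<sigma> n s))"
    using Suc.IH Suc.prems(1) by (intro arg_cong2[where f="(+)"] sum.cong refl) auto
  also have "\<dots> = (\<Sum>\<sigma>\<in>DL i. Yv \<sigma> (Suc n) r)"
    using decomp_step[OF Suc.prems, of Yv n "\<lambda>_. 0"] Yv_single_step[OF Suc.prems(2), of n] Yv_cons_step[OF Suc.prems(2)]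
    by simp
  finally show ?case .
qed

lemma G_decomp:
  assumes "i \<in> {1..k}" "r \<in> B i" "l \<in> {1..k}"
  shows "Gv d Q (B l) n r = (\<Sum>\<sigma>\<in>DL i. Zv \<sigma> n r)"
  using assms(1,2)
proof (induction n arbitrary: i r)
  case 0
  have "(\<Sum>\<sigma>\<in>DL i. Zv \<sigma> 0 r) = Zv [i] 0 r + (\<Sum>j\<in>{1..<i}. \<Sum>\<sigma>\<in>DL j. Zv (i # \<sigma>) 0 r)"
    by (rule sum_DL[OF 0(1)])
  also have "(\<Sum>j\<in>{1..<i}. \<Sum>\<sigma>\<in>DL j. Zv (i # \<sigma>) 0 r) = 0"
  proof (intro sum.neutral ballI)
    fix j \<sigma> assume "\<sigma> \<in> DL j"
    then obtain \<tau> where "\<sigma> = j # \<tau>" using DL_cons by blast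
    then show "Zv (i # \<sigma>) 0 r = 0" by simp
  qed
  also have "Zv [i] 0 r = (if r \<in> B l then 1 else 0)"
  proof -
    have "r \<in> B l \<longleftrightarrow> i = l" using 0 assms(3) B_disj by blast
    then show ?thesis using 0 Yv_zero by simp
  qed
  finally show ?case by simp
next
  case (Suc n)
  have il: "r \<in> B l \<longleftrightarrow> i = l" using Suc.prems assms(3) B_disj by blast
  have "Gv d Q (B l) (Suc n) r = (\<Sum>s\<in>B i. Q r s * Gv d Q (B l) n s) + (\<Sum>j\<in>{1..<i}. \<Sum>s\<in>B j. Q r s * Gv d Q (B l) n s)
      + (if r \<in> B l then Fv d Q (Suc n) r else 0)"
    using row_split[OF Suc.prems] by (simp del: Fv.simps)
  also have "\<dots> = (\<Sum>s\<in>B i. Q r s * (\<Sum>\<sigma>\<in>DL i. Zv \<sigma> n s)) + (\<Sum>j\<in>{1..<i}. \<Sum>s\<in>B j. Q r s * (\<Sum>\<sigma>\<in>DL j. Zv \<sigma> n s))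
      + (\<Sum>\<sigma>\<in>DL i. if hd \<sigma> = l then Yv \<sigma> (Suc n) r else 0)"
  proof -
    have "(\<Sum>\<sigma>\<in>DL i. if hd \<sigma> = l then Yv \<sigma> (Suc n) r else 0) = (if r \<in> B l then Fv d Q (Suc n) r else 0)"
    proof -
      have "(\<Sum>\<sigma>\<in>DL i. if hd \<sigma> = l then Yv \<sigma> (Suc n) r else 0) = (\<Sum>\<sigma>\<in>DL i. if i = l then Yv \<sigma> (Suc n) r else 0)"
        by (intro sum.cong refl) (auto simp: DL_def)
      then show ?thesis using F_decomp[OF Suc.prems, of "Suc n"] il by (simp del: Fv.simps)
    qed
    moreover have "(\<Sum>s\<in>B i. Q r s * Gv d Q (B l) n s) + (\<Sum>j\<in>{1..<i}. \<Sum>s\<in>B j. Q r s * Gv d Q (B l) n s)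
      = (\<Sum>s\<in>B i. Q r s * (\<Sum>\<sigma>\<in>DL i. Zv \<sigma> n s)) + (\<Sum>j\<in>{1..<i}. \<Sum>s\<in>B j. Q r s * (\<Sum>\<sigma>\<in>DL j. Zv \<sigma> n s))"
      using Suc.IH Suc.prems(1) by (intro arg_cong2[where f="(+)"] sum.cong refl) auto
    ultimately show ?thesis by simp
  qed
  also have "\<dots> = (\<Sum>\<sigma>\<in>DL i. Zv \<sigma> (Suc n) r)"
    using decomp_step[OF Suc.prems, of Zv n "\<lambda>\<sigma>. if hd \<sigma> = l then Yv \<sigma> (Suc n) r else 0"]
      Zv_single_step[OF Suc.prems(2), of n] Zv_cons_step[OF Suc.prems(2)]
    by (simp del: Yv.simps Zv.simps)
  finally show ?case .
qed

end

lemma cls_pos_ex: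
  assumes "cls R e s L" "L > 0" "R > 0"
  shows "\<exists>n. s n > 0"
proof -
  have "eventually (\<lambda>n. s n / (NB e n * R ^ n) > 0) sequentially"
    using assms(1)[unfolded cls_def] assms(2) by (rule order_tendstoD)
  then obtain n where "s n / (NB e n * R ^ n) > 0" by (auto simp: eventually_sequentially)
  moreover have "NB e n * R ^ n > 0" using NB_pos[of e n] assms(3) by simp
  ultimately have "s n > 0" by (simp add: zero_less_divide_iff)
  then show ?thesis by blast
qed

definition wt :: "nat \<Rightarrow> nat \<Rightarrow> real" where "wt p m = (real m + 1) ^ p"

lemma wt_0: "wt 0 = (\<lambda>_. 1)" by (rule ext) (simp add: wt_def)
lemma wt_1: "wt 1 = (\<lambda>m. real m + 1)" by (rule ext) (simp add: wt_def)
lemma wt_pos: "wt p m > 0" unfolding wt_def by simp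

context blk_setting
begin

lemma rho_pos: "b \<in> {1..k} \<Longrightarrow> \<rho> b > 0"
  using pf_rho_pos[OF B_finite B_ne _ _ _ _, of b Q "v b" "\<rho> b"] Q_nonneg_B evpos v_pos v_eig by blast

definition Plim :: "nat \<Rightarrow> nat \<Rightarrow> nat \<Rightarrow> real" where
  "Plim b r s = lim (\<lambda>m. mpow (B b) Q m r s / \<rho> b ^ m)"

lemma Plim:
  assumes b: "b \<in> {1..k}" and r: "r \<in> B b" and s: "s \<in> B b"
  shows "Plim b r s > 0" "(\<lambda>m. mpow (B b) Q m r s / \<rho> b ^ m) \<longlonglongrightarrow> Plim b r s"
proof -
  obtain L where L: "L > 0" "\<forall>r\<in>B b. (\<lambda>m. mpow (B b) Q m r s / \<rho> b ^ m) \<longlonglongrightarrow> L * v b r / v b s"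
    using pf_limit[OF B_finite B_ne _ _ _ _ s, of Q "v b" "\<rho> b"] Q_nonneg_B[OF b b] evpos v_pos v_eig b by blast
  have lim: "(\<lambda>m. mpow (B b) Q m r s / \<rho> b ^ m) \<longlonglongrightarrow> L * v b r / v b s" using L r by blast
  then have "Plim b r s = L * v b r / v b s" unfolding Plim_def by (rule limI)
  then show "Plim b r s > 0" using L v_pos b r s by simp
  show "(\<lambda>m. mpow (B b) Q m r s / \<rho> b ^ m) \<longlonglongrightarrow> Plim b r s" using lim \<open>Plim b r s = _\<close> by simp
qed

lemma cls_block:
  assumes b: "b \<in> {1..k}" and r: "r \<in> B b" and s: "s \<in> B b" and p: "p \<le> 1"
  shows "cls (\<rho> b) p (\<lambda>m. wt p m * mpow (B b) Q m r s) (Plim b r s)"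
proof -
  have c0: "cls (\<rho> b) 0 (\<lambda>m. mpow (B b) Q m r s) (Plim b r s)"
    unfolding cls_def using Plim(2)[OF b r s] by simp
  show ?thesis
  proof (cases p)
    case 0 then show ?thesis using c0 by (simp add: wt_def)
  next
    case (Suc p')
    then have "p = 1" using p by simp
    then show ?thesis using cls_weight1[OF c0] by (simp add: wt_def)
  qed
qed

lemma copw_expand:
  "copw h b c g n r = (\<Sum>s\<in>B b. \<Sum>t\<in>B c. Q s t * shift (conv0 (\<lambda>m. h m * mpow (B b) Q m r s) (\<lambda>j. g j t)) n)"
proof (cases n)
  case 0 then show ?thesis by (simp add: shift_def)
next
  case (Suc n')
  have "copw h b c g n r = (\<Sum>m<Suc n'. \<Sum>s\<in>B b. \<Sum>t\<in>B c. Q s t * (h m * mpow (B b) Q m r s * g (n' - m) t))"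
    unfolding copw_def Suc by (intro sum.cong refl) (simp add: algebra_simps)
  also have "\<dots> = (\<Sum>s\<in>B b. \<Sum>m<Suc n'. \<Sum>t\<in>B c. Q s t * (h m * mpow (B b) Q m r s * g (n' - m) t))"
    by (rule sum.swap)
  also have "\<dots> = (\<Sum>s\<in>B b. \<Sum>t\<in>B c. \<Sum>m<Suc n'. Q s t * (h m * mpow (B b) Q m r s * g (n' - m) t))"
    by (rule sum.cong[OF refl]) (rule sum.swap)
  also have "\<dots> = (\<Sum>s\<in>B b. \<Sum>t\<in>B c. Q s t * (\<Sum>m<Suc n'. h m * mpow (B b) Q m r s * g (n' - m) t))"
    by (simp only: sum_distrib_left)
  also have "\<dots> = (\<Sum>s\<in>B b. \<Sum>t\<in>B c. Q s t * shift (conv0 (\<lambda>m. h m * mpow (B b) Q m r s) (\<lambda>j. g j t)) n)"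
    unfolding Suc shift_def conv0_def by (simp add: lessThan_Suc_atMost)
  finally show ?thesis .
qed

lemma step_eq:
  assumes b: "b \<in> {1..k}" and r: "r \<in> B b" and p: "p \<le> 1" and R: "\<rho> b = R"
    and g: "\<forall>t\<in>B c. cls R e (\<lambda>j. g j t) (w t)"
  shows "cls R (p + e + 1) (\<lambda>n. copw (wt p) b c g n r) (\<Sum>s\<in>B b. \<Sum>t\<in>B c. Q s t * (Plim b r s * w t / R))"
proof -
  have R0: "R > 0" using rho_pos[OF b] R by simp
  have "cls R (p + e + 1) (\<lambda>n. \<Sum>s\<in>B b. \<Sum>t\<in>B c. Q s t * shift (conv0 (\<lambda>m. wt p m * mpow (B b) Q m r s) (\<lambda>j. g j t)) n)
      (\<Sum>s\<in>B b. \<Sum>t\<in>B c. Q s t * (Plim b r s * w t / R))"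
  proof (intro cls_sum B_finite cls_cmult)
    fix s t assume s: "s \<in> B b" and t: "t \<in> B c"
    have "cls R (p + e + 1) (conv0 (\<lambda>m. wt p m * mpow (B b) Q m r s) (\<lambda>j. g j t)) (Plim b r s * w t)"
      using conv_eq[OF R0 cls_block[OF b r s p, unfolded R] g[rule_format, OF t]] .
    then show "cls R (p + e + 1) (shift (conv0 (\<lambda>m. wt p m * mpow (B b) Q m r s) (\<lambda>j. g j t))) (Plim b r s * w t / R)"
      by (rule cls_shift[OF R0])
  qed
  then show ?thesis unfolding copw_expand .
qed

lemma step_gt:
  assumes b: "b \<in> {1..k}" and r: "r \<in> B b" and p: "p \<le> 1" and R: "R < \<rho> b" "R > 0"
    and g: "\<forall>t\<in>B c. cls R e (\<lambda>j. g j t) (w t)"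
  shows "cls (\<rho> b) p (\<lambda>n. copw (wt p) b c g n r) (\<Sum>s\<in>B b. \<Sum>t\<in>B c. Q s t * (Plim b r s * (\<Sum>j. g j t / \<rho> b ^ j) / \<rho> b))"
    "\<forall>t\<in>B c. summable (\<lambda>j. g j t / \<rho> b ^ j)"
proof -
  have R0: "\<rho> b > 0" using rho_pos[OF b] by simp
  have "cls (\<rho> b) p (\<lambda>n. \<Sum>s\<in>B b. \<Sum>t\<in>B c. Q s t * shift (conv0 (\<lambda>m. wt p m * mpow (B b) Q m r s) (\<lambda>j. g j t)) n)
      (\<Sum>s\<in>B b. \<Sum>t\<in>B c. Q s t * (Plim b r s * (\<Sum>j. g j t / \<rho> b ^ j) / \<rho> b))"
  proof (intro cls_sum B_finite cls_cmult)
    fix s t assume s: "s \<in> B b" and t: "t \<in> B c"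
    have "cls (\<rho> b) p (conv0 (\<lambda>m. wt p m * mpow (B b) Q m r s) (\<lambda>j. g j t)) (Plim b r s * (\<Sum>j. g j t / \<rho> b ^ j))"
      using conv_gt(2)[OF R(2) R(1) cls_block[OF b r s p] g[rule_format, OF t]] .
    then show "cls (\<rho> b) p (shift (conv0 (\<lambda>m. wt p m * mpow (B b) Q m r s) (\<lambda>j. g j t))) (Plim b r s * (\<Sum>j. g j t / \<rho> b ^ j) / \<rho> b)"
      by (rule cls_shift[OF R0])
  qed
  then show "cls (\<rho> b) p (\<lambda>n. copw (wt p) b c g n r) (\<Sum>s\<in>B b. \<Sum>t\<in>B c. Q s t * (Plim b r s * (\<Sum>j. g j t / \<rho> b ^ j) / \<rho> b))"
    unfolding copw_expand .
  obtain s where s: "s \<in> B b" using B_ne[OF b] r by blast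
  show "\<forall>t\<in>B c. summable (\<lambda>j. g j t / \<rho> b ^ j)"
    using conv_gt(1)[OF R(2) R(1) cls_block[OF b r s p] g[rule_format]] by blast
qed

lemma step_lt:
  assumes b: "b \<in> {1..k}" and c: "c \<in> {1..k}" and r: "r \<in> B b" and p: "p \<le> 1" and R: "\<rho> b < R"
    and g: "\<forall>t\<in>B c. cls R e (\<lambda>j. g j t) (w t)"
  shows "cls R e (\<lambda>n. copw (wt p) b c g n r) (\<Sum>s\<in>B b. \<Sum>t\<in>B c. Q s t * (w t * (\<Sum>m. wt p m * mpow (B b) Q m r s / R ^ m) / R))"
    "\<forall>s\<in>B b. summable (\<lambda>m. wt p m * mpow (B b) Q m r s / R ^ m)"
proof -
  have r0: "\<rho> b > 0" using rho_pos[OF b] by simp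
  have R0: "R > 0" using r0 R by simp
  have "cls R e (\<lambda>n. \<Sum>s\<in>B b. \<Sum>t\<in>B c. Q s t * shift (conv0 (\<lambda>m. wt p m * mpow (B b) Q m r s) (\<lambda>j. g j t)) n)
      (\<Sum>s\<in>B b. \<Sum>t\<in>B c. Q s t * (w t * (\<Sum>m. wt p m * mpow (B b) Q m r s / R ^ m) / R))"
  proof (intro cls_sum B_finite cls_cmult)
    fix s t assume s: "s \<in> B b" and t: "t \<in> B c"
    have "cls R e (conv0 (\<lambda>m. wt p m * mpow (B b) Q m r s) (\<lambda>j. g j t)) (w t * (\<Sum>m. wt p m * mpow (B b) Q m r s / R ^ m))"
      using conv_lt(2)[OF r0 R cls_block[OF b r s p] g[rule_format, OF t]] .
    then show "cls R e (shift (conv0 (\<lambda>m. wt p m * mpow (B b) Q m r s) (\<lambda>j. g j t))) (w t * (\<Sum>m. wt p m * mpow (B b) Q m r s / R ^ m) / R)"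
      by (rule cls_shift[OF R0])
  qed
  then show "cls R e (\<lambda>n. copw (wt p) b c g n r) (\<Sum>s\<in>B b. \<Sum>t\<in>B c. Q s t * (w t * (\<Sum>m. wt p m * mpow (B b) Q m r s / R ^ m) / R))"
    unfolding copw_expand .
  show "\<forall>s\<in>B b. summable (\<lambda>m. wt p m * mpow (B b) Q m r s / R ^ m)"
  proof
    fix s assume s: "s \<in> B b"
    obtain t where t: "t \<in> B c" using B_ne[OF c] by blast
    show "summable (\<lambda>m. wt p m * mpow (B b) Q m r s / R ^ m)"
      using conv_lt(1)[OF r0 R cls_block[OF b r s p] g[rule_format, OF t]] .
  qed
qed

end

lemma double_sum_pos:
  fixes f :: "nat \<Rightarrow> nat \<Rightarrow> real"
  assumes "finite S" "finite T" "sa \<in> S" "ta \<in> T" "f sa ta > 0" "\<forall>s\<in>S. \<forall>t\<in>T. f s t \<ge> 0"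
  shows "(\<Sum>s\<in>S. \<Sum>t\<in>T. f s t) > 0"
proof (rule sum_pos2[OF assms(1,3)])
  show "0 < (\<Sum>t\<in>T. f sa t)" using assms by (intro sum_pos2[OF assms(2,4)]) auto
  show "\<And>s. s \<in> S \<Longrightarrow> 0 \<le> (\<Sum>t\<in>T. f s t)" using assms(6) by (intro sum_nonneg) auto
qed

lemma double_sum_pos2:
  fixes Q X :: "nat \<Rightarrow> nat \<Rightarrow> real"
  assumes "finite S" "finite T" "sa \<in> S" "ta \<in> T" "Q sa ta > 0" "\<forall>s\<in>S. \<forall>t\<in>T. Q s t \<ge> 0"
    "\<And>s t. s \<in> S \<Longrightarrow> t \<in> T \<Longrightarrow> X s t > 0"
  shows "(\<Sum>s\<in>S. \<Sum>t\<in>T. Q s t * X s t) > 0"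
proof (rule double_sum_pos[where sa=sa and ta=ta])
  show "\<forall>s\<in>S. \<forall>t\<in>T. 0 \<le> Q s t * X s t"
  proof (intro ballI)
    fix s t assume "s \<in> S" "t \<in> T"
    then have "0 \<le> Q s t" "0 \<le> X s t" using assms(6) assms(7)[of s t] by auto
    then show "0 \<le> Q s t * X s t" by (rule mult_nonneg_nonneg)
  qed
  show "0 < Q sa ta * X sa ta" using assms(5) assms(7)[OF assms(3,4)] by simp
qed (use assms in auto)

context blk_setting
begin

fun Rf :: "nat list \<Rightarrow> real" where
  "Rf [] = 0"
| "Rf [b] = \<rho> b"
| "Rf (b # c # \<sigma>) = max (\<rho> b) (Rf (c # \<sigma>))"

fun hf :: "nat list \<Rightarrow> nat" where
  "hf [] = 0"
| "hf [b] = 1"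
| "hf (b # c # \<sigma>) = (if Rf (c # \<sigma>) < \<rho> b then 1 else if \<rho> b = Rf (c # \<sigma>) then Suc (hf (c # \<sigma>)) else hf (c # \<sigma>))"

fun lk :: "nat list \<Rightarrow> bool" where
  "lk [] = True"
| "lk [b] = True"
| "lk (b # c # \<sigma>) = ((\<exists>s\<in>B b. \<exists>t\<in>B c. Q s t \<noteq> 0) \<and> lk (c # \<sigma>))"

lemma hf_pos: "\<sigma> \<noteq> [] \<Longrightarrow> hf \<sigma> \<ge> 1"
  by (induction \<sigma> rule: lk.induct) auto

lemma Rf_ge: "x \<in> set \<sigma> \<Longrightarrow> \<rho> x \<le> Rf \<sigma>"
  by (induction \<sigma> rule: Rf.induct) auto

lemma Rf_pos: "\<sigma> \<noteq> [] \<Longrightarrow> set \<sigma> \<subseteq> {1..k} \<Longrightarrow> Rf \<sigma> > 0"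
  by (induction \<sigma> rule: Rf.induct) (auto simp: rho_pos max_def)

lemma Q_nn_block: "b \<in> {1..k} \<Longrightarrow> \<forall>r\<in>B b. \<forall>s\<in>B b. Q r s \<ge> 0"
  using Q_nonneg_B by blast

lemma copw_nonneg:
  assumes h: "\<forall>m. h m \<ge> 0" and b: "b \<in> {1..k}" and c: "c \<in> {1..k}" and r: "r \<in> B b"
    and g: "\<forall>j. \<forall>t\<in>B c. g j t \<ge> 0"
  shows "copw h b c g n r \<ge> 0"
  unfolding copw_def
  using h g mpow_nonneg[OF Q_nn_block[OF b] r] Q_nonneg_B[OF b c]
  by (intro sum_nonneg mult_nonneg_nonneg) auto

lemma Yv_nonneg:
  "\<sigma> \<noteq> [] \<Longrightarrow> set \<sigma> \<subseteq> {1..k} \<Longrightarrow> r \<in> B (hd \<sigma>) \<Longrightarrow> Yv \<sigma> n r \<ge> 0"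
proof (induction \<sigma> arbitrary: n r rule: lk.induct)
  case 1 then show ?case by simp
next
  case (2 b)
  then show ?case using mpow_nonneg[OF Q_nn_block] by (auto intro: sum_nonneg)
next
  case (3 b c \<sigma>)
  then show ?case by (simp del: Yv.simps(2), intro copw_nonneg) auto
qed

lemma Yv_nolink: "\<not> lk \<sigma> \<Longrightarrow> Yv \<sigma> n r = 0"
proof (induction \<sigma> arbitrary: n r rule: lk.induct)
  case (3 b c \<sigma>)
  show ?case
  proof (cases "\<exists>s\<in>B b. \<exists>t\<in>B c. Q s t \<noteq> 0")
    case True
    then have "\<not> lk (c # \<sigma>)" using 3 by simp
    then have "Yv (c # \<sigma>) j t = 0" for j t using 3 by blast
    then show ?thesis by (simp add: copw_def)
  next
    case False
    then show ?thesis by (simp add: copw_def)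
  qed
qed auto

lemma Zv_nol: "l \<notin> set \<sigma> \<Longrightarrow> Zv \<sigma> n r = 0"
proof (induction \<sigma> arbitrary: n r rule: lk.induct)
  case (3 b c \<sigma>)
  then have "Zv (c # \<sigma>) j t = 0" for j t by simp
  then show ?case using 3 by (simp add: copw_def)
qed auto

lemma Zv_bounds:
  "\<sigma> \<noteq> [] \<Longrightarrow> set \<sigma> \<subseteq> {1..k} \<Longrightarrow> r \<in> B (hd \<sigma>) \<Longrightarrow> 0 \<le> Zv \<sigma> n r \<and> Zv \<sigma> n r \<le> (real n + 1) * Yv \<sigma> n r"
proof (induction \<sigma> arbitrary: n r rule: lk.induct)
  case 1 then show ?case by simp
next
  case (2 b)
  have "Yv [b] n r \<ge> 0" using Yv_nonneg[OF _ 2(2,3)] by simp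
  then show ?case by (cases "b = l") (simp_all del: Yv.simps)
next
  case (3 b c \<sigma>)
  have b: "b \<in> {1..k}" and c: "c \<in> {1..k}" and r: "r \<in> B b" using 3 by auto
  have IH: "0 \<le> Zv (c # \<sigma>) j t \<and> Zv (c # \<sigma>) j t \<le> (real j + 1) * Yv (c # \<sigma>) j t" if "t \<in> B c" for j t
    using 3 that by auto
  have Y0: "Yv (c # \<sigma>) j t \<ge> 0" if "t \<in> B c" for j t using Yv_nonneg[of "c # \<sigma>"] 3 that by auto
  define u where "u m = (if b = l then real m + 1 else 0)" for m
  have Zeq: "Zv (b # c # \<sigma>) n r = (\<Sum>m<n. \<Sum>s\<in>B b. \<Sum>t\<in>B c. mpow (B b) Q m r s * Q s t *
      (Zv (c # \<sigma>) (n - 1 - m) t + u m * Yv (c # \<sigma>) (n - 1 - m) t))"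
    unfolding u_def by (cases "b = l") (simp_all add: copw_def sum.distrib algebra_simps)
  have Yeq: "(real n + 1) * Yv (b # c # \<sigma>) n r = (\<Sum>m<n. \<Sum>s\<in>B b. \<Sum>t\<in>B c. mpow (B b) Q m r s * Q s t *
      ((real n + 1) * Yv (c # \<sigma>) (n - 1 - m) t))"
    by (simp add: copw_def sum_distrib_left algebra_simps)
  have pt: "0 \<le> Zv (c # \<sigma>) (n - 1 - m) t + u m * Yv (c # \<sigma>) (n - 1 - m) t \<and>
      Zv (c # \<sigma>) (n - 1 - m) t + u m * Yv (c # \<sigma>) (n - 1 - m) t \<le> (real n + 1) * Yv (c # \<sigma>) (n - 1 - m) t"
    if "m < n" "t \<in> B c" for m t
  proof -
    have "real (n - 1 - m) + 1 + u m \<le> real n + 1" using that unfolding u_def by auto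
    moreover have "u m \<ge> 0" unfolding u_def by auto
    ultimately show ?thesis using IH[OF that(2), of "n - 1 - m"] Y0[OF that(2), of "n - 1 - m"]
      by (smt (verit, best) mult_right_mono distrib_right mult_nonneg_nonneg)
  qed
  have w0: "0 \<le> mpow (B b) Q m r s * Q s t" if "s \<in> B b" "t \<in> B c" for m s t
    using mpow_nonneg[OF Q_nn_block[OF b] r] Q_nonneg_B[OF b c that] by simp
  show ?case
  proof
    show "0 \<le> Zv (b # c # \<sigma>) n r" unfolding Zeq
    proof (intro sum_nonneg)
      fix m s t assume "m \<in> {..<n}" "s \<in> B b" "t \<in> B c"
      then have "0 \<le> mpow (B b) Q m r s * Q s t" "0 \<le> Zv (c # \<sigma>) (n - 1 - m) t + u m * Yv (c # \<sigma>) (n - 1 - m) t"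
        using pt w0 by auto
      then show "0 \<le> mpow (B b) Q m r s * Q s t * (Zv (c # \<sigma>) (n - 1 - m) t + u m * Yv (c # \<sigma>) (n - 1 - m) t)"
        by (rule mult_nonneg_nonneg)
    qed
    show "Zv (b # c # \<sigma>) n r \<le> (real n + 1) * Yv (b # c # \<sigma>) n r" unfolding Zeq Yeq
      using pt w0 by (intro sum_mono mult_left_mono) auto
  qed
qed


lemma series_pos_g:
  assumes "summable (\<lambda>j. g j / R ^ j)" "\<forall>j. g j \<ge> 0" "g j0 > 0" "R > (0::real)"
  shows "(\<Sum>j. g j / R ^ j) > 0"
  by (rule suminf_pos2[OF assms(1), of j0]) (use assms in auto)

lemma block_series_pos:
  assumes b: "b \<in> {1..k}" and r: "r \<in> B b" and s: "s \<in> B b" and R: "R > 0"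
    and sm: "summable (\<lambda>m. wt p m * mpow (B b) Q m r s / R ^ m)"
  shows "(\<Sum>m. wt p m * mpow (B b) Q m r s / R ^ m) > 0"
proof -
  obtain N where N: "\<forall>n\<ge>N. \<forall>r\<in>B b. \<forall>s\<in>B b. mpow (B b) Q n r s > 0"
    using evpos b unfolding eventually_positive_def by blast
  have "mpow (B b) Q N r s > 0" using N r s by blast
  then have "wt p N * mpow (B b) Q N r s / R ^ N > 0" using wt_pos[of p N] R by simp
  moreover have "\<forall>m. wt p m * mpow (B b) Q m r s / R ^ m \<ge> 0"
    using wt_pos mpow_nonneg[OF Q_nn_block[OF b] r] R by (simp add: less_imp_le)
  ultimately show ?thesis by (intro suminf_pos2[OF sm]) auto
qed

lemma Ycls:
  "\<sigma> \<noteq> [] \<Longrightarrow> sorted_wrt (>) \<sigma> \<Longrightarrow> set \<sigma> \<subseteq> {1..k} \<Longrightarrow>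
   \<exists>w. (\<forall>r\<in>B (hd \<sigma>). cls (Rf \<sigma>) (hf \<sigma> - 1) (\<lambda>n. Yv \<sigma> n r) (w r)) \<and> (lk \<sigma> \<longrightarrow> (\<forall>r\<in>B (hd \<sigma>). w r > 0))"
proof (induction \<sigma> rule: lk.induct)
  case 1 then show ?case by simp
next
  case (2 b)
  have b: "b \<in> {1..k}" using 2 by simp
  define w where "w r = (\<Sum>s\<in>B b. Plim b r s)" for r
  have "cls (\<rho> b) 0 (\<lambda>n. Yv [b] n r) (w r)" if r: "r \<in> B b" for r
  proof -
    have "cls (\<rho> b) 0 (\<lambda>n. \<Sum>s\<in>B b. wt 0 n * mpow (B b) Q n r s) (\<Sum>s\<in>B b. Plim b r s)"
      by (intro cls_sum B_finite cls_block[OF b r]) auto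
    then show ?thesis unfolding w_def by (simp add: wt_0)
  qed
  moreover have "w r > 0" if r: "r \<in> B b" for r
    unfolding w_def using Plim(1)[OF b r] B_ne[OF b] B_finite by (intro sum_pos) auto
  ultimately show ?case by auto
next
  case (3 b c \<sigma>)
  have b: "b \<in> {1..k}" and c: "c \<in> {1..k}" using 3(4) by auto
  have cs: "c # \<sigma> \<noteq> []" "sorted_wrt (>) (c # \<sigma>)" "set (c # \<sigma>) \<subseteq> {1..k}" using 3 by auto
  obtain w' where w': "\<forall>t\<in>B c. cls (Rf (c # \<sigma>)) (hf (c # \<sigma>) - 1) (\<lambda>n. Yv (c # \<sigma>) n t) (w' t)"
    "lk (c # \<sigma>) \<longrightarrow> (\<forall>t\<in>B c. w' t > 0)" using 3(1)[OF cs] by auto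
  define R' where "R' = Rf (c # \<sigma>)"
  define e' where "e' = hf (c # \<sigma>) - 1"
  have R'0: "R' > 0" unfolding R'_def using Rf_pos[OF cs(1,3)] .
  have he: "hf (c # \<sigma>) = e' + 1" unfolding e'_def using hf_pos[OF cs(1)] by simp
  have g: "\<forall>t\<in>B c. cls R' e' (\<lambda>j. Yv (c # \<sigma>) j t) (w' t)" using w'(1) unfolding R'_def e'_def .
  have Yeq: "(\<lambda>n. Yv (b # c # \<sigma>) n r) = (\<lambda>n. copw (wt 0) b c (Yv (c # \<sigma>)) n r)" for r by (simp add: wt_0)
  have Q0: "\<forall>s\<in>B b. \<forall>t\<in>B c. Q s t \<ge> 0" using Q_nonneg_B[OF b c] by blast
  have Ynn: "\<forall>j. Yv (c # \<sigma>) j t \<ge> 0" if "t \<in> B c" for t using Yv_nonneg[OF cs(1,3)] that by simp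
  have link: "\<exists>s0\<in>B b. \<exists>t0\<in>B c. Q s0 t0 > 0" if lkA: "lk (b # c # \<sigma>)"
  proof -
    obtain s0 t0 where "s0 \<in> B b" "t0 \<in> B c" "Q s0 t0 \<noteq> 0" using lkA by auto
    then show ?thesis using Q0 by force
  qed
  have lkw: "lk (b # c # \<sigma>) \<Longrightarrow> \<forall>t\<in>B c. w' t > 0" using w'(2) by simp
  consider (eq) "\<rho> b = R'" | (gt) "R' < \<rho> b" | (lt) "\<rho> b < R'" by linarith
  then show ?case
  proof cases
    case eq
    define w where "w r = (\<Sum>s\<in>B b. \<Sum>t\<in>B c. Q s t * (Plim b r s * w' t / R'))" for r
    have "cls R' (0 + e' + 1) (\<lambda>n. Yv (b # c # \<sigma>) n r) (w r)" if r: "r \<in> B b" for r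
      unfolding Yeq w_def by (rule step_eq[OF b r _ eq g]) simp
    moreover have "Rf (b # c # \<sigma>) = R'" "hf (b # c # \<sigma>) - 1 = 0 + e' + 1"
      using eq he unfolding R'_def by auto
    moreover have "w r > 0" if lkA: "lk (b # c # \<sigma>)" and rA: "r \<in> B b" for r
    proof -
      obtain s0 t0 where st: "s0 \<in> B b" "t0 \<in> B c" "Q s0 t0 > 0" using link[OF lkA] by blast
      show ?thesis unfolding w_def
        using st lkw[OF lkA] Plim(1)[OF b rA] R'0 Q0 B_finite
        by (intro double_sum_pos2[where sa=s0 and ta=t0]) (auto intro!: mult_pos_pos divide_pos_pos)
    qed
    ultimately show ?thesis by (intro exI[of _ w]) auto
  next
    case gt
    define w where "w r = (\<Sum>s\<in>B b. \<Sum>t\<in>B c. Q s t * (Plim b r s * (\<Sum>j. Yv (c # \<sigma>) j t / \<rho> b ^ j) / \<rho> b))" for r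
    have rb: "\<rho> b > 0" using rho_pos[OF b] .
    have "cls (\<rho> b) 0 (\<lambda>n. Yv (b # c # \<sigma>) n r) (w r)" if r: "r \<in> B b" for r
      unfolding Yeq w_def by (rule step_gt(1)[OF b r _ gt R'0 g]) simp
    moreover have smb: "\<forall>t\<in>B c. summable (\<lambda>j. Yv (c # \<sigma>) j t / \<rho> b ^ j)"
    proof -
      obtain r where r: "r \<in> B b" using B_ne[OF b] by blast
      show ?thesis by (rule step_gt(2)[OF b r _ gt R'0 g, of 0]) simp
    qed
    moreover have "Rf (b # c # \<sigma>) = \<rho> b" "hf (b # c # \<sigma>) - 1 = 0"
      using gt unfolding R'_def by auto
    moreover have "w r > 0" if lkA: "lk (b # c # \<sigma>)" and rA: "r \<in> B b" for r
    proof -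
      obtain s0 t0 where st: "s0 \<in> B b" "t0 \<in> B c" "Q s0 t0 > 0" using link[OF lkA] by blast
      have sp: "(\<Sum>j. Yv (c # \<sigma>) j t / \<rho> b ^ j) > 0" if t: "t \<in> B c" for t
      proof -
        obtain j0 where "Yv (c # \<sigma>) j0 t > 0"
          using cls_pos_ex[OF g[rule_format, OF t] lkw[OF lkA, rule_format, OF t] R'0] by blast
        then show ?thesis using series_pos_g[OF smb[rule_format, OF t] Ynn[OF t] _ rb] by blast
      qed
      show ?thesis unfolding w_def
        using st sp Plim(1)[OF b rA] rb Q0 B_finite
        by (intro double_sum_pos2[where sa=s0 and ta=t0]) (auto intro!: mult_pos_pos divide_pos_pos)
    qed
    ultimately show ?thesis by (intro exI[of _ w]) auto
  next
    case lt
    define w where "w r = (\<Sum>s\<in>B b. \<Sum>t\<in>B c. Q s t * (w' t * (\<Sum>m. wt 0 m * mpow (B b) Q m r s / R' ^ m) / R'))" for r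
    have "cls R' e' (\<lambda>n. Yv (b # c # \<sigma>) n r) (w r)" if r: "r \<in> B b" for r
      unfolding Yeq w_def by (rule step_lt(1)[OF b c r _ lt g]) simp
    moreover have "Rf (b # c # \<sigma>) = R'" "hf (b # c # \<sigma>) - 1 = e'"
      using lt he unfolding R'_def by auto
    moreover have "w r > 0" if lkA: "lk (b # c # \<sigma>)" and rA: "r \<in> B b" for r
    proof -
      obtain s0 t0 where st: "s0 \<in> B b" "t0 \<in> B c" "Q s0 t0 > 0" using link[OF lkA] by blast
      have sp: "(\<Sum>m. wt 0 m * mpow (B b) Q m r s / R' ^ m) > 0" if s: "s \<in> B b" for s
        using block_series_pos[OF b rA s R'0] step_lt(2)[OF b c rA _ lt g, of 0] s by simp
      show ?thesis unfolding w_def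
        using st sp lkw[OF lkA] R'0 Q0 B_finite
        by (intro double_sum_pos2[where sa=s0 and ta=t0]) (auto intro!: mult_pos_pos divide_pos_pos)
    qed
    ultimately show ?thesis by (intro exI[of _ w]) auto
  qed
qed


lemma step_any:
  assumes b: "b \<in> {1..k}" and c: "c \<in> {1..k}" and R: "R > 0"
    and g: "\<forall>t\<in>B c. cls R e (\<lambda>j. g j t) (w t)"
  shows "\<exists>z. \<forall>r\<in>B b. cls (max (\<rho> b) R) (if R < \<rho> b then 0 else if \<rho> b = R then e + 1 else e)
           (\<lambda>n. copw (wt 0) b c g n r) (z r)"
proof -
  consider (eq) "\<rho> b = R" | (gt) "R < \<rho> b" | (lt) "\<rho> b < R" by linarith
  then show ?thesis
  proof cases
    case eq
    then show ?thesis using step_eq[OF b _ _ eq g, of _ 0] by (intro exI) auto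
  next
    case gt
    then show ?thesis using step_gt(1)[OF b _ _ gt R g, of _ 0] by (intro exI) auto
  next
    case lt
    then show ?thesis using step_lt(1)[OF b c _ _ lt g, of _ 0] by (intro exI) auto
  qed
qed


lemma Z1:
  "\<sigma> \<noteq> [] \<Longrightarrow> sorted_wrt (>) \<sigma> \<Longrightarrow> set \<sigma> \<subseteq> {1..k} \<Longrightarrow> l \<in> set \<sigma> \<Longrightarrow> Rf \<sigma> = \<rho> l \<Longrightarrow>
   (\<forall>r\<in>B (hd \<sigma>). cls (Rf \<sigma>) (hf \<sigma> - 1) (\<lambda>n. Yv \<sigma> n r) (w r)) \<Longrightarrow>
   (\<forall>r\<in>B (hd \<sigma>). cls (Rf \<sigma>) (hf \<sigma>) (\<lambda>n. Zv \<sigma> n r) (w r))"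
proof (induction \<sigma> arbitrary: w rule: lk.induct)
  case 1 then show ?case by simp
next
  case (2 b)
  then have bl: "b = l" by simp
  show ?case
  proof
    fix r assume r: "r \<in> B (hd [b])"
    have "cls (\<rho> b) 0 (\<lambda>n. Yv [b] n r) (w r)" using 2(6) r by simp
    then have "cls (\<rho> b) 1 (\<lambda>n. (real n + 1) * Yv [b] n r) (w r)" by (rule cls_weight1)
    then show "cls (Rf [b]) (hf [b]) (\<lambda>n. Zv [b] n r) (w r)" using bl by (simp del: Yv.simps)
  qed
next
  case (3 b c \<sigma>)
  have b: "b \<in> {1..k}" and c: "c \<in> {1..k}" using 3(4) by auto
  have cs: "c # \<sigma> \<noteq> []" "sorted_wrt (>) (c # \<sigma>)" "set (c # \<sigma>) \<subseteq> {1..k}" using 3 by auto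
  obtain w' where w': "\<forall>t\<in>B c. cls (Rf (c # \<sigma>)) (hf (c # \<sigma>) - 1) (\<lambda>n. Yv (c # \<sigma>) n t) (w' t)"
    using Ycls[OF cs] by auto
  define R' where "R' = Rf (c # \<sigma>)"
  define e' where "e' = hf (c # \<sigma>) - 1"
  have R'0: "R' > 0" unfolding R'_def using Rf_pos[OF cs(1,3)] .
  have he: "hf (c # \<sigma>) = e' + 1" unfolding e'_def using hf_pos[OF cs(1)] by simp
  have g: "\<forall>t\<in>B c. cls R' e' (\<lambda>j. Yv (c # \<sigma>) j t) (w' t)" using w' unfolding R'_def e'_def .
  have Yeq: "(\<lambda>n. Yv (b # c # \<sigma>) n r) = (\<lambda>n. copw (wt 0) b c (Yv (c # \<sigma>)) n r)" for r by (simp add: wt_0)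
  have wY: "cls (Rf (b # c # \<sigma>)) (hf (b # c # \<sigma>) - 1) (\<lambda>n. copw (wt 0) b c (Yv (c # \<sigma>)) n r) (w r)" if "r \<in> B b" for r
    using 3(7) that Yeq by simp
  show ?case
  proof (cases "b = l")
    case True
    have lnot: "l \<notin> set (c # \<sigma>)" using 3(3) True by auto
    have Zeq: "(\<lambda>n. Zv (b # c # \<sigma>) n r) = (\<lambda>n. copw (wt 1) b c (Yv (c # \<sigma>)) n r)" for r
      using Zv_nol[OF lnot] True by (simp add: wt_def copw_def)
    have le: "R' \<le> \<rho> l" using 3(6) unfolding R'_def by simp
    show ?thesis
    proof (cases "R' = \<rho> l")
      case eqR: True
      then have eq: "\<rho> b = R'" using True by simp
      have rf: "Rf (b # c # \<sigma>) = R'" "hf (b # c # \<sigma>) = e' + 2" using eq he unfolding R'_def by auto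
      show ?thesis
      proof
        fix r assume r: "r \<in> B (hd (b # c # \<sigma>))"
        then have r: "r \<in> B b" by simp
        have "cls R' (0 + e' + 1) (\<lambda>n. copw (wt 0) b c (Yv (c # \<sigma>)) n r) (\<Sum>s\<in>B b. \<Sum>t\<in>B c. Q s t * (Plim b r s * w' t / R'))"
          by (rule step_eq[OF b r _ eq g]) simp
        moreover have "cls R' (0 + e' + 1) (\<lambda>n. copw (wt 0) b c (Yv (c # \<sigma>)) n r) (w r)"
          using wY[OF r] rf by simp
        ultimately have wr: "w r = (\<Sum>s\<in>B b. \<Sum>t\<in>B c. Q s t * (Plim b r s * w' t / R'))" by (rule cls_unique[symmetric])
        have "cls R' (1 + e' + 1) (\<lambda>n. copw (wt 1) b c (Yv (c # \<sigma>)) n r) (\<Sum>s\<in>B b. \<Sum>t\<in>B c. Q s t * (Plim b r s * w' t / R'))"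
          by (rule step_eq[OF b r _ eq g]) simp
        then show "cls (Rf (b # c # \<sigma>)) (hf (b # c # \<sigma>)) (\<lambda>n. Zv (b # c # \<sigma>) n r) (w r)"
          unfolding Zeq rf wr by (simp add: add.commute)
      qed
    next
      case False
      then have gt: "R' < \<rho> b" using le True by simp
      have rf: "Rf (b # c # \<sigma>) = \<rho> b" "hf (b # c # \<sigma>) = 1" using gt unfolding R'_def by auto
      show ?thesis
      proof
        fix r assume r: "r \<in> B (hd (b # c # \<sigma>))"
        then have r: "r \<in> B b" by simp
        define L where "L = (\<Sum>s\<in>B b. \<Sum>t\<in>B c. Q s t * (Plim b r s * (\<Sum>j. Yv (c # \<sigma>) j t / \<rho> b ^ j) / \<rho> b))"
        have "cls (\<rho> b) 0 (\<lambda>n. copw (wt 0) b c (Yv (c # \<sigma>)) n r) L"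
          unfolding L_def by (rule step_gt(1)[OF b r _ gt R'0 g]) simp
        moreover have "cls (\<rho> b) 0 (\<lambda>n. copw (wt 0) b c (Yv (c # \<sigma>)) n r) (w r)"
          using wY[OF r] rf by simp
        ultimately have wr: "w r = L" by (rule cls_unique[symmetric])
        have "cls (\<rho> b) 1 (\<lambda>n. copw (wt 1) b c (Yv (c # \<sigma>)) n r) L"
          unfolding L_def by (rule step_gt(1)[OF b r _ gt R'0 g]) simp
        then show "cls (Rf (b # c # \<sigma>)) (hf (b # c # \<sigma>)) (\<lambda>n. Zv (b # c # \<sigma>) n r) (w r)"
          unfolding Zeq rf wr .
      qed
    qed
  next
    case False
    have lin: "l \<in> set (c # \<sigma>)" using 3(5) False by simp
    have R'l: "R' = \<rho> l"
    proof -
      have "\<rho> l \<le> R'" unfolding R'_def by (rule Rf_ge[OF lin])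
      moreover have "R' \<le> Rf (b # c # \<sigma>)" unfolding R'_def by simp
      ultimately show ?thesis using 3(6) by simp
    qed
    have rb: "\<rho> b \<le> R'" using 3(6) R'l by simp
    have z': "\<forall>t\<in>B c. cls R' (hf (c # \<sigma>)) (\<lambda>n. Zv (c # \<sigma>) n t) (w' t)"
      using 3(1)[OF cs lin] R'l w' unfolding R'_def by simp
    have z'': "\<forall>t\<in>B c. cls R' (e' + 1) (\<lambda>n. Zv (c # \<sigma>) n t) (w' t)" using z' he by simp
    have Zeq: "(\<lambda>n. Zv (b # c # \<sigma>) n r) = (\<lambda>n. copw (wt 0) b c (Zv (c # \<sigma>)) n r)" for r
      using False by (simp add: wt_0)
    show ?thesis
    proof (cases "\<rho> b = R'")
      case eq: True
      have rf: "Rf (b # c # \<sigma>) = R'" "hf (b # c # \<sigma>) = e' + 2" using eq he unfolding R'_def by auto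
      show ?thesis
      proof
        fix r assume r: "r \<in> B (hd (b # c # \<sigma>))"
        then have r: "r \<in> B b" by simp
        have "cls R' (0 + e' + 1) (\<lambda>n. copw (wt 0) b c (Yv (c # \<sigma>)) n r) (\<Sum>s\<in>B b. \<Sum>t\<in>B c. Q s t * (Plim b r s * w' t / R'))"
          by (rule step_eq[OF b r _ eq g]) simp
        moreover have "cls R' (0 + e' + 1) (\<lambda>n. copw (wt 0) b c (Yv (c # \<sigma>)) n r) (w r)"
          using wY[OF r] rf by simp
        ultimately have wr: "w r = (\<Sum>s\<in>B b. \<Sum>t\<in>B c. Q s t * (Plim b r s * w' t / R'))" by (rule cls_unique[symmetric])
        have "cls R' (0 + (e' + 1) + 1) (\<lambda>n. copw (wt 0) b c (Zv (c # \<sigma>)) n r) (\<Sum>s\<in>B b. \<Sum>t\<in>B c. Q s t * (Plim b r s * w' t / R'))"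
          by (rule step_eq[OF b r _ eq z'']) simp
        then show "cls (Rf (b # c # \<sigma>)) (hf (b # c # \<sigma>)) (\<lambda>n. Zv (b # c # \<sigma>) n r) (w r)"
          unfolding Zeq rf wr by simp
      qed
    next
      case neq: False
      then have lt: "\<rho> b < R'" using rb by simp
      have rf: "Rf (b # c # \<sigma>) = R'" "hf (b # c # \<sigma>) = e' + 1" using lt he unfolding R'_def by auto
      show ?thesis
      proof
        fix r assume r: "r \<in> B (hd (b # c # \<sigma>))"
        then have r: "r \<in> B b" by simp
        define L where "L = (\<Sum>s\<in>B b. \<Sum>t\<in>B c. Q s t * (w' t * (\<Sum>m. wt 0 m * mpow (B b) Q m r s / R' ^ m) / R'))"
        have "cls R' e' (\<lambda>n. copw (wt 0) b c (Yv (c # \<sigma>)) n r) L"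
          unfolding L_def by (rule step_lt(1)[OF b c r _ lt g]) simp
        moreover have "cls R' e' (\<lambda>n. copw (wt 0) b c (Yv (c # \<sigma>)) n r) (w r)"
          using wY[OF r] rf by simp
        ultimately have wr: "w r = L" by (rule cls_unique[symmetric])
        have "cls R' (e' + 1) (\<lambda>n. copw (wt 0) b c (Zv (c # \<sigma>)) n r) L"
          unfolding L_def by (rule step_lt(1)[OF b c r _ lt z'']) simp
        then show "cls (Rf (b # c # \<sigma>)) (hf (b # c # \<sigma>)) (\<lambda>n. Zv (b # c # \<sigma>) n r) (w r)"
          unfolding Zeq rf wr .
      qed
    qed
  qed
qed

lemma Z2:
  "\<sigma> \<noteq> [] \<Longrightarrow> sorted_wrt (>) \<sigma> \<Longrightarrow> set \<sigma> \<subseteq> {1..k} \<Longrightarrow> l \<in> set \<sigma> \<Longrightarrow> \<rho> l < Rf \<sigma> \<Longrightarrow>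
   \<exists>z. \<forall>r\<in>B (hd \<sigma>). cls (Rf \<sigma>) (hf \<sigma> - 1) (\<lambda>n. Zv \<sigma> n r) (z r)"
proof (induction \<sigma> rule: lk.induct)
  case 1 then show ?case by simp
next
  case (2 b) then show ?case by simp
next
  case (3 b c \<sigma>)
  have b: "b \<in> {1..k}" and c: "c \<in> {1..k}" using 3(4) by auto
  have cs: "c # \<sigma> \<noteq> []" "sorted_wrt (>) (c # \<sigma>)" "set (c # \<sigma>) \<subseteq> {1..k}" using 3 by auto
  obtain w' where w': "\<forall>t\<in>B c. cls (Rf (c # \<sigma>)) (hf (c # \<sigma>) - 1) (\<lambda>n. Yv (c # \<sigma>) n t) (w' t)"
    using Ycls[OF cs] by auto
  define R' where "R' = Rf (c # \<sigma>)"
  define e' where "e' = hf (c # \<sigma>) - 1"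
  have R'0: "R' > 0" unfolding R'_def using Rf_pos[OF cs(1,3)] .
  have he: "hf (c # \<sigma>) = e' + 1" unfolding e'_def using hf_pos[OF cs(1)] by simp
  have g: "\<forall>t\<in>B c. cls R' e' (\<lambda>j. Yv (c # \<sigma>) j t) (w' t)" using w' unfolding R'_def e'_def .
  have hfe: "hf (b # c # \<sigma>) - 1 = (if R' < \<rho> b then 0 else if \<rho> b = R' then e' + 1 else e')"
    using he unfolding R'_def by auto
  have rfe: "Rf (b # c # \<sigma>) = max (\<rho> b) R'" unfolding R'_def by simp
  show ?case
  proof (cases "b = l")
    case True
    have lnot: "l \<notin> set (c # \<sigma>)" using 3(3) True by auto
    have Zeq: "(\<lambda>n. Zv (b # c # \<sigma>) n r) = (\<lambda>n. copw (wt 1) b c (Yv (c # \<sigma>)) n r)" for r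
      using Zv_nol[OF lnot] True by (simp add: wt_def copw_def)
    have lt: "\<rho> b < R'" using 3(6) True unfolding R'_def by (simp add: max_def split: if_splits)
    have "\<forall>r\<in>B b. cls R' e' (\<lambda>n. copw (wt 1) b c (Yv (c # \<sigma>)) n r)
       (\<Sum>s\<in>B b. \<Sum>t\<in>B c. Q s t * (w' t * (\<Sum>m. wt 1 m * mpow (B b) Q m r s / R' ^ m) / R'))"
      using step_lt(1)[OF b c _ _ lt g, of _ 1] by simp
    then show ?thesis using lt hfe rfe unfolding Zeq by (intro exI) auto
  next
    case False
    have lin: "l \<in> set (c # \<sigma>)" using 3(5) False by simp
    have Zeq: "(\<lambda>n. Zv (b # c # \<sigma>) n r) = (\<lambda>n. copw (wt 0) b c (Zv (c # \<sigma>)) n r)" for r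
      using False by (simp add: wt_0)
    have "\<rho> l \<le> R'" unfolding R'_def by (rule Rf_ge[OF lin])
    then consider (lt) "\<rho> l < R'" | (eq) "\<rho> l = R'" by linarith
    then show ?thesis
    proof cases
      case lt
      obtain z' where z': "\<forall>t\<in>B c. cls R' e' (\<lambda>n. Zv (c # \<sigma>) n t) (z' t)"
        using 3(1)[OF cs lin] lt unfolding R'_def e'_def by auto
      show ?thesis using step_any[OF b c R'0 z'] unfolding Zeq hfe rfe by simp
    next
      case eq
      have z': "\<forall>t\<in>B c. cls R' (e' + 1) (\<lambda>n. Zv (c # \<sigma>) n t) (w' t)"
        using Z1[OF cs lin, of w'] eq w' he unfolding R'_def by simp
      have gt: "R' < \<rho> b" using 3(6) eq unfolding R'_def by (simp add: max_def split: if_splits)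
      show ?thesis using step_any[OF b c R'0 z'] gt unfolding Zeq hfe rfe by simp
    qed
  qed
qed

end

lemma cls_squeeze:
  assumes "cls R e t 0" "R > 0" "\<And>n. 0 \<le> s n" "\<And>n. s n \<le> t n"
  shows "cls R e s 0"
  unfolding cls_def
proof (rule tendsto_sandwich[OF _ _ tendsto_const assms(1)[unfolded cls_def]])
  show "\<forall>\<^sub>F n in sequentially. 0 \<le> s n / (NB e n * R ^ n)"
    using assms NB_pos by (intro always_eventually allI divide_nonneg_pos) auto
  show "\<forall>\<^sub>F n in sequentially. s n / (NB e n * R ^ n) \<le> t n / (NB e n * R ^ n)"
    using assms NB_pos by (intro always_eventually allI divide_right_mono) (auto intro: less_imp_le)
qed

lemma div_aux: "(a::real) \<noteq> 0 \<Longrightarrow> E \<noteq> 0 \<Longrightarrow> N \<noteq> 0 \<Longrightarrow> (a * X / E) / (N * a) = X / (E * N)"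
  by (simp add: field_simps)

lemma cls_div_Suc:
  assumes "cls R (Suc e) s L"
  shows "cls R e (\<lambda>n. s n / (real n + 1)) (L / (real e + 1))"
proof -
  have eq: "NB (Suc e) n / ((real n + 1) * NB e n) = (real n + 1 + real e) / ((real e + 1) * (real n + 1))" for n
  proof -
    have h: "NB (Suc e) n = NB e n * (real n + 1 + real e) / (real e + 1)"
      using NB_Suc_e[of e n] by (simp add: field_simps)
    show ?thesis unfolding h by (rule div_aux) auto
  qed
  have lim0: "(\<lambda>n. (real n + 1 + real e) / ((real e + 1) * (real n + 1))) \<longlonglongrightarrow> inverse (real e + 1)"
    by real_asymp
  then have lim: "(\<lambda>n. (real n + 1 + real e) / ((real e + 1) * (real n + 1))) \<longlonglongrightarrow> 1 / (real e + 1)"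
    by (simp add: inverse_eq_divide)
  have "(\<lambda>n. (s n / (NB (Suc e) n * R ^ n)) * (NB (Suc e) n / ((real n + 1) * NB e n))) \<longlonglongrightarrow> L * (1 / (real e + 1))"
    using tendsto_mult[OF assms[unfolded cls_def] lim] unfolding eq .
  moreover have "(\<lambda>n. (s n / (NB (Suc e) n * R ^ n)) * (NB (Suc e) n / ((real n + 1) * NB e n))) = (\<lambda>n. s n / (real n + 1) / (NB e n * R ^ n))"
    by (rule ext) (simp add: field_simps)
  ultimately show ?thesis unfolding cls_def by simp
qed

lemma cls_div_0:
  assumes "cls R e s L"
  shows "cls R e (\<lambda>n. s n / (real n + 1)) 0"
proof -
  have lim: "(\<lambda>n. 1 / (real n + 1)) \<longlonglongrightarrow> (0::real)" by real_asymp
  have "(\<lambda>n. (s n / (NB e n * R ^ n)) * (1 / (real n + 1))) \<longlonglongrightarrow> L * 0"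
    using tendsto_mult[OF assms[unfolded cls_def] lim] .
  moreover have "(\<lambda>n. (s n / (NB e n * R ^ n)) * (1 / (real n + 1))) = (\<lambda>n. s n / (real n + 1) / (NB e n * R ^ n))"
    by (rule ext) (simp add: field_simps)
  ultimately show ?thesis unfolding cls_def by simp
qed

context blk_setting
begin

lemma lk_iff: "lk \<sigma> \<longleftrightarrow> (\<forall>u. Suc u < length \<sigma> \<longrightarrow> (\<exists>r\<in>B (\<sigma> ! u). \<exists>s\<in>B (\<sigma> ! Suc u). Q r s \<noteq> 0))"
proof (induction \<sigma> rule: lk.induct)
  case (3 b c \<sigma>)
  have "(\<forall>u. Suc u < length (b # c # \<sigma>) \<longrightarrow> (\<exists>r\<in>B ((b # c # \<sigma>) ! u). \<exists>s\<in>B ((b # c # \<sigma>) ! Suc u). Q r s \<noteq> 0))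
    \<longleftrightarrow> (\<exists>r\<in>B b. \<exists>s\<in>B c. Q r s \<noteq> 0) \<and>
        (\<forall>u. Suc u < length (c # \<sigma>) \<longrightarrow> (\<exists>r\<in>B ((c # \<sigma>) ! u). \<exists>s\<in>B ((c # \<sigma>) ! Suc u). Q r s \<noteq> 0))"
    (is "?L \<longleftrightarrow> ?R")
  proof
    assume L: ?L
    show ?R
    proof
      show "\<exists>r\<in>B b. \<exists>s\<in>B c. Q r s \<noteq> 0" using L[rule_format, of 0] by simp
      show "\<forall>u. Suc u < length (c # \<sigma>) \<longrightarrow> (\<exists>r\<in>B ((c # \<sigma>) ! u). \<exists>s\<in>B ((c # \<sigma>) ! Suc u). Q r s \<noteq> 0)"
        using L by (metis Suc_less_eq length_Cons nth_Cons_Suc)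
    qed
  next
    assume R: ?R
    show ?L
    proof (intro allI impI)
      fix u assume "Suc u < length (b # c # \<sigma>)"
      then show "\<exists>r\<in>B ((b # c # \<sigma>) ! u). \<exists>s\<in>B ((b # c # \<sigma>) ! Suc u). Q r s \<noteq> 0"
        using R by (cases u) auto
    qed
  qed
  then show ?case using 3 by simp
qed auto

lemma adm_iff: "admissible k ds Q \<sigma> \<longleftrightarrow> \<sigma> \<noteq> [] \<and> set \<sigma> \<subseteq> {1..k} \<and> sorted_wrt (>) \<sigma> \<and> lk \<sigma>"
  unfolding admissible_def lk_iff by auto

lemma rho_path_Rf: "\<sigma> \<noteq> [] \<Longrightarrow> rho_path \<rho> \<sigma> = Rf \<sigma>"
proof (induction \<sigma> rule: lk.induct)
  case (3 b c \<sigma>)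
  have "rho_path \<rho> (b # c # \<sigma>) = Max (insert (\<rho> b) (\<rho> ` set (c # \<sigma>)))" unfolding rho_path_def by simp
  also have "\<dots> = max (\<rho> b) (Max (\<rho> ` set (c # \<sigma>)))" by (subst Max_insert) auto
  finally show ?case using 3 unfolding rho_path_def by simp
qed (auto simp: rho_path_def)

definition cntM :: "real \<Rightarrow> nat list \<Rightarrow> nat" where
  "cntM M \<sigma> = card {u. u < length \<sigma> \<and> \<rho> (\<sigma> ! u) = M}"

lemma cntM_Cons: "cntM M (b # \<sigma>) = (if \<rho> b = M then 1 else 0) + cntM M \<sigma>"
proof -
  have "{u. u < length (b # \<sigma>) \<and> \<rho> ((b # \<sigma>) ! u) = M} = (if \<rho> b = M then {0} else {}) \<union> Suc ` {u. u < length \<sigma> \<and> \<rho> (\<sigma> ! u) = M}"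
  proof (rule set_eqI)
    fix u show "u \<in> {u. u < length (b # \<sigma>) \<and> \<rho> ((b # \<sigma>) ! u) = M} \<longleftrightarrow> u \<in> (if \<rho> b = M then {0} else {}) \<union> Suc ` {u. u < length \<sigma> \<and> \<rho> (\<sigma> ! u) = M}"
      by (cases u) auto
  qed
  then show ?thesis unfolding cntM_def by (simp add: card_image)
qed

lemma cntM_zero: "\<forall>x\<in>set \<sigma>. \<rho> x < M \<Longrightarrow> cntM M \<sigma> = 0"
  by (induction \<sigma>) (auto simp: cntM_Cons, simp add: cntM_def)

lemma hplus_hf: "\<sigma> \<noteq> [] \<Longrightarrow> hplus \<rho> \<sigma> = hf \<sigma>"
proof -
  have "\<sigma> \<noteq> [] \<Longrightarrow> cntM (Rf \<sigma>) \<sigma> = hf \<sigma>"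
  proof (induction \<sigma> rule: lk.induct)
    case (2 b)
    have "{u. u < length [b] \<and> \<rho> ([b] ! u) = \<rho> b} = {0}" by auto
    then show ?case by (simp add: cntM_def)
  next
    case (3 b c \<sigma>)
    define R' where "R' = Rf (c # \<sigma>)"
    consider (gt) "R' < \<rho> b" | (eq) "\<rho> b = R'" | (lt) "\<rho> b < R'" by linarith
    then show ?case
    proof cases
      case gt
      have "\<forall>x\<in>set (c # \<sigma>). \<rho> x < \<rho> b" using Rf_ge[of _ "c # \<sigma>"] gt unfolding R'_def by force
      then show ?thesis using gt unfolding R'_def by (simp add: cntM_Cons cntM_zero)
    next
      case eq then show ?thesis using 3 unfolding R'_def by (simp add: cntM_Cons)
    next
      case lt then show ?thesis using 3 unfolding R'_def by (simp add: cntM_Cons)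
    qed
  qed simp
  moreover assume "\<sigma> \<noteq> []"
  ultimately show ?thesis unfolding hplus_def rho_path_Rf[OF \<open>\<sigma> \<noteq> []\<close>] cntM_def by simp
qed


lemma Padm_sub: "{\<sigma>\<in>Padm k ds Q. P \<sigma>} \<subseteq> (\<Union>i\<in>{1..k}. DL i)"
proof
  fix \<sigma> assume "\<sigma> \<in> {\<sigma>\<in>Padm k ds Q. P \<sigma>}"
  then have a: "\<sigma> \<noteq> []" "set \<sigma> \<subseteq> {1..k}" "sorted_wrt (>) \<sigma>" using adm_iff unfolding Padm_def by auto
  then have "hd \<sigma> \<in> {1..k}" by (cases \<sigma>) auto
  moreover have "\<sigma> \<in> DL (hd \<sigma>)" using a unfolding DL_def by auto
  ultimately show "\<sigma> \<in> (\<Union>i\<in>{1..k}. DL i)" by blast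
qed

lemma Rf_le_max: "\<sigma> \<noteq> [] \<Longrightarrow> set \<sigma> \<subseteq> {1..k} \<Longrightarrow> Rf \<sigma> \<le> rho_max k \<rho>"
  unfolding rho_path_Rf[symmetric] rho_path_def rho_max_def
  by (intro Max_mono) auto

lemma others_small:
  assumes uniq: "Pmax k ds Q \<rho> = {\<theta>}" and i: "i \<in> {1..k}" and \<sigma>: "\<sigma> \<in> DL i" "lk \<sigma>" "\<sigma> \<noteq> \<theta>"
  shows "Rf \<sigma> < rho_max k \<rho> \<or> (Rf \<sigma> = rho_max k \<rho> \<and> hf \<sigma> < hplus_max k ds Q \<rho>)"
proof -
  have a: "\<sigma> \<noteq> []" "set \<sigma> \<subseteq> {1..k}" "sorted_wrt (>) \<sigma>" using \<sigma> unfolding DL_def by auto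
  have adm: "\<sigma> \<in> Padm k ds Q" unfolding Padm_def using adm_iff a \<sigma>(2) by auto
  have le: "Rf \<sigma> \<le> rho_max k \<rho>" using Rf_le_max[OF a(1,2)] .
  show ?thesis
  proof (cases "Rf \<sigma> = rho_max k \<rho>")
    case True
    have rp: "rho_path \<rho> \<sigma> = rho_max k \<rho>" using True rho_path_Rf[OF a(1)] by simp
    have fin: "finite {hplus \<rho> \<theta> |\<theta>. \<theta> \<in> Padm k ds Q \<and> rho_path \<rho> \<theta> = rho_max k \<rho>}"
    proof -
      have "{hplus \<rho> \<theta> |\<theta>. \<theta> \<in> Padm k ds Q \<and> rho_path \<rho> \<theta> = rho_max k \<rho>}
          = hplus \<rho> ` {\<theta>\<in>Padm k ds Q. rho_path \<rho> \<theta> = rho_max k \<rho>}" by auto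
      moreover have "finite {\<theta>\<in>Padm k ds Q. rho_path \<rho> \<theta> = rho_max k \<rho>}"
        by (rule finite_subset[OF Padm_sub]) (auto intro: DL_finite)
      ultimately show ?thesis by simp
    qed
    have "hplus \<rho> \<sigma> \<le> hplus_max k ds Q \<rho>" unfolding hplus_max_def
      by (rule Max_ge[OF fin]) (use adm rp in auto)
    moreover have "hplus \<rho> \<sigma> \<noteq> hplus_max k ds Q \<rho>"
    proof
      assume "hplus \<rho> \<sigma> = hplus_max k ds Q \<rho>"
      then have "\<sigma> \<in> Pmax k ds Q \<rho>" unfolding Pmax_def using adm rp by auto
      then show False using uniq \<sigma>(3) by auto
    qed
    ultimately show ?thesis using True hplus_hf[OF a(1)] by simp
  next
    case False then show ?thesis using le by simp
  qed
qed

lemma sum_blocks: "(\<Sum>r\<in>{1..d}. f r) = (\<Sum>i\<in>{1..k}. \<Sum>r\<in>B i. f r)"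
  unfolding UN_B
proof (rule sum.UNION_disjoint)
  show "\<forall>i\<in>{1..k}. \<forall>j\<in>{1..k}. i \<noteq> j \<longrightarrow> B i \<inter> B j = {}" using B_disj by blast
qed (auto simp: B_finite)

lemma main_limit:
  assumes pi_nonneg: "\<forall>i\<in>{1..d}. \<pi> i \<ge> 0"
    and uniq: "Pmax k ds Q \<rho> = {\<theta>}"
    and piv: "(\<Sum>r\<in>B (hd \<theta>). \<pi> r * v (hd \<theta>) r) \<noteq> 0"
    and l\<theta>: "l \<in> set \<theta>"
  shows "(\<rho> l = rho_max k \<rho> \<longrightarrow> ((\<lambda>n. cond_occupation d \<pi> R Q (B l) n) \<longlonglongrightarrow> 1 / real (hplus_max k ds Q \<rho>)))
       \<and> (\<rho> l < rho_max k \<rho> \<longrightarrow> ((\<lambda>n. cond_occupation d \<pi> R Q (B l) n) \<longlonglongrightarrow> 0))"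
proof -
  have \<theta>P: "\<theta> \<in> Pmax k ds Q \<rho>" using uniq by simp
  then have adm\<theta>: "admissible k ds Q \<theta>" and rp\<theta>: "rho_path \<rho> \<theta> = rho_max k \<rho>"
    and hp\<theta>: "hplus \<rho> \<theta> = hplus_max k ds Q \<rho>" unfolding Pmax_def Padm_def by auto
  have a\<theta>: "\<theta> \<noteq> []" "set \<theta> \<subseteq> {1..k}" "sorted_wrt (>) \<theta>" "lk \<theta>" using adm\<theta> adm_iff by auto
  define i0 where "i0 = hd \<theta>"
  have i0: "i0 \<in> {1..k}" using a\<theta>(1,2) unfolding i0_def by (cases \<theta>) auto
  have \<theta>DL: "\<theta> \<in> DL i0" using a\<theta> unfolding DL_def i0_def by auto
  have l: "l \<in> {1..k}" using l\<theta> a\<theta>(2) by auto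
  define Rm where "Rm = rho_max k \<rho>"
  have RmRf: "Rf \<theta> = Rm" using rp\<theta> rho_path_Rf[OF a\<theta>(1)] unfolding Rm_def by simp
  have Rm0: "Rm > 0" using Rf_pos[OF a\<theta>(1,2)] RmRf by simp
  define H where "H = hf \<theta> - 1"
  have hH: "hf \<theta> = Suc H" using hf_pos[OF a\<theta>(1)] unfolding H_def by simp
  have hmax: "hplus_max k ds Q \<rho> = Suc H" using hp\<theta> hplus_hf[OF a\<theta>(1)] hH by simp
  have rl: "\<rho> l \<le> Rm" using Rf_ge[OF l\<theta>] RmRf by simp
  obtain w\<theta> where w\<theta>: "\<forall>r\<in>B i0. cls Rm H (\<lambda>n. Yv \<theta> n r) (w\<theta> r)" "\<forall>r\<in>B i0. w\<theta> r > 0"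
    using Ycls[OF a\<theta>(1,3,2)] a\<theta>(4) RmRf unfolding H_def i0_def by auto
  define K where "K = (\<Sum>r\<in>B i0. \<pi> r * w\<theta> r)"
  have piB: "\<pi> r \<ge> 0" if "r \<in> B i" "i \<in> {1..k}" for r i using pi_nonneg B_sub that by blast
  have K0: "K > 0"
  proof -
    obtain r0 where r0: "r0 \<in> B i0" "\<pi> r0 \<noteq> 0"
      using piv unfolding i0_def[symmetric] by (metis (no_types, lifting) mult_eq_0_iff sum.neutral)
    have "\<pi> r0 > 0" using piB[OF r0(1) i0] r0(2) by simp
    then show ?thesis unfolding K_def
      using r0 w\<theta> piB[OF _ i0] B_finite
      by (intro sum_pos2[of _ r0]) (auto intro: mult_nonneg_nonneg less_imp_le)
  qed
  define TY where "TY i \<sigma> n = (\<Sum>r\<in>B i. \<pi> r * Yv \<sigma> n r)" for i \<sigma> n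
  define TZ where "TZ i \<sigma> n = (\<Sum>r\<in>B i. \<pi> r * Zv \<sigma> n r)" for i \<sigma> n
  have FS: "(\<Sum>r\<in>{1..d}. \<pi> r * Fv d Q n r) = (\<Sum>i\<in>{1..k}. \<Sum>\<sigma>\<in>DL i. TY i \<sigma> n)" for n
  proof -
    have "(\<Sum>r\<in>{1..d}. \<pi> r * Fv d Q n r) = (\<Sum>i\<in>{1..k}. \<Sum>r\<in>B i. \<pi> r * Fv d Q n r)"
      by (rule sum_blocks)
    also have "\<dots> = (\<Sum>i\<in>{1..k}. \<Sum>r\<in>B i. \<Sum>\<sigma>\<in>DL i. \<pi> r * Yv \<sigma> n r)"
      by (intro sum.cong refl) (simp add: F_decomp sum_distrib_left)
    also have "\<dots> = (\<Sum>i\<in>{1..k}. \<Sum>\<sigma>\<in>DL i. TY i \<sigma> n)"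
      unfolding TY_def by (intro sum.cong refl) (rule sum.swap)
    finally show ?thesis .
  qed
  have GS: "(\<Sum>r\<in>{1..d}. \<pi> r * Gv d Q (B l) n r) = (\<Sum>i\<in>{1..k}. \<Sum>\<sigma>\<in>DL i. TZ i \<sigma> n)" for n
  proof -
    have "(\<Sum>r\<in>{1..d}. \<pi> r * Gv d Q (B l) n r) = (\<Sum>i\<in>{1..k}. \<Sum>r\<in>B i. \<pi> r * Gv d Q (B l) n r)"
      by (rule sum_blocks)
    also have "\<dots> = (\<Sum>i\<in>{1..k}. \<Sum>r\<in>B i. \<Sum>\<sigma>\<in>DL i. \<pi> r * Zv \<sigma> n r)"
      by (intro sum.cong refl) (simp add: G_decomp[OF _ _ l] sum_distrib_left)
    also have "\<dots> = (\<Sum>i\<in>{1..k}. \<Sum>\<sigma>\<in>DL i. TZ i \<sigma> n)"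
      unfolding TZ_def by (intro sum.cong refl) (rule sum.swap)
    finally show ?thesis .
  qed
  have hdDL: "hd \<sigma> = i" "\<sigma> \<noteq> []" "set \<sigma> \<subseteq> {1..k}" "sorted_wrt (>) \<sigma>" if "\<sigma> \<in> DL i" for i \<sigma>
    using that unfolding DL_def by auto
  have TYcls: "cls Rm H (\<lambda>n. TY i \<sigma> n) (if \<sigma> = \<theta> then K else 0)" if i: "i \<in> {1..k}" and \<sigma>: "\<sigma> \<in> DL i" for i \<sigma>
  proof (cases "\<sigma> = \<theta>")
    case True
    then have "i = i0" using hdDL(1)[OF \<sigma>] unfolding i0_def by simp
    then show ?thesis unfolding TY_def K_def using True w\<theta>(1)
      by (auto intro!: cls_sum cls_cmult B_finite)
  next
    case False
    show ?thesis
    proof (cases "lk \<sigma>")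
      case True
      obtain w where w: "\<forall>r\<in>B (hd \<sigma>). cls (Rf \<sigma>) (hf \<sigma> - 1) (\<lambda>n. Yv \<sigma> n r) (w r)"
        using Ycls[OF hdDL(2,4,3)[OF \<sigma>]] by blast
      have c1: "cls (Rf \<sigma>) (hf \<sigma> - 1) (\<lambda>n. TY i \<sigma> n) (\<Sum>r\<in>B i. \<pi> r * w r)"
        unfolding TY_def using w hdDL(1)[OF \<sigma>] by (auto intro!: cls_sum cls_cmult B_finite)
      have sm: "Rf \<sigma> < Rm \<or> (Rf \<sigma> = Rm \<and> hf \<sigma> - 1 < H)"
        using others_small[OF uniq i \<sigma> True False] hmax hf_pos[OF hdDL(2)[OF \<sigma>]] unfolding Rm_def by auto
      have "cls Rm H (\<lambda>n. TY i \<sigma> n) 0"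
        by (rule cls_to_zero[OF Rf_pos[OF hdDL(2,3)[OF \<sigma>]] c1 sm])
      then show ?thesis using False by simp
    next
      case nl: False
      have "TY i \<sigma> n = 0" for n unfolding TY_def using Yv_nolink[OF nl] by simp
      then show ?thesis using False cls_zero by simp
    qed
  qed
  have FScls: "cls Rm H (\<lambda>n. \<Sum>r\<in>{1..d}. \<pi> r * Fv d Q n r) K"
  proof -
    have "cls Rm H (\<lambda>n. \<Sum>i\<in>{1..k}. \<Sum>\<sigma>\<in>DL i. TY i \<sigma> n) (\<Sum>i\<in>{1..k}. \<Sum>\<sigma>\<in>DL i. if \<sigma> = \<theta> then K else 0)"
      using TYcls by (intro cls_sum DL_finite) auto
    moreover have "(\<Sum>i\<in>{1..k}. \<Sum>\<sigma>\<in>DL i. if \<sigma> = \<theta> then K else 0) = K"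
    proof -
      have "(\<Sum>\<sigma>\<in>DL i. if \<sigma> = \<theta> then K else 0) = (if i = i0 then K else 0)" for i
      proof -
        have "\<theta> \<in> DL i \<longleftrightarrow> i = i0" using \<theta>DL hdDL(1)[of \<theta> i] unfolding i0_def by auto
        then show ?thesis using DL_finite[of i] by (simp add: sum.delta')
      qed
      then show ?thesis using i0 by simp
    qed
    ultimately show ?thesis unfolding FS by simp
  qed
  define GL where "GL = (if \<rho> l = Rm then K / (real H + 1) else 0)"
  have TZcls: "cls Rm H (\<lambda>n. TZ i \<sigma> n / (real n + 1)) (if \<sigma> = \<theta> then GL else 0)" if i: "i \<in> {1..k}" and \<sigma>: "\<sigma> \<in> DL i" for i \<sigma>
  proof (cases "\<sigma> = \<theta>")
    case True
    then have ii0: "i = i0" using hdDL(1)[OF \<sigma>] unfolding i0_def by simp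
    show ?thesis
    proof (cases "\<rho> l = Rm")
      case eq: True
      have z: "\<forall>r\<in>B i0. cls Rm (Suc H) (\<lambda>n. Zv \<theta> n r) (w\<theta> r)"
        using Z1[OF a\<theta>(1,3,2) l\<theta>, of w\<theta>] RmRf eq w\<theta>(1) hH unfolding i0_def H_def by simp
      have "cls Rm (Suc H) (\<lambda>n. TZ i \<sigma> n) K"
        unfolding TZ_def K_def using True ii0 z by (auto intro!: cls_sum cls_cmult B_finite)
      then show ?thesis using cls_div_Suc True eq unfolding GL_def by simp
    next
      case lt: False
      then have "\<rho> l < Rf \<theta>" using rl RmRf by simp
      then obtain z where z: "\<forall>r\<in>B i0. cls Rm H (\<lambda>n. Zv \<theta> n r) (z r)"
        using Z2[OF a\<theta>(1,3,2) l\<theta>] RmRf unfolding i0_def H_def by auto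
      have "cls Rm H (\<lambda>n. TZ i \<sigma> n) (\<Sum>r\<in>B i0. \<pi> r * z r)"
        unfolding TZ_def using True ii0 z by (auto intro!: cls_sum cls_cmult B_finite)
      then show ?thesis using cls_div_0 True lt unfolding GL_def by simp
    qed
  next
    case False
    have ty: "cls Rm H (\<lambda>n. TY i \<sigma> n) 0" using TYcls[OF i \<sigma>] False by simp
    have bnd: "0 \<le> TZ i \<sigma> n / (real n + 1) \<and> TZ i \<sigma> n / (real n + 1) \<le> TY i \<sigma> n" for n
    proof -
      have zb: "0 \<le> Zv \<sigma> n r \<and> Zv \<sigma> n r \<le> (real n + 1) * Yv \<sigma> n r" if "r \<in> B i" for r
        using Zv_bounds[OF hdDL(2,3)[OF \<sigma>]] hdDL(1)[OF \<sigma>] that by simp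
      have "0 \<le> TZ i \<sigma> n" unfolding TZ_def using zb piB[OF _ i] by (intro sum_nonneg mult_nonneg_nonneg) auto
      moreover have "TZ i \<sigma> n \<le> (real n + 1) * TY i \<sigma> n"
        unfolding TZ_def TY_def sum_distrib_left
        using zb piB[OF _ i] by (intro sum_mono) (auto simp: mult.left_commute intro: mult_left_mono)
      ultimately show ?thesis by (simp add: divide_le_eq mult.commute)
    qed
    have "cls Rm H (\<lambda>n. TZ i \<sigma> n / (real n + 1)) 0"
      by (rule cls_squeeze[OF ty Rm0]) (use bnd in auto)
    then show ?thesis using False by simp
  qed
  have GScls: "cls Rm H (\<lambda>n. (\<Sum>r\<in>{1..d}. \<pi> r * Gv d Q (B l) n r) / (real n + 1)) GL"
  proof -
    have "cls Rm H (\<lambda>n. \<Sum>i\<in>{1..k}. \<Sum>\<sigma>\<in>DL i. TZ i \<sigma> n / (real n + 1)) (\<Sum>i\<in>{1..k}. \<Sum>\<sigma>\<in>DL i. if \<sigma> = \<theta> then GL else 0)"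
      using TZcls by (intro cls_sum DL_finite) auto
    moreover have "(\<Sum>i\<in>{1..k}. \<Sum>\<sigma>\<in>DL i. if \<sigma> = \<theta> then GL else 0) = GL"
    proof -
      have "(\<Sum>\<sigma>\<in>DL i. if \<sigma> = \<theta> then GL else 0) = (if i = i0 then GL else 0)" for i
      proof -
        have "\<theta> \<in> DL i \<longleftrightarrow> i = i0" using \<theta>DL hdDL(1)[of \<theta> i] unfolding i0_def by auto
        then show ?thesis using DL_finite[of i] by (simp add: sum.delta')
      qed
      then show ?thesis using i0 by simp
    qed
    moreover have "(\<Sum>r\<in>{1..d}. \<pi> r * Gv d Q (B l) n r) / (real n + 1) = (\<Sum>i\<in>{1..k}. \<Sum>\<sigma>\<in>DL i. TZ i \<sigma> n / (real n + 1))" for n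
      unfolding GS by (simp add: sum_divide_distrib)
    ultimately show ?thesis by simp
  qed
  have lim: "(\<lambda>n. cond_occupation d \<pi> R Q (B l) n) \<longlonglongrightarrow> GL / K"
  proof -
    have "(\<lambda>n. ((\<Sum>r\<in>{1..d}. \<pi> r * Gv d Q (B l) n r) / (real n + 1) / (NB H n * Rm ^ n))
        / ((\<Sum>r\<in>{1..d}. \<pi> r * Fv d Q n r) / (NB H n * Rm ^ n))) \<longlonglongrightarrow> GL / K"
      using GScls FScls K0 unfolding cls_def by (intro tendsto_divide) auto
    moreover have "((\<Sum>r\<in>{1..d}. \<pi> r * Gv d Q (B l) n r) / (real n + 1) / (NB H n * Rm ^ n))
        / ((\<Sum>r\<in>{1..d}. \<pi> r * Fv d Q n r) / (NB H n * Rm ^ n)) = cond_occupation d \<pi> R Q (B l) n" for n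
      unfolding cond_occ_eq using Rm0 by simp
    ultimately show ?thesis by simp
  qed
  show ?thesis
  proof (intro conjI impI)
    assume "\<rho> l = rho_max k \<rho>"
    then have "GL / K = 1 / real (hplus_max k ds Q \<rho>)" unfolding GL_def Rm_def hmax using K0 by simp
    then show "(\<lambda>n. cond_occupation d \<pi> R Q (B l) n) \<longlonglongrightarrow> 1 / real (hplus_max k ds Q \<rho>)" using lim by simp
  next
    assume "\<rho> l < rho_max k \<rho>"
    then have g0: "GL / K = 0" unfolding GL_def Rm_def by simp
    show "(\<lambda>n. cond_occupation d \<pi> R Q (B l) n) \<longlonglongrightarrow> 0" using lim unfolding g0 .
  qed
qed

end

theorem corollary3p16:
  fixes d k :: nat and ds :: "nat \<Rightarrow> nat"
    and R :: "nat \<Rightarrow> real" and Q :: "nat \<Rightarrow> nat \<Rightarrow> real" and \<pi> :: "nat \<Rightarrow> real"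
    and \<rho> :: "nat \<Rightarrow> real" and v :: "nat \<Rightarrow> nat \<Rightarrow> real"
    and \<theta> :: "nat list" and l :: nat
  assumes d_ge: "d \<ge> 2"
    and blocks: "d = (\<Sum>i\<in>{1..k}. ds i)" "\<forall>i\<in>{1..k}. ds i > 0"
    \<comment> \<open>P is stochastic\<close>
    and R_nonneg: "\<forall>i\<in>{1..d}. R i \<ge> 0"
    and Q_nonneg: "\<forall>i\<in>{1..d}. \<forall>j\<in>{1..d}. Q i j \<ge> 0"
    and rows: "\<forall>i\<in>{1..d}. R i + (\<Sum>j\<in>{1..d}. Q i j) = 1"
    and R_nz: "\<exists>i\<in>{1..d}. R i \<noteq> 0"
    and Q_nz: "\<exists>i\<in>{1..d}. \<exists>j\<in>{1..d}. Q i j \<noteq> 0"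
    and spec_Q: "\<forall>\<mu>. eigenvalue_on {1..d} (cmat Q) \<mu> \<longrightarrow> cmod \<mu> < 1"
    \<comment> \<open>Frobenius normal form\<close>
    and lower: "\<forall>i\<in>{1..k}. \<forall>j\<in>{1..k}. j > i \<longrightarrow>
                  (\<forall>r\<in>blk ds i. \<forall>s\<in>blk ds j. Q r s = 0)"
    and evpos: "\<forall>i\<in>{1..k}. eventually_positive (blk ds i) Q"
    \<comment> \<open>Perron--Frobenius eigenvalue and positive right eigenvector of Q_ii\<close>
    and pf_eig: "\<forall>i\<in>{1..k}. eigenvalue_on (blk ds i) (cmat Q) (complex_of_real (\<rho> i))"
    and pf_max: "\<forall>i\<in>{1..k}. \<forall>\<mu>. eigenvalue_on (blk ds i) (cmat Q) \<mu> \<longrightarrow> cmod \<mu> \<le> \<rho> i"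
    and v_pos: "\<forall>i\<in>{1..k}. \<forall>r\<in>blk ds i. v i r > 0"
    and v_eig: "\<forall>i\<in>{1..k}. \<forall>r\<in>blk ds i. mvec (blk ds i) Q (v i) r = \<rho> i * v i r"
    \<comment> \<open>initial distribution on {1..d}\<close>
    and pi_nonneg: "\<forall>i\<in>{1..d}. \<pi> i \<ge> 0"
    and pi_sum: "(\<Sum>i\<in>{1..d}. \<pi> i) = 1"
    \<comment> \<open>(A1)\<close>
    and A1: "\<forall>i\<in>{1..k}. \<rho> i < rho_max k \<rho> \<longrightarrow> is_scalar_on (blk ds i) Q"
    \<comment> \<open>(A2)\<close>
    and A2: "\<exists>\<theta>'\<in>Pmax k ds Q \<rho>. alpha_path ds Q \<rho> v \<theta>' \<noteq> 0 \<and>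
               (\<Sum>r\<in>blk ds (hd \<theta>'). \<pi> r * v (hd \<theta>') r) \<noteq> 0"
    \<comment> \<open>unique maximal admissible path\<close>
    and unique: "Pmax k ds Q \<rho> = {\<theta>}"
    and l_on: "l \<in> set \<theta>"
  shows "(\<rho> l = rho_max k \<rho> \<longrightarrow>
            ((\<lambda>n. cond_occupation d \<pi> R Q (blk ds l) n) \<longlonglongrightarrow> 1 / real (hplus_max k ds Q \<rho>)))
       \<and> (\<rho> l < rho_max k \<rho> \<longrightarrow>
            ((\<lambda>n. cond_occupation d \<pi> R Q (blk ds l) n) \<longlonglongrightarrow> 0))"
proof -
  have bs: "blk_setting d k ds Q \<rho> v"
    unfolding blk_setting_def using blocks Q_nonneg lower evpos v_pos v_eig by blast
  interpret blk_setting d k ds Q \<rho> v l by (rule bs)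
  obtain \<theta>' where t': "\<theta>' \<in> Pmax k ds Q \<rho>" "(\<Sum>r\<in>blk ds (hd \<theta>'). \<pi> r * v (hd \<theta>') r) \<noteq> 0"
    using A2 by blast
  then have "\<theta>' = \<theta>" using unique by simp
  then have piv: "(\<Sum>r\<in>blk ds (hd \<theta>). \<pi> r * v (hd \<theta>) r) \<noteq> 0" using t'(2) by simp
  show ?thesis using main_limit[OF pi_nonneg unique piv l_on] by simp
qed

end
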